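(* Let $\tau$ be a pure type. For every $\delta \in \mathcal{L}^\wedge(\tau)$, if $[\![\delta]\!] \neq \emptyset$ then $[\![\delta]\!] = {\uparrow} d = \{x \in [\![\tau]\!] \mid d \le x\}$ for some finite element $d \in [\![\tau]\!]$. Conversely, for every finite element $d \in [\![\tau]\!]$ there is some $\delta \in \mathcal{L}^\wedge(\tau)$ such that ${\uparrow} d = [\![\delta]\!]$.
   Context: Pure types: closed types of $\tau ::= \mathbf{1} \mid \tau\times\tau \mid \tau\to\tau \mid \tau+\tau \mid \alpha \mid \mu\alpha.\tau$, interpreted as Scott domains: $[\![\mathbf{1}]\!]=\{\bot\le\top\}$; products componentwise with projections $\pi_1,\pi_2$; $[\![\tau\to\sigma]\!]$ = Scott-continuous functions with pointwise order; $[\![\tau_1+\tau_2]\!]$ = disjoint union with a new least element, with injections $\mathrm{inj}_i$; $[\![\mu\alpha.\tau]\!]$ = canonical embedding–projection bilimit solution with inverse isomorphisms $\mathrm{fold}:[\![\tau[\mu\alpha.\tau/\alpha]]\!]\to[\![\mu\alpha.\tau]\!]$, $\mathrm{unfold}$. An element $d$ of a dcpo is finite (compact) if whenever $d\le\bigvee D$ with $D$ directed, $d\le e$ for some $e\in D$. The formulas $\mathcal{L}^\wedge(\tau)$ (closed, without fixpoint or iteration variables, without binary disjunction) are generated by: $\mathrm{True},\mathrm{False}\in\mathcal{L}^\wedge(\tau)$; $\varphi\wedge\psi$; $\langle()\rangle\in\mathcal{L}^\wedge(\mathbf{1})$; $\langle\pi_i\rangle\varphi\in\mathcal{L}^\wedge(\tau_1\times\tau_2)$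 for $\varphi\in\mathcal{L}^\wedge(\tau_i)$; $\langle\mathrm{inj}_i\rangle\varphi\in\mathcal{L}^\wedge(\tau_1+\tau_2)$ for $\varphi\in\mathcal{L}^\wedge(\tau_i)$; $\langle\mathrm{fold}\rangle\varphi\in\mathcal{L}^\wedge(\mu\alpha.\tau)$ for $\varphi\in\mathcal{L}^\wedge(\tau[\mu\alpha.\tau/\alpha])$; $\psi\Rightarrow\varphi\in\mathcal{L}^\wedge(\sigma\to\tau)$ for $\psi\in\mathcal{L}^\wedge(\sigma)$, $\varphi\in\mathcal{L}^\wedge(\tau)$. Semantics: $[\![\mathrm{True}]\!]=[\![\tau]\!]$, $[\![\mathrm{False}]\!]=\emptyset$, $[\![\varphi\wedge\psi]\!]=[\![\varphi]\!]\cap[\![\psi]\!]$, $[\![\langle()\rangle]\!]=\{\top\}$, $[\![\langle\pi_i\rangle\varphi]\!]=\{x\mid \pi_i(x)\in[\![\varphi]\!]\}$, $[\![\langle\mathrm{inj}_i\rangle\varphi]\!]=\{\mathrm{inj}_i(x)\mid x\in[\![\varphi]\!]\}$, $[\![\langle\mathrm{fold}\rangle\varphi]\!]=\{x\mid\mathrm{unfold}(x)\in[\![\varphi]\!]\}$, $[\![\psi\Rightarrow\varphi]\!]=\{f\mid\forall x\in[\![\psi]\!],\ f(x)\in[\![\varphi]\!]\}$. *)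

theory Defs
  imports Main
begin

datatype ty = TUnit | TProd ty ty | TFun ty ty | TSum ty ty | TVar nat | TMu nat ty

primrec fv :: "ty \<Rightarrow> nat set" where
  "fv TUnit = {}"
| "fv (TProd t s) = fv t \<union> fv s"
| "fv (TFun t s) = fv t \<union> fv s"
| "fv (TSum t s) = fv t \<union> fv s"
| "fv (TVar a) = {a}"
| "fv (TMu a t) = fv t - {a}"

definition closed_ty :: "ty \<Rightarrow> bool" where
  "closed_ty t \<longleftrightarrow> fv t = {}"

text \<open>subst t a s = t[s/a]  (used with s closed, so no capture can occur).\<close>
primrec subst :: "ty \<Rightarrow> nat \<Rightarrow> ty \<Rightarrow> ty" where
  "subst TUnit a s = TUnit"
| "subst (TProd t1 t2) a s = TProd (subst t1 a s) (subst t2 a s)"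
| "subst (TFun t1 t2) a s = TFun (subst t1 a s) (subst t2 a s)"
| "subst (TSum t1 t2) a s = TSum (subst t1 a s) (subst t2 a s)"
| "subst (TVar b) a s = (if b = a then s else TVar b)"
| "subst (TMu b t) a s = (if b = a then TMu b t else TMu b (subst t a s))"

text \<open>simultaneous substitution (used with closed types in the range)\<close>
primrec csubst :: "(nat \<Rightarrow> ty) \<Rightarrow> ty \<Rightarrow> ty" where
  "csubst \<sigma> TUnit = TUnit"
| "csubst \<sigma> (TProd t1 t2) = TProd (csubst \<sigma> t1) (csubst \<sigma> t2)"
| "csubst \<sigma> (TFun t1 t2) = TFun (csubst \<sigma> t1) (csubst \<sigma> t2)"
| "csubst \<sigma> (TSum t1 t2) = TSum (csubst \<sigma> t1) (csubst \<sigma> t2)"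
| "csubst \<sigma> (TVar b) = \<sigma> b"
| "csubst \<sigma> (TMu b t) = TMu b (csubst (\<sigma>(b := TVar b)) t)"

definition po_on :: "'u set \<Rightarrow> ('u \<Rightarrow> 'u \<Rightarrow> bool) \<Rightarrow> bool" where
  "po_on A r \<longleftrightarrow> (\<forall>x\<in>A. r x x) \<and> (\<forall>x\<in>A. \<forall>y\<in>A. r x y \<and> r y x \<longrightarrow> x = y)
     \<and> (\<forall>x\<in>A. \<forall>y\<in>A. \<forall>z\<in>A. r x y \<and> r y z \<longrightarrow> r x z)"

definition directed_in :: "'u set \<Rightarrow> ('u \<Rightarrow> 'u \<Rightarrow> bool) \<Rightarrow> 'u set \<Rightarrow> bool" where
  "directed_in A r S \<longleftrightarrow> S \<subseteq> A \<and> S \<noteq> {} \<and> (\<forall>x\<in>S. \<forall>y\<in>S. \<exists>z\<in>S. r x z \<and> r y z)"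

definition is_lub :: "'u set \<Rightarrow> ('u \<Rightarrow> 'u \<Rightarrow> bool) \<Rightarrow> 'u set \<Rightarrow> 'u \<Rightarrow> bool" where
  "is_lub A r S x \<longleftrightarrow> x \<in> A \<and> (\<forall>y\<in>S. r y x) \<and> (\<forall>z\<in>A. (\<forall>y\<in>S. r y z) \<longrightarrow> r x z)"

definition is_dcpo :: "'u set \<Rightarrow> ('u \<Rightarrow> 'u \<Rightarrow> bool) \<Rightarrow> bool" where
  "is_dcpo A r \<longleftrightarrow> po_on A r \<and> (\<forall>S. directed_in A r S \<longrightarrow> (\<exists>x. is_lub A r S x))"

definition pointed :: "'u set \<Rightarrow> ('u \<Rightarrow> 'u \<Rightarrow> bool) \<Rightarrow> bool" where
  "pointed A r \<longleftrightarrow> (\<exists>b\<in>A. \<forall>x\<in>A. r b x)"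

definition scott_cont ::
  "'u set \<Rightarrow> ('u \<Rightarrow> 'u \<Rightarrow> bool) \<Rightarrow> 'u set \<Rightarrow> ('u \<Rightarrow> 'u \<Rightarrow> bool) \<Rightarrow> ('u \<Rightarrow> 'u) \<Rightarrow> bool" where
  "scott_cont A r B s f \<longleftrightarrow> (\<forall>x\<in>A. f x \<in> B) \<and> (\<forall>x\<in>A. \<forall>y\<in>A. r x y \<longrightarrow> s (f x) (f y))
     \<and> (\<forall>S x. directed_in A r S \<and> is_lub A r S x \<longrightarrow> is_lub B s (f ` S) (f x))"

definition compact_el :: "'u set \<Rightarrow> ('u \<Rightarrow> 'u \<Rightarrow> bool) \<Rightarrow> 'u \<Rightarrow> bool" where
  "compact_el A r d \<longleftrightarrow> d \<in> A \<and>
     (\<forall>S x. directed_in A r S \<and> is_lub A r S x \<and> r d x \<longrightarrow> (\<exists>e\<in>S. r d e))"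

text \<open>All domains live in one HOL type 'u.  Operations are indexed by the
  (closed) type they belong to: m_pi1 T, m_pi2 T for T = TProd t s;
  m_app T for T = TFun s t; m_inj1 T, m_inj2 T for T = TSum t s;
  m_fold T, m_unfold T for T = TMu a t; m_top is the top of the unit domain.\<close>

record 'u pmodel =
  m_dom :: "ty \<Rightarrow> 'u set"
  m_le :: "ty \<Rightarrow> 'u \<Rightarrow> 'u \<Rightarrow> bool"
  m_top :: 'u
  m_pi1 :: "ty \<Rightarrow> 'u \<Rightarrow> 'u"
  m_pi2 :: "ty \<Rightarrow> 'u \<Rightarrow> 'u"
  m_app :: "ty \<Rightarrow> 'u \<Rightarrow> 'u \<Rightarrow> 'u"
  m_inj1 :: "ty \<Rightarrow> 'u \<Rightarrow> 'u"
  m_inj2 :: "ty \<Rightarrow> 'u \<Rightarrow> 'u"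
  m_fold :: "ty \<Rightarrow> 'u \<Rightarrow> 'u"
  m_unfold :: "ty \<Rightarrow> 'u \<Rightarrow> 'u"

definition bottomM :: "'u pmodel \<Rightarrow> ty \<Rightarrow> 'u" where
  "bottomM M T = (THE b. b \<in> m_dom M T \<and> (\<forall>x\<in>m_dom M T. m_le M T b x))"

definition lubM :: "'u pmodel \<Rightarrow> ty \<Rightarrow> 'u set \<Rightarrow> 'u" where
  "lubM M T S = (THE x. is_lub (m_dom M T) (m_le M T) S x)"

definition pairM :: "'u pmodel \<Rightarrow> ty \<Rightarrow> 'u \<Rightarrow> 'u \<Rightarrow> 'u" where
  "pairM M T a b = (THE x. x \<in> m_dom M T \<and> m_pi1 M T x = a \<and> m_pi2 M T x = b)"

definition lamM :: "'u pmodel \<Rightarrow> ty \<Rightarrow> ty \<Rightarrow> ('u \<Rightarrow> 'u) \<Rightarrow> 'u" where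
  "lamM M S T g = (THE f. f \<in> m_dom M T \<and> (\<forall>x\<in>m_dom M S. m_app M T f x = g x))"

text \<open>Functorial action of a (possibly open) type on endomaps, in the
  mixed-variance form F(e,e) used for minimal invariance.  The environment
  assigns to each type variable a closed type and an endomap on its domain;
  act M env t acts on the domain of csubst (fst o env) t.  For a (nested)
  recursive type the action is the least fixed point, computed pointwise as
  the lub of the Kleene iterates.\<close>

primrec act :: "'u pmodel \<Rightarrow> (nat \<Rightarrow> ty \<times> ('u \<Rightarrow> 'u)) \<Rightarrow> ty \<Rightarrow> 'u \<Rightarrow> 'u" where
  "act M env TUnit = id"
| "act M env (TVar a) = snd (env a)"
| "act M env (TProd t s) =
     (let T = csubst (fst \<circ> env) (TProd t s)
      in (\<lambda>x. pairM M T (act M env t (m_pi1 M T x)) (act M env s (m_pi2 M T x))))"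
| "act M env (TFun t s) =
     (let T = csubst (fst \<circ> env) (TFun t s); S1 = csubst (fst \<circ> env) t
      in (\<lambda>f. lamM M S1 T (\<lambda>x. act M env s (m_app M T f (act M env t x)))))"
| "act M env (TSum t s) =
     (let T = csubst (fst \<circ> env) (TSum t s); T1 = csubst (fst \<circ> env) t;
          T2 = csubst (fst \<circ> env) s
      in (\<lambda>x. if \<exists>y\<in>m_dom M T1. x = m_inj1 M T y
              then m_inj1 M T (act M env t (THE y. y \<in> m_dom M T1 \<and> x = m_inj1 M T y))
              else if \<exists>y\<in>m_dom M T2. x = m_inj2 M T y
              then m_inj2 M T (act M env s (THE y. y \<in> m_dom M T2 \<and> x = m_inj2 M T y))
              else x))"
| "act M env (TMu b t) =
     (let T = csubst (fst \<circ> env) (TMu b t);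
          \<Phi> = (\<lambda>g. m_fold M T \<circ> act M (env(b := (T, g))) t \<circ> m_unfold M T)
      in (\<lambda>x. lubM M T {(\<Phi> ^^ n) (\<lambda>_. bottomM M T) x | n. True}))"

text \<open>The canonical interpretation of the pure types, characterised up to
  isomorphism: the base constructions (two-point unit, cartesian product with
  projections, Scott-continuous function space with pointwise order, separated
  sum with a new least element, fold/unfold order isomorphisms) together with
  minimal invariance of every recursive type (which characterises the
  canonical bilimit solution).\<close>

definition pure_model :: "'u pmodel \<Rightarrow> bool" where
  "pure_model M \<longleftrightarrow>
   (let D = m_dom M; le = m_le M in
    (\<forall>T. closed_ty T \<longrightarrow> is_dcpo (D T) (le T) \<and> pointed (D T) (le T))
  \<and> (\<exists>b. D TUnit = {b, m_top M} \<and> b \<noteq> m_top M \<and> le TUnit b (m_top M)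
         \<and> \<not> le TUnit (m_top M) b)
  \<and> (\<forall>t s. closed_ty (TProd t s) \<longrightarrow>
       (let T = TProd t s in
         bij_betw (\<lambda>x. (m_pi1 M T x, m_pi2 M T x)) (D T) (D t \<times> D s)
       \<and> (\<forall>x\<in>D T. \<forall>y\<in>D T. le T x y \<longleftrightarrow>
             le t (m_pi1 M T x) (m_pi1 M T y) \<and> le s (m_pi2 M T x) (m_pi2 M T y))))
  \<and> (\<forall>s t. closed_ty (TFun s t) \<longrightarrow>
       (let T = TFun s t in
         (\<forall>f\<in>D T. scott_cont (D s) (le s) (D t) (le t) (m_app M T f))
       \<and> (\<forall>g. scott_cont (D s) (le s) (D t) (le t) g \<longrightarrow>
             (\<exists>f\<in>D T. \<forall>x\<in>D s. m_app M T f x = g x))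
       \<and> (\<forall>f\<in>D T. \<forall>g\<in>D T. le T f g \<longleftrightarrow>
             (\<forall>x\<in>D s. le t (m_app M T f x) (m_app M T g x)))))
  \<and> (\<forall>t s. closed_ty (TSum t s) \<longrightarrow>
       (let T = TSum t s; i1 = m_inj1 M T; i2 = m_inj2 M T in
         inj_on i1 (D t) \<and> inj_on i2 (D s) \<and> i1 ` D t \<inter> i2 ` D s = {}
       \<and> (\<exists>b. b \<notin> i1 ` D t \<union> i2 ` D s \<and> D T = insert b (i1 ` D t \<union> i2 ` D s)
            \<and> (\<forall>x\<in>D T. le T b x)
            \<and> (\<forall>x\<in>D t. \<not> le T (i1 x) b) \<and> (\<forall>y\<in>D s. \<not> le T (i2 y) b))
       \<and> (\<forall>x\<in>D t. \<forall>y\<in>D t. le T (i1 x) (i1 y) \<longleftrightarrow> le t x y)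
       \<and> (\<forall>x\<in>D s. \<forall>y\<in>D s. le T (i2 x) (i2 y) \<longleftrightarrow> le s x y)
       \<and> (\<forall>x\<in>D t. \<forall>y\<in>D s. \<not> le T (i1 x) (i2 y) \<and> \<not> le T (i2 y) (i1 x))))
  \<and> (\<forall>a t. closed_ty (TMu a t) \<longrightarrow>
       (let T = TMu a t; U = subst t a T in
         bij_betw (m_unfold M T) (D T) (D U)
       \<and> (\<forall>x\<in>D T. m_fold M T (m_unfold M T x) = x)
       \<and> (\<forall>y\<in>D U. m_unfold M T (m_fold M T y) = y)
       \<and> (\<forall>x\<in>D T. \<forall>y\<in>D T. le T x y \<longleftrightarrow> le U (m_unfold M T x) (m_unfold M T y))
       \<and> (\<forall>x\<in>D T. act M (\<lambda>_. (TUnit, id)) T x = x))))"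

section \<open>The logic L^\<and> (closed, no fixpoint/iteration variables, no disjunction)\<close>

datatype form = FTrue | FFalse | FAnd form form | FUnit
  | FPi1 form | FPi2 form | FInj1 form | FInj2 form | FFold form | FImp form form

fun wf_form :: "ty \<Rightarrow> form \<Rightarrow> bool" where
  "wf_form t FTrue = True"
| "wf_form t FFalse = True"
| "wf_form t (FAnd p q) = (wf_form t p \<and> wf_form t q)"
| "wf_form t FUnit = (t = TUnit)"
| "wf_form t (FPi1 p) = (case t of TProd t1 t2 \<Rightarrow> wf_form t1 p | _ \<Rightarrow> False)"
| "wf_form t (FPi2 p) = (case t of TProd t1 t2 \<Rightarrow> wf_form t2 p | _ \<Rightarrow> False)"
| "wf_form t (FInj1 p) = (case t of TSum t1 t2 \<Rightarrow> wf_form t1 p | _ \<Rightarrow> False)"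
| "wf_form t (FInj2 p) = (case t of TSum t1 t2 \<Rightarrow> wf_form t2 p | _ \<Rightarrow> False)"
| "wf_form t (FFold p) = (case t of TMu a t1 \<Rightarrow> wf_form (subst t1 a t) p | _ \<Rightarrow> False)"
| "wf_form t (FImp q p) = (case t of TFun s t2 \<Rightarrow> wf_form s q \<and> wf_form t2 p | _ \<Rightarrow> False)"

fun sem :: "'u pmodel \<Rightarrow> ty \<Rightarrow> form \<Rightarrow> 'u set" where
  "sem M t FTrue = m_dom M t"
| "sem M t FFalse = {}"
| "sem M t (FAnd p q) = sem M t p \<inter> sem M t q"
| "sem M t FUnit = {m_top M}"
| "sem M t (FPi1 p) = (case t of TProd t1 t2 \<Rightarrow>
      {x \<in> m_dom M t. m_pi1 M t x \<in> sem M t1 p} | _ \<Rightarrow> {})"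
| "sem M t (FPi2 p) = (case t of TProd t1 t2 \<Rightarrow>
      {x \<in> m_dom M t. m_pi2 M t x \<in> sem M t2 p} | _ \<Rightarrow> {})"
| "sem M t (FInj1 p) = (case t of TSum t1 t2 \<Rightarrow> m_inj1 M t ` sem M t1 p | _ \<Rightarrow> {})"
| "sem M t (FInj2 p) = (case t of TSum t1 t2 \<Rightarrow> m_inj2 M t ` sem M t2 p | _ \<Rightarrow> {})"
| "sem M t (FFold p) = (case t of TMu a t1 \<Rightarrow>
      {x \<in> m_dom M t. m_unfold M t x \<in> sem M (subst t1 a t) p} | _ \<Rightarrow> {})"
| "sem M t (FImp q p) = (case t of TFun s t2 \<Rightarrow>
      {f \<in> m_dom M t. \<forall>x\<in>sem M s q. m_app M t f x \<in> sem M t2 p} | _ \<Rightarrow> {})"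

definition upset :: "'u pmodel \<Rightarrow> ty \<Rightarrow> 'u \<Rightarrow> 'u set" where
  "upset M t d = {x \<in> m_dom M t. m_le M t d x}"

end

theory Submission
  imports Defs
begin

section \<open>Generic order lemmas\<close>

lemma lub_unique:
  assumes "po_on A r" "is_lub A r S x" "is_lub A r S y" shows "x = y"
  using assms unfolding po_on_def is_lub_def by blast

lemma directed_finite_ub:
  assumes po: "po_on A r" and dir: "directed_in A r S" and fin: "finite F" and sub: "F \<subseteq> S"
  shows "\<exists>z\<in>S. \<forall>y\<in>F. r y z"
  using fin sub
proof (induction F)
  case empty then show ?case using dir unfolding directed_in_def by auto
next
  case (insert a F)
  then obtain z where z: "z \<in> S" "\<forall>y\<in>F. r y z" by auto
  obtain w where w: "w \<in> S" "r a w" "r z w" using dir insert.prems z unfolding directed_in_def by blast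
  have SA: "S \<subseteq> A" using dir unfolding directed_in_def by auto
  have "\<forall>y\<in>F. r y w"
  proof
    fix y assume "y \<in> F"
    then have "y \<in> A" "r y z" using insert.prems SA z by auto
    then show "r y w" using po w z SA unfolding po_on_def by blast
  qed
  then show ?case using w by auto
qed

lemma directed_finite_choice:
  assumes po: "po_on A r" and dir: "directed_in A r S" and fin: "finite I"
    and ex: "\<forall>i\<in>I. \<exists>s\<in>S. P i s"
    and up: "\<forall>i\<in>I. \<forall>s\<in>S. \<forall>s'\<in>S. P i s \<and> r s s' \<longrightarrow> P i s'"
  shows "\<exists>s\<in>S. \<forall>i\<in>I. P i s"
proof -
  from ex obtain f where f: "\<forall>i\<in>I. f i \<in> S \<and> P i (f i)" by metis
  then have "f ` I \<subseteq> S" by auto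
  then obtain z where "z\<in>S" "\<forall>y\<in>f ` I. r y z"
    using directed_finite_ub[OF po dir finite_imageI[OF fin]] by blast
  then show ?thesis using up f by blast
qed

lemma directed_image:
  assumes "directed_in A r S" "\<forall>x\<in>A. f x \<in> B" "\<forall>x\<in>A. \<forall>y\<in>A. r x y \<longrightarrow> s (f x) (f y)"
  shows "directed_in B s (f ` S)"
proof -
  have "\<forall>x\<in>f ` S. \<forall>y\<in>f ` S. \<exists>z\<in>f ` S. s x z \<and> s y z"
  proof (intro ballI)
    fix x y assume "x \<in> f ` S" "y \<in> f ` S"
    then obtain x' y' where "x' \<in> S" "y' \<in> S" "x = f x'" "y = f y'" by auto
    moreover then obtain z where "z \<in> S" "r x' z" "r y' z" using assms(1) unfolding directed_in_def by blast
    ultimately show "\<exists>z\<in>f ` S. s x z \<and> s y z" using assms unfolding directed_in_def by blast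
  qed
  then show ?thesis using assms unfolding directed_in_def by auto
qed

lemma scott_cont_comp:
  assumes "scott_cont A r B s f" "scott_cont B s C q g"
  shows "scott_cont A r C q (g \<circ> f)"
proof -
  have "\<forall>S x. directed_in A r S \<and> is_lub A r S x \<longrightarrow> is_lub C q ((g \<circ> f) ` S) ((g \<circ> f) x)"
  proof (intro allI impI)
    fix S x assume a: "directed_in A r S \<and> is_lub A r S x"
    have "directed_in B s (f ` S)" using directed_image[of A r S f B s] a assms(1)
      unfolding scott_cont_def by blast
    moreover have "is_lub B s (f ` S) (f x)" using a assms(1) unfolding scott_cont_def by blast
    moreover have "x \<in> A" using a unfolding is_lub_def by auto
    moreover have "(g \<circ> f) ` S = g ` (f ` S)" by auto
    ultimately show "is_lub C q ((g \<circ> f) ` S) ((g \<circ> f) x)" using assms(2)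
      unfolding scott_cont_def by simp
  qed
  then show ?thesis using assms unfolding scott_cont_def by auto
qed

lemma scott_cont_id: "scott_cont A r A r id"
  unfolding scott_cont_def is_lub_def by auto

lemma scott_cont_lub:
  assumes cont: "\<forall>n. scott_cont A r B s (p n)"
    and lub: "\<forall>x\<in>A. is_lub B s {p n x | n. True} (h x)"
    and po: "po_on B s"
  shows "scott_cont A r B s h"
proof -
  have hB: "\<forall>x\<in>A. h x \<in> B" using lub unfolding is_lub_def by auto
  have pB: "\<And>n x. x \<in> A \<Longrightarrow> p n x \<in> B" using cont unfolding scott_cont_def by auto
  have mono: "\<forall>x\<in>A. \<forall>y\<in>A. r x y \<longrightarrow> s (h x) (h y)"
  proof (intro ballI impI)
    fix x y assume xy: "x \<in> A" "y \<in> A" "r x y"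
    have "\<forall>n. s (p n x) (h y)"
    proof
      fix n
      have "s (p n x) (p n y)" using cont xy unfolding scott_cont_def by blast
      moreover have "s (p n y) (h y)" using lub xy unfolding is_lub_def by blast
      ultimately show "s (p n x) (h y)" using po pB hB xy unfolding po_on_def by blast
    qed
    then show "s (h x) (h y)" using lub xy hB unfolding is_lub_def by blast
  qed
  have "\<forall>S x. directed_in A r S \<and> is_lub A r S x \<longrightarrow> is_lub B s (h ` S) (h x)"
  proof (intro allI impI)
    fix S x assume a: "directed_in A r S \<and> is_lub A r S x"
    have xA: "x \<in> A" and SA: "S \<subseteq> A" using a unfolding is_lub_def directed_in_def by auto
    have ub: "\<forall>y\<in>h ` S. s y (h x)" using mono a SA xA unfolding is_lub_def by blast
    have least: "\<forall>z\<in>B. (\<forall>y\<in>h ` S. s y z) \<longrightarrow> s (h x) z"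
    proof (intro ballI impI)
      fix z assume z: "z \<in> B" "\<forall>y\<in>h ` S. s y z"
      have "\<forall>n. s (p n x) z"
      proof
        fix n
        have l: "is_lub B s (p n ` S) (p n x)" using cont a unfolding scott_cont_def by blast
        have "\<forall>y\<in>S. s (p n y) z"
        proof
          fix y assume "y \<in> S"
          then have "s (p n y) (h y)" "s (h y) z" "y \<in> A" using lub z SA unfolding is_lub_def by auto
          then show "s (p n y) z" using po pB hB z unfolding po_on_def by blast
        qed
        then show "s (p n x) z" using l z unfolding is_lub_def by blast
      qed
      then show "s (h x) z" using lub xA z unfolding is_lub_def by blast
    qed
    show "is_lub B s (h ` S) (h x)" using ub least hB xA unfolding is_lub_def by blast
  qed
  then show ?thesis using mono hB unfolding scott_cont_def by blast
qed

lemma chain_directed: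
  assumes po: "po_on A r" and inA: "\<forall>n. a n \<in> A" and ch: "\<forall>n. r (a n) (a (Suc n))"
  shows "directed_in A r {a n | n. True}"
proof -
  have le: "m \<le> n \<Longrightarrow> r (a m) (a n)" for m n
  proof (induction n)
    case 0 then show ?case using po inA unfolding po_on_def by auto
  next
    case (Suc n)
    show ?case
    proof (cases "m = Suc n")
      case True then show ?thesis using po inA unfolding po_on_def by auto
    next
      case False then have "r (a m) (a n)" using Suc by auto
      then show ?thesis using po inA ch unfolding po_on_def by blast
    qed
  qed
  show ?thesis unfolding directed_in_def
  proof (intro conjI)
    show "\<forall>x\<in>{a n |n. True}. \<forall>y\<in>{a n |n. True}. \<exists>z\<in>{a n |n. True}. r x z \<and> r y z"
    proof (intro ballI)
      fix x y assume "x \<in> {a n |n. True}" "y \<in> {a n |n. True}"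
      then obtain m n where "x = a m" "y = a n" by auto
      then show "\<exists>z\<in>{a n |n. True}. r x z \<and> r y z"
        using le[of m "max m n"] le[of n "max m n"] by auto
    qed
  qed (use inA in auto)
qed

section \<open>Types\<close>

lemma fv_subst: "fv (subst t a s) \<subseteq> (fv t - {a}) \<union> fv s"
  by (induction t) auto

lemma subst_nofv: "a \<notin> fv t \<Longrightarrow> subst t a s = t"
  by (induction t) auto

lemma fv_csubst: "fv (csubst \<sigma> t) \<subseteq> (\<Union>c\<in>fv t. fv (\<sigma> c))"
proof (induction t arbitrary: \<sigma>)
  case (TMu b t)
  show ?case
  proof
    fix x assume "x \<in> fv (csubst \<sigma> (TMu b t))"
    then have "x \<in> fv (csubst (\<sigma>(b := TVar b)) t)" "x \<noteq> b" by auto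
    then obtain c where "c \<in> fv t" "x \<in> fv ((\<sigma>(b := TVar b)) c)" using TMu[of "\<sigma>(b := TVar b)"] by blast
    then show "x \<in> (\<Union>c\<in>fv (TMu b t). fv (\<sigma> c))" using \<open>x \<noteq> b\<close> by (cases "c = b") auto
  qed
qed force+

lemma csubst_cong: "(\<forall>c\<in>fv t. \<sigma> c = \<sigma>' c) \<Longrightarrow> csubst \<sigma> t = csubst \<sigma>' t"
proof (induction t arbitrary: \<sigma> \<sigma>')
  case (TMu b t)
  then show ?case by (auto intro!: TMu.IH)
qed auto

lemma csubst_closed: "closed_ty t \<Longrightarrow> csubst \<sigma> t = csubst \<sigma>' t"
  by (rule csubst_cong) (auto simp: closed_ty_def)

lemma csubst_closed_ty: "(\<forall>c\<in>fv t. closed_ty (\<sigma> c)) \<Longrightarrow> closed_ty (csubst \<sigma> t)"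
  using fv_csubst[of \<sigma> t] unfolding closed_ty_def by auto

lemma subst_csubst:
  "(\<forall>c\<in>fv t - {b}. b \<notin> fv (\<sigma> c)) \<Longrightarrow>
   subst (csubst (\<sigma>(b := TVar b)) t) b T = csubst (\<sigma>(b := T)) t"
proof (induction t arbitrary: \<sigma>)
  case (TVar c)
  then show ?case by (auto simp: subst_nofv)
next
  case (TMu c t)
  show ?case
  proof (cases "c = b")
    case True
    then show ?thesis by (simp, intro arg_cong[where f="\<lambda>\<sigma>. csubst \<sigma> t"], auto simp: fun_eq_iff)
  next
    case False
    have "subst (csubst ((\<sigma>(c := TVar c))(b := TVar b)) t) b T = csubst ((\<sigma>(c := TVar c))(b := T)) t"
      using TMu.prems False by (intro TMu.IH) auto
    moreover have "(\<sigma>(c := TVar c))(b := TVar b) = (\<sigma>(b := TVar b))(c := TVar c)"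
      "(\<sigma>(c := TVar c))(b := T) = (\<sigma>(b := T))(c := TVar c)" using False by (auto simp: fun_eq_iff)
    ultimately have "subst (csubst ((\<sigma>(b := TVar b))(c := TVar c)) t) b T = csubst ((\<sigma>(b := T))(c := TVar c)) t"
      by simp
    then show ?thesis using False by (simp del: fun_upd_apply)
  qed
qed auto

lemma closed_unfold: "closed_ty (TMu a t) \<Longrightarrow> closed_ty (subst t a (TMu a t))"
  using fv_subst[of t a "TMu a t"] unfolding closed_ty_def by auto


lemma iso_cont:
  assumes fA: "\<forall>x\<in>A. f x \<in> B" and gB: "\<forall>y\<in>B. g y \<in> A" and fg: "\<forall>y\<in>B. f (g y) = y"
    and iff: "\<forall>x\<in>A. \<forall>y\<in>A. r x y \<longleftrightarrow> s (f x) (f y)"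
  shows "scott_cont A r B s f"
proof -
  have "\<forall>S x. directed_in A r S \<and> is_lub A r S x \<longrightarrow> is_lub B s (f ` S) (f x)"
  proof (intro allI impI)
    fix S x assume a: "directed_in A r S \<and> is_lub A r S x"
    then have SA: "S \<subseteq> A" and xA: "x \<in> A" unfolding directed_in_def is_lub_def by auto
    have "\<forall>z\<in>B. (\<forall>y\<in>f ` S. s y z) \<longrightarrow> s (f x) z"
    proof (intro ballI impI)
      fix z assume z: "z \<in> B" "\<forall>y\<in>f ` S. s y z"
      have "\<forall>y\<in>S. r y (g z)" using z SA iff gB fg by (metis image_eqI subsetD)
      then have "r x (g z)" using a gB z unfolding is_lub_def by blast
      then show "s (f x) z" using iff xA gB z fg by metis
    qed
    moreover have "\<forall>y\<in>f ` S. s y (f x)"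
    proof
      fix y assume "y \<in> f ` S"
      then obtain y' where "y' \<in> S" "y = f y'" by auto
      then show "s y (f x)" using a iff SA xA unfolding is_lub_def by blast
    qed
    ultimately show "is_lub B s (f ` S) (f x)" using fA xA unfolding is_lub_def by auto
  qed
  then show ?thesis using fA iff unfolding scott_cont_def by blast
qed

lemma closed_simps[simp]:
  "closed_ty TUnit"
  "closed_ty (TProd t s) \<longleftrightarrow> closed_ty t \<and> closed_ty s"
  "closed_ty (TFun t s) \<longleftrightarrow> closed_ty t \<and> closed_ty s"
  "closed_ty (TSum t s) \<longleftrightarrow> closed_ty t \<and> closed_ty s"
  "\<not> closed_ty (TVar a)"
  unfolding closed_ty_def by auto

locale pmod =
  fixes M :: "'u pmodel"
  assumes pm: "pure_model M"
begin

abbreviation D where "D \<equiv> m_dom M"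
abbreviation R where "R \<equiv> m_le M"

lemmas pmu = pm[unfolded pure_model_def Let_def]
lemmas pm_dom = pmu[THEN conjunct1]
lemmas pm_unit = pmu[THEN conjunct2, THEN conjunct1]
lemmas pm_prod = pmu[THEN conjunct2, THEN conjunct2, THEN conjunct1]
lemmas pm_fun = pmu[THEN conjunct2, THEN conjunct2, THEN conjunct2, THEN conjunct1]
lemmas pm_sum = pmu[THEN conjunct2, THEN conjunct2, THEN conjunct2, THEN conjunct2, THEN conjunct1]
lemmas pm_mu = pmu[THEN conjunct2, THEN conjunct2, THEN conjunct2, THEN conjunct2, THEN conjunct2]

lemma dcpo: "closed_ty T \<Longrightarrow> is_dcpo (D T) (R T)"
  using pm_dom by blast

lemma pointed: "closed_ty T \<Longrightarrow> pointed (D T) (R T)"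
  using pm_dom by blast

lemma po: "closed_ty T \<Longrightarrow> po_on (D T) (R T)"
  using dcpo unfolding is_dcpo_def by auto

lemma refl: assumes "closed_ty T" "x \<in> D T" shows "R T x x"
  using po[OF assms(1)] assms(2) unfolding po_on_def by blast

lemma antisym: assumes "closed_ty T" "x \<in> D T" "y \<in> D T" "R T x y" "R T y x" shows "x = y"
  using po[OF assms(1)] assms(2-) unfolding po_on_def by blast

lemma trans: assumes "closed_ty T" "x \<in> D T" "y \<in> D T" "z \<in> D T" "R T x y" "R T y z" shows "R T x z"
  using po[OF assms(1)] assms(2-) unfolding po_on_def by blast

lemma lub_exists: assumes "closed_ty T" "directed_in (D T) (R T) S" shows "\<exists>x. is_lub (D T) (R T) S x"
  using dcpo[OF assms(1)] assms(2) unfolding is_dcpo_def by blast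

lemma lubM_eq: assumes c: "closed_ty T" and l: "is_lub (D T) (R T) S x" shows "lubM M T S = x"
  unfolding lubM_def
proof (rule the_equality)
  show "is_lub (D T) (R T) S x" by (rule l)
  fix y assume "is_lub (D T) (R T) S y"
  then show "y = x" by (rule lub_unique[OF po[OF c] _ l])
qed

lemma lubM: assumes c: "closed_ty T" and d: "directed_in (D T) (R T) S" shows "is_lub (D T) (R T) S (lubM M T S)"
proof -
  obtain x where x: "is_lub (D T) (R T) S x" using lub_exists[OF c d] by blast
  show ?thesis using x lubM_eq[OF c x] by simp
qed

lemma lub_dom: "is_lub A r S x \<Longrightarrow> x \<in> A"
  unfolding is_lub_def by auto

lemma bot_eq: assumes c: "closed_ty T" and b: "b \<in> D T" "\<forall>x\<in>D T. R T b x" shows "bottomM M T = b"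
  unfolding bottomM_def
proof (rule the_equality)
  show "b \<in> D T \<and> (\<forall>x\<in>D T. R T b x)" using b by simp
  fix y assume y: "y \<in> D T \<and> (\<forall>x\<in>D T. R T y x)"
  show "y = b" by (rule antisym[OF c]) (use y b in auto)
qed

lemma bot: "closed_ty T \<Longrightarrow> bottomM M T \<in> D T \<and> (\<forall>x\<in>D T. R T (bottomM M T) x)"
proof -
  assume c: "closed_ty T"
  then obtain b where "b \<in> D T" "\<forall>x\<in>D T. R T b x" using pointed unfolding pointed_def by auto
  then show ?thesis using bot_eq[OF c] by auto
qed

lemma bot_dom: "closed_ty T \<Longrightarrow> bottomM M T \<in> D T" using bot by auto
lemma bot_le: "closed_ty T \<Longrightarrow> x \<in> D T \<Longrightarrow> R T (bottomM M T) x" using bot by auto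

lemma compact_bot: assumes c: "closed_ty T" shows "compact_el (D T) (R T) (bottomM M T)"
  unfolding compact_el_def
proof (intro conjI allI impI)
  show "bottomM M T \<in> D T" using bot[OF c] by simp
  fix S x assume a: "directed_in (D T) (R T) S \<and> is_lub (D T) (R T) S x \<and> R T (bottomM M T) x"
  then obtain e where "e \<in> S" "S \<subseteq> D T" unfolding directed_in_def by auto
  then show "\<exists>e\<in>S. R T (bottomM M T) e" using bot[OF c] by auto
qed

lemma upset_open:
  "compact_el (D T) (R T) d \<Longrightarrow> directed_in (D T) (R T) S \<Longrightarrow> is_lub (D T) (R T) S x \<Longrightarrow>
   x \<in> upset M T d \<Longrightarrow> \<exists>s\<in>S. s \<in> upset M T d"
proof -
  assume a: "compact_el (D T) (R T) d" "directed_in (D T) (R T) S" "is_lub (D T) (R T) S x" "x \<in> upset M T d"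
  then have "\<exists>e\<in>S. R T d e" unfolding compact_el_def upset_def by blast
  moreover have "S \<subseteq> D T" using a(2) unfolding directed_in_def by auto
  ultimately show ?thesis unfolding upset_def by blast
qed

lemma unit:
  "D TUnit = {bottomM M TUnit, m_top M}" "bottomM M TUnit \<noteq> m_top M"
  "\<not> R TUnit (m_top M) (bottomM M TUnit)"
proof -
  obtain b where b: "D TUnit = {b, m_top M}" "b \<noteq> m_top M" "R TUnit b (m_top M)" "\<not> R TUnit (m_top M) b"
    using pm_unit by blast
  have bD: "b \<in> D TUnit" using b(1) by simp
  have "\<forall>x\<in>D TUnit. R TUnit b x" using b(1,3) refl[OF closed_simps(1) bD] by auto
  then have e: "bottomM M TUnit = b" using bot_eq[OF closed_simps(1) bD] by simp
  show "D TUnit = {bottomM M TUnit, m_top M}" using b(1) e by simp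
  show "bottomM M TUnit \<noteq> m_top M" using b(2) e by simp
  show "\<not> R TUnit (m_top M) (bottomM M TUnit)" using b(4) e by simp
qed

subsection \<open>Products\<close>

lemma prod_ax:
  assumes "closed_ty (TProd t s)"
  shows "bij_betw (\<lambda>x. (m_pi1 M (TProd t s) x, m_pi2 M (TProd t s) x)) (D (TProd t s)) (D t \<times> D s)"
    "\<forall>x\<in>D (TProd t s). \<forall>y\<in>D (TProd t s). R (TProd t s) x y \<longleftrightarrow>
       R t (m_pi1 M (TProd t s) x) (m_pi1 M (TProd t s) y) \<and> R s (m_pi2 M (TProd t s) x) (m_pi2 M (TProd t s) y)"
  using pm_prod[THEN spec[of _ t], THEN spec[of _ s], THEN mp, OF assms] by (rule conjunct1, rule conjunct2)

lemma pi_dom: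
  assumes "closed_ty (TProd t s)" "x \<in> D (TProd t s)"
  shows "m_pi1 M (TProd t s) x \<in> D t" "m_pi2 M (TProd t s) x \<in> D s"
  using prod_ax(1)[OF assms(1)] assms(2) unfolding bij_betw_def by auto

lemma le_prod:
  assumes "closed_ty (TProd t s)" "x \<in> D (TProd t s)" "y \<in> D (TProd t s)"
  shows "R (TProd t s) x y \<longleftrightarrow>
       R t (m_pi1 M (TProd t s) x) (m_pi1 M (TProd t s) y) \<and> R s (m_pi2 M (TProd t s) x) (m_pi2 M (TProd t s) y)"
  using prod_ax(2)[OF assms(1)] assms(2,3) by blast

lemma pair:
  assumes c: "closed_ty (TProd t s)" and a: "a \<in> D t" and b: "b \<in> D s"
  shows "pairM M (TProd t s) a b \<in> D (TProd t s) \<and> m_pi1 M (TProd t s) (pairM M (TProd t s) a b) = a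
     \<and> m_pi2 M (TProd t s) (pairM M (TProd t s) a b) = b"
proof -
  let ?T = "TProd t s"
  have bij: "bij_betw (\<lambda>x. (m_pi1 M ?T x, m_pi2 M ?T x)) (D ?T) (D t \<times> D s)" by (rule prod_ax(1)[OF c])
  then have "(a, b) \<in> (\<lambda>x. (m_pi1 M ?T x, m_pi2 M ?T x)) ` D ?T" using a b unfolding bij_betw_def by auto
  then obtain x where x: "x \<in> D ?T" "m_pi1 M ?T x = a" "m_pi2 M ?T x = b" by auto
  have "\<exists>!x. x \<in> D ?T \<and> m_pi1 M ?T x = a \<and> m_pi2 M ?T x = b"
  proof (rule ex1I[of _ x])
    fix y assume "y \<in> D ?T \<and> m_pi1 M ?T y = a \<and> m_pi2 M ?T y = b"
    then show "y = x" using x bij unfolding bij_betw_def inj_on_def by auto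
  qed (use x in auto)
  from theI'[OF this] show ?thesis unfolding pairM_def by blast
qed

lemma pair_eta:
  assumes c: "closed_ty (TProd t s)" and x: "x \<in> D (TProd t s)"
  shows "pairM M (TProd t s) (m_pi1 M (TProd t s) x) (m_pi2 M (TProd t s) x) = x"
proof -
  let ?T = "TProd t s"
  have bij: "bij_betw (\<lambda>x. (m_pi1 M ?T x, m_pi2 M ?T x)) (D ?T) (D t \<times> D s)" by (rule prod_ax(1)[OF c])
  show ?thesis unfolding pairM_def
    by (rule the_equality) (use x bij in \<open>auto simp: bij_betw_def inj_on_def\<close>)
qed

lemma prod_lub:
  assumes c: "closed_ty (TProd t s)" and dir: "directed_in (D (TProd t s)) (R (TProd t s)) S"
    and lub: "is_lub (D (TProd t s)) (R (TProd t s)) S x"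
  shows "is_lub (D t) (R t) (m_pi1 M (TProd t s) ` S) (m_pi1 M (TProd t s) x)"
    "is_lub (D s) (R s) (m_pi2 M (TProd t s) ` S) (m_pi2 M (TProd t s) x)"
proof -
  let ?T = "TProd t s"
  have SD: "S \<subseteq> D ?T" using dir unfolding directed_in_def by auto
  have xD: "x \<in> D ?T" using lub by (rule lub_dom)
  have ub: "\<forall>y\<in>S. R ?T y x" using lub unfolding is_lub_def by auto
  have ct: "closed_ty t" "closed_ty s" using c by auto
  show "is_lub (D t) (R t) (m_pi1 M ?T ` S) (m_pi1 M ?T x)"
    unfolding is_lub_def
  proof (intro conjI ballI impI)
    show "m_pi1 M ?T x \<in> D t" using pi_dom[OF c xD] by auto
    show "R t y (m_pi1 M ?T x)" if "y \<in> m_pi1 M ?T ` S" for y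
    proof -
      from that obtain y' where y': "y = m_pi1 M ?T y'" "y' \<in> S" by (rule imageE)
      then show ?thesis using ub SD le_prod[OF c _ xD] by blast
    qed
    fix z assume z: "z \<in> D t" "\<forall>y\<in>m_pi1 M ?T ` S. R t y z"
    let ?p = "pairM M ?T z (m_pi2 M ?T x)"
    have p: "?p \<in> D ?T" "m_pi1 M ?T ?p = z" "m_pi2 M ?T ?p = m_pi2 M ?T x"
      using pair[OF c z(1) pi_dom(2)[OF c xD]] by auto
    have "\<forall>y\<in>S. R ?T y ?p"
    proof
      fix y assume y: "y \<in> S"
      then have yD: "y \<in> D ?T" using SD by auto
      have "R t (m_pi1 M ?T y) z" using z y by auto
      moreover have "R s (m_pi2 M ?T y) (m_pi2 M ?T x)" using ub y le_prod[OF c yD xD] by auto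
      ultimately show "R ?T y ?p" using le_prod[OF c yD p(1)] p by auto
    qed
    then have "R ?T x ?p" using lub p unfolding is_lub_def by blast
    then show "R t (m_pi1 M ?T x) z" using le_prod[OF c xD p(1)] p by auto
  qed
  show "is_lub (D s) (R s) (m_pi2 M ?T ` S) (m_pi2 M ?T x)"
    unfolding is_lub_def
  proof (intro conjI ballI impI)
    show "m_pi2 M ?T x \<in> D s" using pi_dom[OF c xD] by auto
    show "R s y (m_pi2 M ?T x)" if "y \<in> m_pi2 M ?T ` S" for y
    proof -
      from that obtain y' where y': "y = m_pi2 M ?T y'" "y' \<in> S" by (rule imageE)
      then show ?thesis using ub SD le_prod[OF c _ xD] by blast
    qed
    fix z assume z: "z \<in> D s" "\<forall>y\<in>m_pi2 M ?T ` S. R s y z"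
    let ?p = "pairM M ?T (m_pi1 M ?T x) z"
    have p: "?p \<in> D ?T" "m_pi1 M ?T ?p = m_pi1 M ?T x" "m_pi2 M ?T ?p = z"
      using pair[OF c pi_dom(1)[OF c xD] z(1)] by auto
    have "\<forall>y\<in>S. R ?T y ?p"
    proof
      fix y assume y: "y \<in> S"
      then have yD: "y \<in> D ?T" using SD by auto
      have "R s (m_pi2 M ?T y) z" using z y by auto
      moreover have "R t (m_pi1 M ?T y) (m_pi1 M ?T x)" using ub y le_prod[OF c yD xD] by auto
      ultimately show "R ?T y ?p" using le_prod[OF c yD p(1)] p by auto
    qed
    then have "R ?T x ?p" using lub p unfolding is_lub_def by blast
    then show "R s (m_pi2 M ?T x) z" using le_prod[OF c xD p(1)] p by auto
  qed
qed

subsection \<open>Functions\<close>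

lemma fun_ax:
  assumes "closed_ty (TFun s t)"
  shows "\<forall>f\<in>D (TFun s t). scott_cont (D s) (R s) (D t) (R t) (m_app M (TFun s t) f)"
    "\<forall>g. scott_cont (D s) (R s) (D t) (R t) g \<longrightarrow> (\<exists>f\<in>D (TFun s t). \<forall>x\<in>D s. m_app M (TFun s t) f x = g x)"
    "\<forall>f\<in>D (TFun s t). \<forall>g\<in>D (TFun s t). R (TFun s t) f g \<longleftrightarrow>
             (\<forall>x\<in>D s. R t (m_app M (TFun s t) f x) (m_app M (TFun s t) g x))"
  using pm_fun[THEN spec[of _ s], THEN spec[of _ t], THEN mp, OF assms] by (rule conjunct1, rule conjunct1[OF conjunct2], rule conjunct2[OF conjunct2])

lemma app_cont: "closed_ty (TFun s t) \<Longrightarrow> f \<in> D (TFun s t) \<Longrightarrow> scott_cont (D s) (R s) (D t) (R t) (m_app M (TFun s t) f)"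
  using fun_ax by blast

lemma app_dom: "closed_ty (TFun s t) \<Longrightarrow> f \<in> D (TFun s t) \<Longrightarrow> x \<in> D s \<Longrightarrow> m_app M (TFun s t) f x \<in> D t"
  using app_cont unfolding scott_cont_def by blast

lemma app_mono: "closed_ty (TFun s t) \<Longrightarrow> f \<in> D (TFun s t) \<Longrightarrow> x \<in> D s \<Longrightarrow> y \<in> D s \<Longrightarrow> R s x y \<Longrightarrow>
   R t (m_app M (TFun s t) f x) (m_app M (TFun s t) f y)"
  using app_cont unfolding scott_cont_def by blast

lemma app_lub: "closed_ty (TFun s t) \<Longrightarrow> f \<in> D (TFun s t) \<Longrightarrow> directed_in (D s) (R s) S \<Longrightarrow> is_lub (D s) (R s) S x \<Longrightarrow>
   is_lub (D t) (R t) (m_app M (TFun s t) f ` S) (m_app M (TFun s t) f x)"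
  using app_cont unfolding scott_cont_def by blast

lemma le_fun: "closed_ty (TFun s t) \<Longrightarrow> f \<in> D (TFun s t) \<Longrightarrow> g \<in> D (TFun s t) \<Longrightarrow>
   R (TFun s t) f g \<longleftrightarrow> (\<forall>x\<in>D s. R t (m_app M (TFun s t) f x) (m_app M (TFun s t) g x))"
  using fun_ax(3) by blast

lemma fun_ext: "closed_ty (TFun s t) \<Longrightarrow> f \<in> D (TFun s t) \<Longrightarrow> g \<in> D (TFun s t) \<Longrightarrow>
   \<forall>x\<in>D s. m_app M (TFun s t) f x = m_app M (TFun s t) g x \<Longrightarrow> f = g"
  by (rule antisym[of "TFun s t"]) (auto simp: le_fun intro!: refl app_dom)

lemma lam:
  assumes c: "closed_ty (TFun s t)" and g: "scott_cont (D s) (R s) (D t) (R t) g"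
  shows "lamM M s (TFun s t) g \<in> D (TFun s t) \<and> (\<forall>x\<in>D s. m_app M (TFun s t) (lamM M s (TFun s t) g) x = g x)"
proof -
  obtain f where f: "f \<in> D (TFun s t)" "\<forall>x\<in>D s. m_app M (TFun s t) f x = g x" using fun_ax(2)[OF c] g by blast
  have "\<exists>!f. f \<in> D (TFun s t) \<and> (\<forall>x\<in>D s. m_app M (TFun s t) f x = g x)"
  proof (rule ex1I[of _ f])
    fix f' assume "f' \<in> D (TFun s t) \<and> (\<forall>x\<in>D s. m_app M (TFun s t) f' x = g x)"
    then show "f' = f" using f by (intro fun_ext[OF c]) auto
  qed (use f in auto)
  from theI'[OF this] show ?thesis unfolding lamM_def by blast
qed

lemma lam_eta:
  assumes c: "closed_ty (TFun s t)" and f: "f \<in> D (TFun s t)"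
  shows "lamM M s (TFun s t) (m_app M (TFun s t) f) = f"
proof -
  have "lamM M s (TFun s t) (m_app M (TFun s t) f) \<in> D (TFun s t)"
     "\<forall>x\<in>D s. m_app M (TFun s t) (lamM M s (TFun s t) (m_app M (TFun s t) f)) x = m_app M (TFun s t) f x"
    using lam[OF c app_cont[OF c f]] by auto
  then show ?thesis using f by (intro fun_ext[OF c]) auto
qed

lemma fun_lub:
  assumes c: "closed_ty (TFun s t)" and dir: "directed_in (D (TFun s t)) (R (TFun s t)) F"
    and lub: "is_lub (D (TFun s t)) (R (TFun s t)) F h" and x: "x \<in> D s"
  shows "is_lub (D t) (R t) ((\<lambda>f. m_app M (TFun s t) f x) ` F) (m_app M (TFun s t) h x)"
proof -
  let ?T = "TFun s t" and ?ap = "m_app M (TFun s t)"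
  have cs: "closed_ty s" "closed_ty t" using c by auto
  have FD: "F \<subseteq> D ?T" using dir unfolding directed_in_def by auto
  have hD: "h \<in> D ?T" using lub by (rule lub_dom)
  have dirx: "directed_in (D t) (R t) ((\<lambda>f. ?ap f y) ` F)" if "y \<in> D s" for y
  proof (rule directed_image[OF dir])
    show "\<forall>f\<in>D ?T. ?ap f y \<in> D t" using app_dom[OF c _ that] by blast
    show "\<forall>f\<in>D ?T. \<forall>g\<in>D ?T. R ?T f g \<longrightarrow> R t (?ap f y) (?ap g y)"
      using le_fun[OF c] that by blast
  qed
  define k where "k y = lubM M t ((\<lambda>f. ?ap f y) ` F)" for y
  have klub: "is_lub (D t) (R t) ((\<lambda>f. ?ap f y) ` F) (k y)" if "y \<in> D s" for y
    unfolding k_def using lubM[OF cs(2) dirx[OF that]] .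
  have kD: "\<forall>y\<in>D s. k y \<in> D t" using lub_dom[OF klub] by blast
  have kmono: "\<forall>y\<in>D s. \<forall>y'\<in>D s. R s y y' \<longrightarrow> R t (k y) (k y')"
  proof (intro ballI impI)
    fix y y' assume y: "y \<in> D s" "y' \<in> D s" "R s y y'"
    have "\<forall>f\<in>F. R t (?ap f y) (k y')"
    proof
      fix f assume f: "f \<in> F"
      then have fD: "f \<in> D ?T" using FD by auto
      have 1: "R t (?ap f y) (?ap f y')" using app_mono[OF c fD y] .
      have 2: "R t (?ap f y') (k y')" using klub[OF y(2)] f unfolding is_lub_def by blast
      show "R t (?ap f y) (k y')"
        using trans[OF cs(2) app_dom[OF c fD y(1)] app_dom[OF c fD y(2)] _ 1 2] kD y by blast
    qed
    then show "R t (k y) (k y')" using klub[OF y(1)] kD y unfolding is_lub_def by blast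
  qed
  have kcont: "scott_cont (D s) (R s) (D t) (R t) k"
    unfolding scott_cont_def
  proof (intro conjI allI impI)
    show "\<forall>y\<in>D s. k y \<in> D t" by (rule kD)
    show "\<forall>y\<in>D s. \<forall>y'\<in>D s. R s y y' \<longrightarrow> R t (k y) (k y')" by (rule kmono)
    fix S y assume a: "directed_in (D s) (R s) S \<and> is_lub (D s) (R s) S y"
    have SD: "S \<subseteq> D s" and yD: "y \<in> D s" using a unfolding directed_in_def is_lub_def by auto
    show "is_lub (D t) (R t) (k ` S) (k y)" unfolding is_lub_def
    proof (intro conjI ballI impI)
      show "k y \<in> D t" using kD yD by auto
      show "R t w (k y)" if "w \<in> k ` S" for w using that kmono SD yD a unfolding is_lub_def by auto
      fix z assume z: "z \<in> D t" "\<forall>w\<in>k ` S. R t w z"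
      have "\<forall>f\<in>F. R t (?ap f y) z"
      proof
        fix f assume f: "f \<in> F"
        have l: "is_lub (D t) (R t) (?ap f ` S) (?ap f y)" using app_lub[OF c _ ] f FD a by blast
        have "\<forall>w\<in>S. R t (?ap f w) z"
        proof
          fix w assume w: "w \<in> S"
          have "R t (?ap f w) (k w)" using klub w SD f unfolding is_lub_def by auto
          moreover have "R t (k w) z" using z w by auto
          ultimately show "R t (?ap f w) z" using trans[OF cs(2)] app_dom[OF c] f FD w SD kD z by blast
        qed
        then show "R t (?ap f y) z" using l z unfolding is_lub_def by blast
      qed
      then show "R t (k y) z" using klub[OF yD] z unfolding is_lub_def by blast
    qed
  qed
  obtain h' where h': "h' \<in> D ?T" "\<forall>y\<in>D s. ?ap h' y = k y" using fun_ax(2)[OF c] kcont by blast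
  have "is_lub (D ?T) (R ?T) F h'" unfolding is_lub_def
  proof (intro conjI ballI impI)
    show "h' \<in> D ?T" by (rule h'(1))
    show "R ?T f h'" if "f \<in> F" for f
      using that FD h' klub le_fun[OF c] unfolding is_lub_def by auto
    fix u assume u: "u \<in> D ?T" "\<forall>f\<in>F. R ?T f u"
    have "\<forall>y\<in>D s. R t (k y) (?ap u y)"
    proof
      fix y assume y: "y \<in> D s"
      have "\<forall>f\<in>F. R t (?ap f y) (?ap u y)" using u FD le_fun[OF c] y by blast
      then show "R t (k y) (?ap u y)" using klub[OF y] app_dom[OF c u(1) y] unfolding is_lub_def by blast
    qed
    then show "R ?T h' u" using le_fun[OF c h'(1) u(1)] h' by auto
  qed
  then have "h = h'" using lub_unique[OF po[OF c]] lub by blast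
  then show ?thesis using klub[OF x] h' x by auto
qed

end


context pmod
begin

subsection \<open>Sums\<close>

lemma sum_ax:
  assumes "closed_ty (TSum t s)"
  shows "inj_on (m_inj1 M (TSum t s)) (D t)" "inj_on (m_inj2 M (TSum t s)) (D s)"
   "m_inj1 M (TSum t s) ` D t \<inter> m_inj2 M (TSum t s) ` D s = {}"
   "\<exists>b. b \<notin> m_inj1 M (TSum t s) ` D t \<union> m_inj2 M (TSum t s) ` D s
       \<and> D (TSum t s) = insert b (m_inj1 M (TSum t s) ` D t \<union> m_inj2 M (TSum t s) ` D s)
       \<and> (\<forall>x\<in>D (TSum t s). R (TSum t s) b x)
       \<and> (\<forall>x\<in>D t. \<not> R (TSum t s) (m_inj1 M (TSum t s) x) b) \<and> (\<forall>y\<in>D s. \<not> R (TSum t s) (m_inj2 M (TSum t s) y) b)"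
   "\<forall>x\<in>D t. \<forall>y\<in>D t. R (TSum t s) (m_inj1 M (TSum t s) x) (m_inj1 M (TSum t s) y) \<longleftrightarrow> R t x y"
   "\<forall>x\<in>D s. \<forall>y\<in>D s. R (TSum t s) (m_inj2 M (TSum t s) x) (m_inj2 M (TSum t s) y) \<longleftrightarrow> R s x y"
   "\<forall>x\<in>D t. \<forall>y\<in>D s. \<not> R (TSum t s) (m_inj1 M (TSum t s) x) (m_inj2 M (TSum t s) y)
       \<and> \<not> R (TSum t s) (m_inj2 M (TSum t s) y) (m_inj1 M (TSum t s) x)"
  apply (insert pm_sum[THEN spec[of _ t], THEN spec[of _ s], THEN mp, OF assms])
  apply (elim conjE; assumption)+
  done

lemma sum_bot:
  assumes c: "closed_ty (TSum t s)"
  shows "bottomM M (TSum t s) \<notin> m_inj1 M (TSum t s) ` D t \<union> m_inj2 M (TSum t s) ` D s"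
    "D (TSum t s) = insert (bottomM M (TSum t s)) (m_inj1 M (TSum t s) ` D t \<union> m_inj2 M (TSum t s) ` D s)"
    "\<forall>x\<in>D t. \<not> R (TSum t s) (m_inj1 M (TSum t s) x) (bottomM M (TSum t s))"
    "\<forall>y\<in>D s. \<not> R (TSum t s) (m_inj2 M (TSum t s) y) (bottomM M (TSum t s))"
proof -
  obtain b where b: "b \<notin> m_inj1 M (TSum t s) ` D t \<union> m_inj2 M (TSum t s) ` D s"
       "D (TSum t s) = insert b (m_inj1 M (TSum t s) ` D t \<union> m_inj2 M (TSum t s) ` D s)"
       "\<forall>x\<in>D (TSum t s). R (TSum t s) b x"
       "\<forall>x\<in>D t. \<not> R (TSum t s) (m_inj1 M (TSum t s) x) b" "\<forall>y\<in>D s. \<not> R (TSum t s) (m_inj2 M (TSum t s) y) b"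
    using sum_ax(4)[OF c] by blast
  have "b \<in> D (TSum t s)" using b(2) by simp
  then have e: "bottomM M (TSum t s) = b" using bot_eq[OF c _ b(3)] by simp
  show "bottomM M (TSum t s) \<notin> m_inj1 M (TSum t s) ` D t \<union> m_inj2 M (TSum t s) ` D s"
    "D (TSum t s) = insert (bottomM M (TSum t s)) (m_inj1 M (TSum t s) ` D t \<union> m_inj2 M (TSum t s) ` D s)"
    "\<forall>x\<in>D t. \<not> R (TSum t s) (m_inj1 M (TSum t s) x) (bottomM M (TSum t s))"
    "\<forall>y\<in>D s. \<not> R (TSum t s) (m_inj2 M (TSum t s) y) (bottomM M (TSum t s))"
    using b e by simp_all
qed

lemma inj1_dom: "closed_ty (TSum t s) \<Longrightarrow> x \<in> D t \<Longrightarrow> m_inj1 M (TSum t s) x \<in> D (TSum t s)"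
  using sum_bot(2)[of t s] by blast

lemma inj2_dom: "closed_ty (TSum t s) \<Longrightarrow> x \<in> D s \<Longrightarrow> m_inj2 M (TSum t s) x \<in> D (TSum t s)"
  using sum_bot(2)[of t s] by blast

lemma sum_cases:
  assumes "closed_ty (TSum t s)" "y \<in> D (TSum t s)"
  obtains "y = bottomM M (TSum t s)" | x where "x \<in> D t" "y = m_inj1 M (TSum t s) x"
    | x where "x \<in> D s" "y = m_inj2 M (TSum t s) x"
  using sum_bot(2)[OF assms(1)] assms(2) by blast

lemma bot_ne_inj1: "closed_ty (TSum t s) \<Longrightarrow> x \<in> D t \<Longrightarrow> m_inj1 M (TSum t s) x \<noteq> bottomM M (TSum t s)"
  using sum_bot(1)[of t s] by (metis UnI1 UnI2 imageI)
lemma bot_ne_inj2: "closed_ty (TSum t s) \<Longrightarrow> x \<in> D s \<Longrightarrow> m_inj2 M (TSum t s) x \<noteq> bottomM M (TSum t s)"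
  using sum_bot(1)[of t s] by (metis UnI1 UnI2 imageI)
lemma inj1_ne_inj2: "closed_ty (TSum t s) \<Longrightarrow> x \<in> D t \<Longrightarrow> y \<in> D s \<Longrightarrow> m_inj1 M (TSum t s) x \<noteq> m_inj2 M (TSum t s) y"
  using sum_ax(3)[of t s] by (metis IntI imageI empty_iff)
lemma inj1_eq: "closed_ty (TSum t s) \<Longrightarrow> x \<in> D t \<Longrightarrow> y \<in> D t \<Longrightarrow> m_inj1 M (TSum t s) x = m_inj1 M (TSum t s) y \<longleftrightarrow> x = y"
  using sum_ax(1) unfolding inj_on_def by blast
lemma inj2_eq: "closed_ty (TSum t s) \<Longrightarrow> x \<in> D s \<Longrightarrow> y \<in> D s \<Longrightarrow> m_inj2 M (TSum t s) x = m_inj2 M (TSum t s) y \<longleftrightarrow> x = y"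
  using sum_ax(2) unfolding inj_on_def by blast
lemma inj1_le: "closed_ty (TSum t s) \<Longrightarrow> x \<in> D t \<Longrightarrow> y \<in> D t \<Longrightarrow> R (TSum t s) (m_inj1 M (TSum t s) x) (m_inj1 M (TSum t s) y) \<longleftrightarrow> R t x y"
  using sum_ax(5)[of t s] by blast
lemma inj2_le: "closed_ty (TSum t s) \<Longrightarrow> x \<in> D s \<Longrightarrow> y \<in> D s \<Longrightarrow> R (TSum t s) (m_inj2 M (TSum t s) x) (m_inj2 M (TSum t s) y) \<longleftrightarrow> R s x y"
  using sum_ax(6)[of t s] by blast
lemma inj12_nle: "closed_ty (TSum t s) \<Longrightarrow> x \<in> D t \<Longrightarrow> y \<in> D s \<Longrightarrow> \<not> R (TSum t s) (m_inj1 M (TSum t s) x) (m_inj2 M (TSum t s) y)"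
  using sum_ax(7)[of t s] by blast
lemma inj21_nle: "closed_ty (TSum t s) \<Longrightarrow> x \<in> D t \<Longrightarrow> y \<in> D s \<Longrightarrow> \<not> R (TSum t s) (m_inj2 M (TSum t s) y) (m_inj1 M (TSum t s) x)"
  using sum_ax(7)[of t s] by blast
lemma inj1_nle_bot: "closed_ty (TSum t s) \<Longrightarrow> x \<in> D t \<Longrightarrow> \<not> R (TSum t s) (m_inj1 M (TSum t s) x) (bottomM M (TSum t s))"
  using sum_bot(3)[of t s] by blast
lemma inj2_nle_bot: "closed_ty (TSum t s) \<Longrightarrow> x \<in> D s \<Longrightarrow> \<not> R (TSum t s) (m_inj2 M (TSum t s) x) (bottomM M (TSum t s))"
  using sum_bot(4)[of t s] by blast

lemma above_inj1:
  assumes c: "closed_ty (TSum t s)" and x: "x \<in> D t" and y: "y \<in> D (TSum t s)"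
    and le: "R (TSum t s) (m_inj1 M (TSum t s) x) y"
  shows "\<exists>y'\<in>D t. y = m_inj1 M (TSum t s) y' \<and> R t x y'"
  using sum_cases[OF c y]
proof cases
  case 1 then show ?thesis using inj1_nle_bot[OF c x] le by simp
next
  case (2 y') then show ?thesis using inj1_le[OF c x] le by auto
next
  case (3 y') then show ?thesis using inj12_nle[OF c x] le by auto
qed

lemma above_inj2:
  assumes c: "closed_ty (TSum t s)" and x: "x \<in> D s" and y: "y \<in> D (TSum t s)"
    and le: "R (TSum t s) (m_inj2 M (TSum t s) x) y"
  shows "\<exists>y'\<in>D s. y = m_inj2 M (TSum t s) y' \<and> R s x y'"
  using sum_cases[OF c y]
proof cases
  case 1 then show ?thesis using inj2_nle_bot[OF c x] le by simp
next
  case (2 y') then show ?thesis using inj21_nle[OF c _ x] le by auto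
next
  case (3 y') then show ?thesis using inj2_le[OF c x] le by auto
qed

lemma sum_lub_bot:
  assumes c: "closed_ty (TSum t s)" and dir: "directed_in (D (TSum t s)) (R (TSum t s)) S"
    and lub: "is_lub (D (TSum t s)) (R (TSum t s)) S (bottomM M (TSum t s))"
  shows "S = {bottomM M (TSum t s)}"
proof -
  have "\<forall>z\<in>S. z = bottomM M (TSum t s)"
  proof
    fix z assume z: "z \<in> S"
    then have "z \<in> D (TSum t s)" using dir unfolding directed_in_def by auto
    moreover have "R (TSum t s) z (bottomM M (TSum t s))" using lub z unfolding is_lub_def by auto
    ultimately show "z = bottomM M (TSum t s)" using antisym[OF c] bot[OF c] by blast
  qed
  moreover have "S \<noteq> {}" using dir unfolding directed_in_def by auto
  ultimately show ?thesis by auto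
qed

lemma sum_lub_inj1:
  assumes c: "closed_ty (TSum t s)" and dir: "directed_in (D (TSum t s)) (R (TSum t s)) S"
    and x: "x \<in> D t" and lub: "is_lub (D (TSum t s)) (R (TSum t s)) S (m_inj1 M (TSum t s) x)"
  shows "directed_in (D t) (R t) {y \<in> D t. m_inj1 M (TSum t s) y \<in> S}"
    "is_lub (D t) (R t) {y \<in> D t. m_inj1 M (TSum t s) y \<in> S} x"
    "S \<subseteq> insert (bottomM M (TSum t s)) (m_inj1 M (TSum t s) ` {y \<in> D t. m_inj1 M (TSum t s) y \<in> S})"
proof -
  let ?T = "TSum t s" and ?i = "m_inj1 M (TSum t s)" and ?b = "bottomM M (TSum t s)"
  let ?S = "{y \<in> D t. ?i y \<in> S}"
  have SD: "S \<subseteq> D ?T" using dir unfolding directed_in_def by auto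
  have ub: "\<forall>z\<in>S. R ?T z (?i x)" using lub unfolding is_lub_def by auto
  show sub: "S \<subseteq> insert ?b (?i ` ?S)"
  proof
    fix z assume z: "z \<in> S"
    then have zD: "z \<in> D ?T" using SD by auto
    show "z \<in> insert ?b (?i ` ?S)"
      using sum_cases[OF c zD]
    proof cases
      case 1 then show ?thesis by simp
    next
      case (2 y) then show ?thesis using z by auto
    next
      case (3 y) then show ?thesis using z ub inj21_nle[OF c x] by auto
    qed
  qed
  have ne: "?S \<noteq> {}"
  proof
    assume e: "?S = {}"
    have "\<forall>z\<in>S. R ?T z ?b"
    proof
      fix z assume "z \<in> S" then have "z = ?b" using sub e by auto
      then show "R ?T z ?b" using refl[OF c] bot[OF c] by simp
    qed
    then have "R ?T (?i x) ?b" using lub bot[OF c] unfolding is_lub_def by blast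
    then show False using inj1_nle_bot[OF c x] by simp
  qed
  show "directed_in (D t) (R t) ?S" unfolding directed_in_def
  proof (intro conjI ballI)
    show "?S \<subseteq> D t" by auto
    show "?S \<noteq> {}" by (rule ne)
    fix y1 y2 assume y: "y1 \<in> ?S" "y2 \<in> ?S"
    then obtain z where z: "z \<in> S" "R ?T (?i y1) z" "R ?T (?i y2) z" using dir unfolding directed_in_def by blast
    then have zD: "z \<in> D ?T" using SD by auto
    obtain z' where z': "z' \<in> D t" "z = ?i z'" "R t y1 z'" using above_inj1[OF c _ zD z(2)] y by auto
    have "R t y2 z'" using z(3) z' inj1_le[OF c] y by auto
    then show "\<exists>z\<in>?S. R t y1 z \<and> R t y2 z" using z z' by auto
  qed
  show "is_lub (D t) (R t) ?S x" unfolding is_lub_def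
  proof (intro conjI ballI impI)
    show "x \<in> D t" by (rule x)
    show "R t y x" if "y \<in> ?S" for y using that ub inj1_le[OF c _ x] by auto
    fix z assume z: "z \<in> D t" "\<forall>y\<in>?S. R t y z"
    have "\<forall>w\<in>S. R ?T w (?i z)"
    proof
      fix w assume w: "w \<in> S"
      then consider "w = ?b" | y where "y \<in> ?S" "w = ?i y" using sub by auto
      then show "R ?T w (?i z)"
      proof cases
        case 1 then show ?thesis using bot_le[OF c inj1_dom[OF c z(1)]] by simp
      next
        case (2 y) then show ?thesis using z inj1_le[OF c _ z(1)] by auto
      qed
    qed
    then have "R ?T (?i x) (?i z)" using lub inj1_dom[OF c z(1)] unfolding is_lub_def by blast
    then show "R t x z" using inj1_le[OF c x z(1)] by simp
  qed
qed

lemma sum_lub_inj2: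
  assumes c: "closed_ty (TSum t s)" and dir: "directed_in (D (TSum t s)) (R (TSum t s)) S"
    and x: "x \<in> D s" and lub: "is_lub (D (TSum t s)) (R (TSum t s)) S (m_inj2 M (TSum t s) x)"
  shows "directed_in (D s) (R s) {y \<in> D s. m_inj2 M (TSum t s) y \<in> S}"
    "is_lub (D s) (R s) {y \<in> D s. m_inj2 M (TSum t s) y \<in> S} x"
    "S \<subseteq> insert (bottomM M (TSum t s)) (m_inj2 M (TSum t s) ` {y \<in> D s. m_inj2 M (TSum t s) y \<in> S})"
proof -
  let ?T = "TSum t s" and ?i = "m_inj2 M (TSum t s)" and ?b = "bottomM M (TSum t s)"
  let ?S = "{y \<in> D s. ?i y \<in> S}"
  have SD: "S \<subseteq> D ?T" using dir unfolding directed_in_def by auto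
  have ub: "\<forall>z\<in>S. R ?T z (?i x)" using lub unfolding is_lub_def by auto
  show sub: "S \<subseteq> insert ?b (?i ` ?S)"
  proof
    fix z assume z: "z \<in> S"
    then have zD: "z \<in> D ?T" using SD by auto
    show "z \<in> insert ?b (?i ` ?S)"
      using sum_cases[OF c zD]
    proof cases
      case 1 then show ?thesis by simp
    next
      case (2 y) then show ?thesis using z ub inj12_nle[OF c _ x] by auto
    next
      case (3 y) then show ?thesis using z by auto
    qed
  qed
  have ne: "?S \<noteq> {}"
  proof
    assume e: "?S = {}"
    have "\<forall>z\<in>S. R ?T z ?b"
    proof
      fix z assume "z \<in> S" then have "z = ?b" using sub e by auto
      then show "R ?T z ?b" using refl[OF c] bot[OF c] by simp
    qed
    then have "R ?T (?i x) ?b" using lub bot[OF c] unfolding is_lub_def by blast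
    then show False using inj2_nle_bot[OF c x] by simp
  qed
  show "directed_in (D s) (R s) ?S" unfolding directed_in_def
  proof (intro conjI ballI)
    show "?S \<subseteq> D s" by auto
    show "?S \<noteq> {}" by (rule ne)
    fix y1 y2 assume y: "y1 \<in> ?S" "y2 \<in> ?S"
    then obtain z where z: "z \<in> S" "R ?T (?i y1) z" "R ?T (?i y2) z" using dir unfolding directed_in_def by blast
    then have zD: "z \<in> D ?T" using SD by auto
    obtain z' where z': "z' \<in> D s" "z = ?i z'" "R s y1 z'" using above_inj2[OF c _ zD z(2)] y by auto
    have "R s y2 z'" using z(3) z' inj2_le[OF c] y by auto
    then show "\<exists>z\<in>?S. R s y1 z \<and> R s y2 z" using z z' by auto
  qed
  show "is_lub (D s) (R s) ?S x" unfolding is_lub_def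
  proof (intro conjI ballI impI)
    show "x \<in> D s" by (rule x)
    show "R s y x" if "y \<in> ?S" for y using that ub inj2_le[OF c _ x] by auto
    fix z assume z: "z \<in> D s" "\<forall>y\<in>?S. R s y z"
    have "\<forall>w\<in>S. R ?T w (?i z)"
    proof
      fix w assume w: "w \<in> S"
      then consider "w = ?b" | y where "y \<in> ?S" "w = ?i y" using sub by auto
      then show "R ?T w (?i z)"
      proof cases
        case 1 then show ?thesis using bot_le[OF c inj2_dom[OF c z(1)]] by simp
      next
        case (2 y) then show ?thesis using z inj2_le[OF c _ z(1)] by auto
      qed
    qed
    then have "R ?T (?i x) (?i z)" using lub inj2_dom[OF c z(1)] unfolding is_lub_def by blast
    then show "R s x z" using inj2_le[OF c x z(1)] by simp
  qed
qed


subsection \<open>Recursive types\<close>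

lemma mu_ax:
  assumes "closed_ty (TMu a t)"
  shows "bij_betw (m_unfold M (TMu a t)) (D (TMu a t)) (D (subst t a (TMu a t)))"
    "\<forall>x\<in>D (TMu a t). m_fold M (TMu a t) (m_unfold M (TMu a t) x) = x"
    "\<forall>y\<in>D (subst t a (TMu a t)). m_unfold M (TMu a t) (m_fold M (TMu a t) y) = y"
    "\<forall>x\<in>D (TMu a t). \<forall>y\<in>D (TMu a t). R (TMu a t) x y \<longleftrightarrow>
        R (subst t a (TMu a t)) (m_unfold M (TMu a t) x) (m_unfold M (TMu a t) y)"
    "\<forall>x\<in>D (TMu a t). act M (\<lambda>_. (TUnit, id)) (TMu a t) x = x"
  apply (insert pm_mu[THEN spec[of _ a], THEN spec[of _ t], THEN mp, OF assms])
  apply (elim conjE; assumption)+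
  done

lemma unfold_dom: "closed_ty (TMu a t) \<Longrightarrow> x \<in> D (TMu a t) \<Longrightarrow> m_unfold M (TMu a t) x \<in> D (subst t a (TMu a t))"
  using mu_ax(1)[of a t] unfolding bij_betw_def by blast

lemma fold_dom:
  assumes c: "closed_ty (TMu a t)" and y: "y \<in> D (subst t a (TMu a t))"
  shows "m_fold M (TMu a t) y \<in> D (TMu a t)"
proof -
  obtain x where "x \<in> D (TMu a t)" "y = m_unfold M (TMu a t) x" using mu_ax(1)[OF c] y unfolding bij_betw_def by blast
  then show ?thesis using mu_ax(2)[OF c] by simp
qed

lemma fold_unfold: "closed_ty (TMu a t) \<Longrightarrow> x \<in> D (TMu a t) \<Longrightarrow> m_fold M (TMu a t) (m_unfold M (TMu a t) x) = x"
  using mu_ax(2)[of a t] by blast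
lemma unfold_fold: "closed_ty (TMu a t) \<Longrightarrow> y \<in> D (subst t a (TMu a t)) \<Longrightarrow> m_unfold M (TMu a t) (m_fold M (TMu a t) y) = y"
  using mu_ax(3)[of a t] by blast
lemma le_unfold: "closed_ty (TMu a t) \<Longrightarrow> x \<in> D (TMu a t) \<Longrightarrow> y \<in> D (TMu a t) \<Longrightarrow>
   R (TMu a t) x y \<longleftrightarrow> R (subst t a (TMu a t)) (m_unfold M (TMu a t) x) (m_unfold M (TMu a t) y)"
  using mu_ax(4)[of a t] by blast
lemma le_fold:
  assumes c: "closed_ty (TMu a t)" and x: "x \<in> D (subst t a (TMu a t))" and y: "y \<in> D (subst t a (TMu a t))"
  shows "R (TMu a t) (m_fold M (TMu a t) x) (m_fold M (TMu a t) y) \<longleftrightarrow> R (subst t a (TMu a t)) x y"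
  using le_unfold[OF c fold_dom[OF c x] fold_dom[OF c y]] unfold_fold[OF c x] unfold_fold[OF c y] by simp
lemma minvar: "closed_ty (TMu a t) \<Longrightarrow> x \<in> D (TMu a t) \<Longrightarrow> act M (\<lambda>_. (TUnit, id)) (TMu a t) x = x"
  using mu_ax(5)[of a t] by blast

lemma unfold_cont:
  assumes c: "closed_ty (TMu a t)"
  shows "scott_cont (D (TMu a t)) (R (TMu a t)) (D (subst t a (TMu a t))) (R (subst t a (TMu a t))) (m_unfold M (TMu a t))"
  by (rule iso_cont[where g="m_fold M (TMu a t)"]) (use unfold_dom[OF c] fold_dom[OF c] unfold_fold[OF c] le_unfold[OF c] in auto)

lemma fold_cont:
  assumes c: "closed_ty (TMu a t)"
  shows "scott_cont (D (subst t a (TMu a t))) (R (subst t a (TMu a t))) (D (TMu a t)) (R (TMu a t)) (m_fold M (TMu a t))"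
  by (rule iso_cont[where g="m_unfold M (TMu a t)"]) (use unfold_dom[OF c] fold_dom[OF c] fold_unfold[OF c] le_fold[OF c] in auto)

end

context pmod
begin

lemma compact_top: "compact_el (D TUnit) (R TUnit) (m_top M)"
  unfolding compact_el_def
proof (intro conjI allI impI)
  show "m_top M \<in> D TUnit" using unit(1) by simp
  fix S x assume a: "directed_in (D TUnit) (R TUnit) S \<and> is_lub (D TUnit) (R TUnit) S x \<and> R TUnit (m_top M) x"
  have SD: "S \<subseteq> D TUnit" using a unfolding directed_in_def by auto
  have xD: "x \<in> D TUnit" using a unfolding is_lub_def by auto
  have xt: "x = m_top M" using xD a unit by auto
  show "\<exists>e\<in>S. R TUnit (m_top M) e"
  proof (rule ccontr)
    assume "\<not> (\<exists>e\<in>S. R TUnit (m_top M) e)"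
    then have "\<forall>e\<in>S. e = bottomM M TUnit" using SD unit(1) refl[OF closed_simps(1), of "m_top M"] by auto
    then have "\<forall>e\<in>S. R TUnit e (bottomM M TUnit)" using refl[OF closed_simps(1) bot_dom[OF closed_simps(1)]] by auto
    then have "R TUnit x (bottomM M TUnit)" using a bot_dom[OF closed_simps(1)] unfolding is_lub_def by blast
    then show False using xt unit(3) by simp
  qed
qed

lemma upset_top: "upset M TUnit (m_top M) = {m_top M}"
  unfolding upset_def using unit refl[OF closed_simps(1), of "m_top M"] by auto

lemma upset_pair:
  assumes c: "closed_ty (TProd t s)" and c1: "c1 \<in> D t" and c2: "c2 \<in> D s"
  shows "upset M (TProd t s) (pairM M (TProd t s) c1 c2) =
    {x \<in> D (TProd t s). m_pi1 M (TProd t s) x \<in> upset M t c1 \<and> m_pi2 M (TProd t s) x \<in> upset M s c2}"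
proof -
  have p: "pairM M (TProd t s) c1 c2 \<in> D (TProd t s)" "m_pi1 M (TProd t s) (pairM M (TProd t s) c1 c2) = c1"
     "m_pi2 M (TProd t s) (pairM M (TProd t s) c1 c2) = c2" using pair[OF c c1 c2] by auto
  show ?thesis unfolding upset_def using le_prod[OF c p(1)] p pi_dom[OF c] by auto
qed

lemma compact_pair:
  assumes c: "closed_ty (TProd t s)" and c1: "compact_el (D t) (R t) c1" and c2: "compact_el (D s) (R s) c2"
  shows "compact_el (D (TProd t s)) (R (TProd t s)) (pairM M (TProd t s) c1 c2)"
proof -
  let ?T = "TProd t s" and ?p1 = "m_pi1 M (TProd t s)" and ?p2 = "m_pi2 M (TProd t s)"
  have cs: "closed_ty t" "closed_ty s" using c by auto
  have c1D: "c1 \<in> D t" and c2D: "c2 \<in> D s" using c1 c2 unfolding compact_el_def by auto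
  have p: "pairM M ?T c1 c2 \<in> D ?T" "?p1 (pairM M ?T c1 c2) = c1" "?p2 (pairM M ?T c1 c2) = c2"
    using pair[OF c c1D c2D] by auto
  show ?thesis unfolding compact_el_def
  proof (intro conjI allI impI)
    show "pairM M ?T c1 c2 \<in> D ?T" by (rule p(1))
    fix S x assume a: "directed_in (D ?T) (R ?T) S \<and> is_lub (D ?T) (R ?T) S x \<and> R ?T (pairM M ?T c1 c2) x"
    have SD: "S \<subseteq> D ?T" using a unfolding directed_in_def by auto
    have xD: "x \<in> D ?T" using a unfolding is_lub_def by auto
    have le1: "R t c1 (?p1 x)" and le2: "R s c2 (?p2 x)" using a le_prod[OF c p(1) xD] p by auto
    have d1: "directed_in (D t) (R t) (?p1 ` S)"
      by (rule directed_image) (use a pi_dom[OF c] le_prod[OF c] in auto)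
    have d2: "directed_in (D s) (R s) (?p2 ` S)"
      by (rule directed_image) (use a pi_dom[OF c] le_prod[OF c] in auto)
    obtain y1 where y1: "y1 \<in> S" "R t c1 (?p1 y1)"
      using c1 d1 prod_lub(1)[OF c] a le1 unfolding compact_el_def by blast
    obtain y2 where y2: "y2 \<in> S" "R s c2 (?p2 y2)"
      using c2 d2 prod_lub(2)[OF c] a le2 unfolding compact_el_def by blast
    obtain z where z: "z \<in> S" "R ?T y1 z" "R ?T y2 z" using a y1 y2 unfolding directed_in_def by blast
    have zD: "z \<in> D ?T" "y1 \<in> D ?T" "y2 \<in> D ?T" using z y1 y2 SD by auto
    have "R t (?p1 y1) (?p1 z)" using z(2) le_prod[OF c zD(2) zD(1)] by simp
    then have "R t c1 (?p1 z)" using trans[OF cs(1) c1D pi_dom(1)[OF c zD(2)] pi_dom(1)[OF c zD(1)]] y1 by simp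
    moreover have "R s (?p2 y2) (?p2 z)" using z(3) le_prod[OF c zD(3) zD(1)] by simp
    then have "R s c2 (?p2 z)" using trans[OF cs(2) c2D pi_dom(2)[OF c zD(3)] pi_dom(2)[OF c zD(1)]] y2 by simp
    ultimately have "R ?T (pairM M ?T c1 c2) z" using le_prod[OF c p(1) zD(1)] p by simp
    then show "\<exists>e\<in>S. R ?T (pairM M ?T c1 c2) e" using z by auto
  qed
qed

lemma upset_inj1:
  assumes c: "closed_ty (TSum t s)" and c1: "c1 \<in> D t"
  shows "upset M (TSum t s) (m_inj1 M (TSum t s) c1) = m_inj1 M (TSum t s) ` upset M t c1"
proof (intro set_eqI iffI)
  fix x assume "x \<in> upset M (TSum t s) (m_inj1 M (TSum t s) c1)"
  then have "x \<in> D (TSum t s)" "R (TSum t s) (m_inj1 M (TSum t s) c1) x" unfolding upset_def by auto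
  then show "x \<in> m_inj1 M (TSum t s) ` upset M t c1" using above_inj1[OF c c1] unfolding upset_def by blast
next
  fix x assume "x \<in> m_inj1 M (TSum t s) ` upset M t c1"
  then obtain y where "y \<in> D t" "R t c1 y" "x = m_inj1 M (TSum t s) y" unfolding upset_def by auto
  then show "x \<in> upset M (TSum t s) (m_inj1 M (TSum t s) c1)"
    unfolding upset_def using inj1_le[OF c c1] inj1_dom[OF c] by auto
qed

lemma upset_inj2:
  assumes c: "closed_ty (TSum t s)" and c1: "c1 \<in> D s"
  shows "upset M (TSum t s) (m_inj2 M (TSum t s) c1) = m_inj2 M (TSum t s) ` upset M s c1"
proof (intro set_eqI iffI)
  fix x assume "x \<in> upset M (TSum t s) (m_inj2 M (TSum t s) c1)"
  then have "x \<in> D (TSum t s)" "R (TSum t s) (m_inj2 M (TSum t s) c1) x" unfolding upset_def by auto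
  then show "x \<in> m_inj2 M (TSum t s) ` upset M s c1" using above_inj2[OF c c1] unfolding upset_def by blast
next
  fix x assume "x \<in> m_inj2 M (TSum t s) ` upset M s c1"
  then obtain y where "y \<in> D s" "R s c1 y" "x = m_inj2 M (TSum t s) y" unfolding upset_def by auto
  then show "x \<in> upset M (TSum t s) (m_inj2 M (TSum t s) c1)"
    unfolding upset_def using inj2_le[OF c c1] inj2_dom[OF c] by auto
qed

lemma compact_inj1:
  assumes c: "closed_ty (TSum t s)" and c1: "compact_el (D t) (R t) c1"
  shows "compact_el (D (TSum t s)) (R (TSum t s)) (m_inj1 M (TSum t s) c1)"
  unfolding compact_el_def
proof (intro conjI allI impI)
  have c1D: "c1 \<in> D t" using c1 unfolding compact_el_def by auto
  then show "m_inj1 M (TSum t s) c1 \<in> D (TSum t s)" by (rule inj1_dom[OF c])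
  fix S x assume a: "directed_in (D (TSum t s)) (R (TSum t s)) S \<and> is_lub (D (TSum t s)) (R (TSum t s)) S x
     \<and> R (TSum t s) (m_inj1 M (TSum t s) c1) x"
  have xD: "x \<in> D (TSum t s)" using a unfolding is_lub_def by auto
  obtain x' where x': "x' \<in> D t" "x = m_inj1 M (TSum t s) x'" "R t c1 x'" using above_inj1[OF c c1D xD] a by auto
  have "directed_in (D t) (R t) {y \<in> D t. m_inj1 M (TSum t s) y \<in> S}"
    "is_lub (D t) (R t) {y \<in> D t. m_inj1 M (TSum t s) y \<in> S} x'"
    using sum_lub_inj1[OF c _ x'(1)] a x'(2) by auto
  then obtain y where "y \<in> D t" "m_inj1 M (TSum t s) y \<in> S" "R t c1 y" using c1 x'(3) unfolding compact_el_def by blast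
  then show "\<exists>e\<in>S. R (TSum t s) (m_inj1 M (TSum t s) c1) e" using inj1_le[OF c c1D] by auto
qed

lemma compact_inj2:
  assumes c: "closed_ty (TSum t s)" and c1: "compact_el (D s) (R s) c1"
  shows "compact_el (D (TSum t s)) (R (TSum t s)) (m_inj2 M (TSum t s) c1)"
  unfolding compact_el_def
proof (intro conjI allI impI)
  have c1D: "c1 \<in> D s" using c1 unfolding compact_el_def by auto
  then show "m_inj2 M (TSum t s) c1 \<in> D (TSum t s)" by (rule inj2_dom[OF c])
  fix S x assume a: "directed_in (D (TSum t s)) (R (TSum t s)) S \<and> is_lub (D (TSum t s)) (R (TSum t s)) S x
     \<and> R (TSum t s) (m_inj2 M (TSum t s) c1) x"
  have xD: "x \<in> D (TSum t s)" using a unfolding is_lub_def by auto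
  obtain x' where x': "x' \<in> D s" "x = m_inj2 M (TSum t s) x'" "R s c1 x'" using above_inj2[OF c c1D xD] a by auto
  have "directed_in (D s) (R s) {y \<in> D s. m_inj2 M (TSum t s) y \<in> S}"
    "is_lub (D s) (R s) {y \<in> D s. m_inj2 M (TSum t s) y \<in> S} x'"
    using sum_lub_inj2[OF c _ x'(1)] a x'(2) by auto
  then obtain y where "y \<in> D s" "m_inj2 M (TSum t s) y \<in> S" "R s c1 y" using c1 x'(3) unfolding compact_el_def by blast
  then show "\<exists>e\<in>S. R (TSum t s) (m_inj2 M (TSum t s) c1) e" using inj2_le[OF c c1D] by auto
qed

lemma upset_fold:
  assumes c: "closed_ty (TMu a t)" and c1: "c1 \<in> D (subst t a (TMu a t))"
  shows "upset M (TMu a t) (m_fold M (TMu a t) c1) =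
     {x \<in> D (TMu a t). m_unfold M (TMu a t) x \<in> upset M (subst t a (TMu a t)) c1}"
  unfolding upset_def using le_unfold[OF c fold_dom[OF c c1]] unfold_fold[OF c c1] unfold_dom[OF c] by auto

lemma compact_fold:
  assumes c: "closed_ty (TMu a t)" and c1: "compact_el (D (subst t a (TMu a t))) (R (subst t a (TMu a t))) c1"
  shows "compact_el (D (TMu a t)) (R (TMu a t)) (m_fold M (TMu a t) c1)"
  unfolding compact_el_def
proof (intro conjI allI impI)
  let ?T = "TMu a t" and ?U = "subst t a (TMu a t)"
  have c1D: "c1 \<in> D ?U" using c1 unfolding compact_el_def by auto
  then show fD: "m_fold M ?T c1 \<in> D ?T" by (rule fold_dom[OF c])
  fix S x assume as: "directed_in (D ?T) (R ?T) S \<and> is_lub (D ?T) (R ?T) S x \<and> R ?T (m_fold M ?T c1) x"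
  have xD: "x \<in> D ?T" using as unfolding is_lub_def by auto
  have SD: "S \<subseteq> D ?T" using as unfolding directed_in_def by auto
  have cu: "scott_cont (D ?T) (R ?T) (D ?U) (R ?U) (m_unfold M ?T)" by (rule unfold_cont[OF c])
  have d: "directed_in (D ?U) (R ?U) (m_unfold M ?T ` S)"
    using directed_image[of "D ?T" "R ?T" S "m_unfold M ?T" "D ?U" "R ?U"] as cu unfolding scott_cont_def by blast
  have l: "is_lub (D ?U) (R ?U) (m_unfold M ?T ` S) (m_unfold M ?T x)" using cu as unfolding scott_cont_def by blast
  have "R ?U c1 (m_unfold M ?T x)" using as le_unfold[OF c fD xD] unfold_fold[OF c c1D] by simp
  then obtain y where y: "y \<in> S" "R ?U c1 (m_unfold M ?T y)" using c1 d l unfolding compact_el_def by blast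
  then have "R ?T (m_fold M ?T c1) y" using le_unfold[OF c fD] SD unfold_fold[OF c c1D] by auto
  then show "\<exists>e\<in>S. R ?T (m_fold M ?T c1) e" using y by auto
qed

end

definition wt :: "form \<Rightarrow> nat" where "wt \<delta> = 2 * size \<delta> + 1"
definition mu :: "form list \<Rightarrow> nat" where "mu \<Delta> = sum_list (map wt \<Delta>)"

lemma mu_concat_less:
  assumes "\<forall>\<delta>. mu (f \<delta>) < wt \<delta>" "\<Delta> \<noteq> []"
  shows "mu (concat (map f \<Delta>)) < mu \<Delta>"
  using assms(2)
proof (induction \<Delta>)
  case Nil then show ?case by simp
next
  case (Cons a \<Delta>)
  show ?case
  proof (cases "\<Delta> = []")
    case True then show ?thesis using assms(1)[rule_format, of a] by (simp add: mu_def)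
  next
    case False then show ?thesis using Cons.IH assms(1)[rule_format, of a] by (simp add: mu_def)
  qed
qed

lemma mu_mem: "\<delta> \<in> set \<Delta> \<Longrightarrow> wt \<delta> \<le> mu \<Delta>"
  unfolding mu_def by (simp add: member_le_sum_list)

lemma mu_remove1: "\<delta> \<in> set \<Delta> \<Longrightarrow> mu \<Delta> = wt \<delta> + mu (remove1 \<delta> \<Delta>)"
  unfolding mu_def by (simp add: sum_list_map_remove1)

lemma mu_single: "mu [\<delta>] = wt \<delta>" unfolding mu_def by simp

fun unPi1 :: "form \<Rightarrow> form list" where "unPi1 (FPi1 p) = [p]" | "unPi1 _ = []"
fun unPi2 :: "form \<Rightarrow> form list" where "unPi2 (FPi2 p) = [p]" | "unPi2 _ = []"
fun unInj1 :: "form \<Rightarrow> form list" where "unInj1 (FInj1 p) = [p]" | "unInj1 _ = []"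
fun unInj2 :: "form \<Rightarrow> form list" where "unInj2 (FInj2 p) = [p]" | "unInj2 _ = []"
fun unFold :: "form \<Rightarrow> form list" where "unFold (FFold p) = [p]" | "unFold _ = []"
fun unImpIf :: "(form \<Rightarrow> bool) \<Rightarrow> form \<Rightarrow> form list" where
  "unImpIf P (FImp q p) = (if P q then [p] else [])" | "unImpIf P _ = []"

lemma mu_un:
  "mu (unPi1 \<delta>) < wt \<delta>" "mu (unPi2 \<delta>) < wt \<delta>" "mu (unInj1 \<delta>) < wt \<delta>" "mu (unInj2 \<delta>) < wt \<delta>"
  "mu (unFold \<delta>) < wt \<delta>" "mu (unImpIf P \<delta>) < wt \<delta>"
  by (cases \<delta>; simp add: mu_def wt_def)+

lemma set_un:
  "p \<in> set (concat (map unPi1 \<Delta>)) \<longleftrightarrow> FPi1 p \<in> set \<Delta>"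
  "p \<in> set (concat (map unPi2 \<Delta>)) \<longleftrightarrow> FPi2 p \<in> set \<Delta>"
  "p \<in> set (concat (map unInj1 \<Delta>)) \<longleftrightarrow> FInj1 p \<in> set \<Delta>"
  "p \<in> set (concat (map unInj2 \<Delta>)) \<longleftrightarrow> FInj2 p \<in> set \<Delta>"
  "p \<in> set (concat (map unFold \<Delta>)) \<longleftrightarrow> FFold p \<in> set \<Delta>"
  "p \<in> set (concat (map (unImpIf P) \<Delta>)) \<longleftrightarrow> (\<exists>q. FImp q p \<in> set \<Delta> \<and> P q)"
proof -
  have a: "p \<in> set (unPi1 \<delta>) \<longleftrightarrow> \<delta> = FPi1 p" "p \<in> set (unPi2 \<delta>) \<longleftrightarrow> \<delta> = FPi2 p"
    "p \<in> set (unInj1 \<delta>) \<longleftrightarrow> \<delta> = FInj1 p" "p \<in> set (unInj2 \<delta>) \<longleftrightarrow> \<delta> = FInj2 p"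
    "p \<in> set (unFold \<delta>) \<longleftrightarrow> \<delta> = FFold p" "p \<in> set (unImpIf P \<delta>) \<longleftrightarrow> (\<exists>q. \<delta> = FImp q p \<and> P q)" for \<delta>
    by (cases \<delta>; auto)+
  show "p \<in> set (concat (map unPi1 \<Delta>)) \<longleftrightarrow> FPi1 p \<in> set \<Delta>"
    "p \<in> set (concat (map unPi2 \<Delta>)) \<longleftrightarrow> FPi2 p \<in> set \<Delta>"
    "p \<in> set (concat (map unInj1 \<Delta>)) \<longleftrightarrow> FInj1 p \<in> set \<Delta>"
    "p \<in> set (concat (map unInj2 \<Delta>)) \<longleftrightarrow> FInj2 p \<in> set \<Delta>"
    "p \<in> set (concat (map unFold \<Delta>)) \<longleftrightarrow> FFold p \<in> set \<Delta>"
    "p \<in> set (concat (map (unImpIf P) \<Delta>)) \<longleftrightarrow> (\<exists>q. FImp q p \<in> set \<Delta> \<and> P q)"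
    using a by auto
qed

context pmod
begin

definition okset where "okset T X \<longleftrightarrow> X = {} \<or> (\<exists>d. compact_el (D T) (R T) d \<and> X = upset M T d)"
definition semL where "semL T \<Delta> = D T \<inter> (\<Inter>\<delta>\<in>set \<Delta>. sem M T \<delta>)"
definition IHP where "IHP n \<longleftrightarrow> (\<forall>\<Delta>' T'. mu \<Delta>' < n \<longrightarrow> closed_ty T' \<longrightarrow> (\<forall>\<delta>\<in>set \<Delta>'. wf_form T' \<delta>) \<longrightarrow> okset T' (semL T' \<Delta>'))"

lemma IHPD: "IHP n \<Longrightarrow> mu \<Delta>' < n \<Longrightarrow> closed_ty T' \<Longrightarrow> (\<forall>\<delta>\<in>set \<Delta>'. wf_form T' \<delta>) \<Longrightarrow> okset T' (semL T' \<Delta>')"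
  unfolding IHP_def by blast

lemma sem_sub: "closed_ty T \<Longrightarrow> wf_form T \<delta> \<Longrightarrow> sem M T \<delta> \<subseteq> D T"
proof (induction \<delta> arbitrary: T)
  case FUnit then show ?case using unit(1) by simp
next
  case (FInj1 p)
  then obtain t1 t2 where T: "T = TSum t1 t2" by (cases T) auto
  then have "sem M t1 p \<subseteq> D t1" using FInj1 by auto
  then show ?case using T inj1_dom[of t1 t2] FInj1.prems by auto
next
  case (FInj2 p)
  then obtain t1 t2 where T: "T = TSum t1 t2" by (cases T) auto
  then have "sem M t2 p \<subseteq> D t2" using FInj2 by auto
  then show ?case using T inj2_dom[of t1 t2] FInj2.prems by auto
next
  case (FPi1 p) then show ?case by (cases T) auto
next
  case (FPi2 p) then show ?case by (cases T) auto
next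
  case (FFold p) then show ?case by (cases T) auto
next
  case (FImp q p) then show ?case by (cases T) auto
qed auto

lemma semL_single: "closed_ty T \<Longrightarrow> wf_form T \<delta> \<Longrightarrow> semL T [\<delta>] = sem M T \<delta>"
  unfolding semL_def using sem_sub by auto

lemma okset_up: "okset T X \<Longrightarrow> closed_ty T \<Longrightarrow> x \<in> X \<Longrightarrow> y \<in> D T \<Longrightarrow> R T x y \<Longrightarrow> y \<in> X"
  unfolding okset_def upset_def
proof (elim disjE exE conjE)
  fix d assume "closed_ty T" "compact_el (D T) (R T) d" "X = {x \<in> D T. R T d x}" "x \<in> X" "y \<in> D T" "R T x y"
  then show "y \<in> X" using trans[of T d x y] unfolding compact_el_def by auto
qed auto

lemma compact_dom: "compact_el A r d \<Longrightarrow> d \<in> A"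
  unfolding compact_el_def by auto

lemma upset_self: "closed_ty T \<Longrightarrow> c \<in> D T \<Longrightarrow> c \<in> upset M T c"
  unfolding upset_def using refl by auto

lemma upset_sub: "closed_ty T \<Longrightarrow> c \<in> D T \<Longrightarrow> upset M T c \<subseteq> upset M T c' \<Longrightarrow> R T c' c"
  using upset_self unfolding upset_def by blast

lemma upset_eq: "closed_ty T \<Longrightarrow> c \<in> D T \<Longrightarrow> c' \<in> D T \<Longrightarrow> upset M T c = upset M T c' \<Longrightarrow> c = c'"
  using upset_sub antisym by (metis order_refl)

lemma upset_bot: "closed_ty T \<Longrightarrow> upset M T (bottomM M T) = D T"
  unfolding upset_def using bot by auto

end

context pmod
begin

lemma P1_fun:
  assumes c: "closed_ty (TFun s t)" and IH: "IHP (mu \<Delta>)" and ne: "\<Delta> \<noteq> []"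
    and forms: "\<forall>\<delta>\<in>set \<Delta>. \<exists>q p. \<delta> = FImp q p \<and> wf_form s q \<and> wf_form t p"
  shows "okset (TFun s t) (semL (TFun s t) \<Delta>)"
proof -
  let ?T = "TFun s t" and ?ap = "m_app M (TFun s t)"
  have cs: "closed_ty s" "closed_ty t" using c by auto
  define Q where "Q x = concat (map (unImpIf (\<lambda>q. x \<in> sem M s q)) \<Delta>)" for x
  have setQ: "p \<in> set (Q x) \<longleftrightarrow> (\<exists>q. FImp q p \<in> set \<Delta> \<and> x \<in> sem M s q)" for x p
    unfolding Q_def by (rule set_un(6))
  have wfQ: "\<forall>p\<in>set (Q x). wf_form t p" for x
    using forms setQ by fastforce
  have okQ: "okset t (semL t (Q x))" for x
    by (rule IHPD[OF IH _ cs(2) wfQ]) (unfold Q_def, rule mu_concat_less, use mu_un(6) ne in auto)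
  have wfq: "wf_form s q" "wf_form t p" if "FImp q p \<in> set \<Delta>" for q p
    using forms that by fastforce+
  have okq: "okset s (sem M s q)" if "FImp q p \<in> set \<Delta>" for q p
  proof -
    have "wt q < wt (FImp q p)" by (simp add: wt_def)
    also have "\<dots> \<le> mu \<Delta>" using mu_mem[OF that] .
    finally have "okset s (semL s [q])" using IHPD[OF IH _ cs(1)] wfq[OF that] mu_single[of q] by auto
    then show ?thesis using semL_single[OF cs(1) wfq(1)[OF that]] by simp
  qed
  have okp: "okset t (sem M t p)" if "FImp q p \<in> set \<Delta>" for q p
  proof -
    have "wt p < wt (FImp q p)" by (simp add: wt_def)
    also have "\<dots> \<le> mu \<Delta>" using mu_mem[OF that] .
    finally have "okset t (semL t [p])" using IHPD[OF IH _ cs(2)] wfq[OF that] mu_single[of p] by auto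
    then show ?thesis using semL_single[OF cs(2) wfq(2)[OF that]] by simp
  qed
  have semq_sub: "sem M s q \<subseteq> D s" if "FImp q p \<in> set \<Delta>" for q p
    using sem_sub[OF cs(1) wfq(1)[OF that]] .
  have semp_sub: "sem M t p \<subseteq> D t" if "FImp q p \<in> set \<Delta>" for q p
    using sem_sub[OF cs(2) wfq(2)[OF that]] .
  have semT: "sem M ?T (FImp q p) = {f \<in> D ?T. \<forall>x\<in>sem M s q. ?ap f x \<in> sem M t p}" for q p
    by simp
  have char: "f \<in> semL ?T \<Delta> \<longleftrightarrow> f \<in> D ?T \<and> (\<forall>x\<in>D s. ?ap f x \<in> semL t (Q x))" for f
  proof
    assume f: "f \<in> semL ?T \<Delta>"
    then have fD: "f \<in> D ?T" unfolding semL_def by auto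
    have "\<forall>x\<in>D s. ?ap f x \<in> semL t (Q x)"
    proof
      fix x assume x: "x \<in> D s"
      have "\<forall>p\<in>set (Q x). ?ap f x \<in> sem M t p"
      proof
        fix p assume "p \<in> set (Q x)"
        then obtain q where q: "FImp q p \<in> set \<Delta>" "x \<in> sem M s q" using setQ by blast
        then have "f \<in> sem M ?T (FImp q p)" using f unfolding semL_def by auto
        then show "?ap f x \<in> sem M t p" using q semT by auto
      qed
      then show "?ap f x \<in> semL t (Q x)" unfolding semL_def using app_dom[OF c fD x] by auto
    qed
    then show "f \<in> D ?T \<and> (\<forall>x\<in>D s. ?ap f x \<in> semL t (Q x))" using fD by auto
  next
    assume f: "f \<in> D ?T \<and> (\<forall>x\<in>D s. ?ap f x \<in> semL t (Q x))"
    have "\<forall>\<delta>\<in>set \<Delta>. f \<in> sem M ?T \<delta>"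
    proof
      fix \<delta> assume d: "\<delta> \<in> set \<Delta>"
      then obtain q p where qp: "\<delta> = FImp q p" using forms by blast
      have "\<forall>x\<in>sem M s q. ?ap f x \<in> sem M t p"
      proof
        fix x assume x: "x \<in> sem M s q"
        then have "x \<in> D s" using semq_sub d qp by auto
        moreover have "p \<in> set (Q x)" using setQ d qp x by auto
        ultimately show "?ap f x \<in> sem M t p" using f unfolding semL_def by auto
      qed
      then show "f \<in> sem M ?T \<delta>" using qp f by simp
    qed
    then show "f \<in> semL ?T \<Delta>" using f unfolding semL_def by auto
  qed
  show ?thesis
  proof (cases "\<exists>x\<in>D s. semL t (Q x) = {}")
    case True
    then have "semL ?T \<Delta> = {}" using char by blast
    then show ?thesis unfolding okset_def by simp
  next
    case False
    then have ex: "\<exists>c. compact_el (D t) (R t) c \<and> semL t (Q x) = upset M t c" if "x \<in> D s" for x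
      using okQ[of x] that unfolding okset_def by blast
    define g where "g x = (SOME c. compact_el (D t) (R t) c \<and> semL t (Q x) = upset M t c)" for x
    have gp: "compact_el (D t) (R t) (g x) \<and> semL t (Q x) = upset M t (g x)" if "x \<in> D s" for x
      unfolding g_def using someI_ex[OF ex[OF that]] .
    have gD: "g x \<in> D t" if "x \<in> D s" for x using compact_dom[OF conjunct1[OF gp[OF that]]] .
    have semq_up: "y \<in> sem M s q" if "FImp q p \<in> set \<Delta>" "x \<in> sem M s q" "y \<in> D s" "R s x y" for q p x y
      using okset_up[OF okq[OF that(1)] cs(1) that(2-4)] .
    have Qmono: "set (Q x) \<subseteq> set (Q y)" if "x \<in> D s" "y \<in> D s" "R s x y" for x y
    proof
      fix p assume "p \<in> set (Q x)"
      then obtain q where q: "FImp q p \<in> set \<Delta>" "x \<in> sem M s q" using setQ by blast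
      then have "y \<in> sem M s q" using semq_up[OF q that(2,3)] by blast
      then show "p \<in> set (Q y)" using setQ q by blast
    qed
    have gmono: "R t (g x) (g y)" if "x \<in> D s" "y \<in> D s" "R s x y" for x y
    proof -
      have "semL t (Q y) \<subseteq> semL t (Q x)" using Qmono[OF that] unfolding semL_def by auto
      then have "upset M t (g y) \<subseteq> upset M t (g x)" using gp that by simp
      then show ?thesis using upset_sub[OF cs(2) gD[OF that(2)]] by blast
    qed
    have finI: "finite {q. \<exists>p. FImp q p \<in> set \<Delta>}"
    proof -
      have "{q. \<exists>p. FImp q p \<in> set \<Delta>} \<subseteq> (\<lambda>\<delta>. case \<delta> of FImp q p \<Rightarrow> q | _ \<Rightarrow> FTrue) ` set \<Delta>"
        by (auto intro!: image_eqI)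
      then show ?thesis by (rule finite_subset) simp
    qed
    have gcont: "scott_cont (D s) (R s) (D t) (R t) g"
      unfolding scott_cont_def
    proof (intro conjI allI impI ballI)
      show "g x \<in> D t" if "x \<in> D s" for x using gD[OF that] .
      show "R t (g x) (g y)" if "x \<in> D s" "y \<in> D s" "R s x y" for x y using gmono[OF that] .
      fix S x assume a: "directed_in (D s) (R s) S \<and> is_lub (D s) (R s) S x"
      have SD: "S \<subseteq> D s" and xD: "x \<in> D s" using a unfolding directed_in_def is_lub_def by auto
      let ?I = "{q. (\<exists>p. FImp q p \<in> set \<Delta>) \<and> x \<in> sem M s q}"
      have "\<exists>y\<in>S. \<forall>q\<in>?I. y \<in> sem M s q"
      proof (rule directed_finite_choice[OF po[OF cs(1)]])
        show "directed_in (D s) (R s) S" using a by auto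
        show "finite ?I" by (rule finite_subset[OF _ finI]) auto
        show "\<forall>q\<in>?I. \<exists>y\<in>S. y \<in> sem M s q"
        proof
          fix q assume "q \<in> ?I"
          then obtain p where qp: "FImp q p \<in> set \<Delta>" "x \<in> sem M s q" by auto
          then obtain d where d: "compact_el (D s) (R s) d" "sem M s q = upset M s d"
            using okq[OF qp(1)] unfolding okset_def by auto
          then show "\<exists>y\<in>S. y \<in> sem M s q" using upset_open[OF d(1)] a qp(2) by auto
        qed
        show "\<forall>q\<in>?I. \<forall>y\<in>S. \<forall>y'\<in>S. y \<in> sem M s q \<and> R s y y' \<longrightarrow> y' \<in> sem M s q"
          using semq_up SD by blast
      qed
      then obtain y0 where y0: "y0 \<in> S" "\<forall>q\<in>?I. y0 \<in> sem M s q" by blast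
      have y0D: "y0 \<in> D s" using y0 SD by auto
      have y0x: "R s y0 x" using a y0 unfolding is_lub_def by auto
      have "set (Q x) \<subseteq> set (Q y0)" using setQ y0 by blast
      moreover have "set (Q y0) \<subseteq> set (Q x)" by (rule Qmono[OF y0D xD y0x])
      ultimately have "semL t (Q x) = semL t (Q y0)" unfolding semL_def by auto
      then have "upset M t (g x) = upset M t (g y0)" using gp xD y0D by simp
      then have gxy: "g x = g y0" using upset_eq[OF cs(2) gD[OF xD] gD[OF y0D]] by simp
      show "is_lub (D t) (R t) (g ` S) (g x)" unfolding is_lub_def
      proof (intro conjI ballI impI)
        show "g x \<in> D t" using gD[OF xD] .
        show "R t w (g x)" if "w \<in> g ` S" for w
          using that gmono SD xD a unfolding is_lub_def by auto
        show "R t (g x) z" if "z \<in> D t" "\<forall>w\<in>g ` S. R t w z" for z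
          using that y0 gxy by auto
      qed
    qed
    obtain f0 where f0: "f0 \<in> D ?T" "\<forall>x\<in>D s. ?ap f0 x = g x" using lam[OF c gcont] by blast
    have eqU: "semL ?T \<Delta> = upset M ?T f0"
    proof (intro set_eqI)
      fix f
      have "f \<in> semL ?T \<Delta> \<longleftrightarrow> f \<in> D ?T \<and> (\<forall>x\<in>D s. ?ap f x \<in> upset M t (g x))"
        using char gp by simp
      also have "\<dots> \<longleftrightarrow> f \<in> D ?T \<and> (\<forall>x\<in>D s. R t (g x) (?ap f x))"
        unfolding upset_def using app_dom[OF c] by auto
      also have "\<dots> \<longleftrightarrow> f \<in> upset M ?T f0"
        unfolding upset_def using le_fun[OF c f0(1)] f0(2) by auto
      finally show "f \<in> semL ?T \<Delta> \<longleftrightarrow> f \<in> upset M ?T f0" .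
    qed
    have semp_up: "y \<in> sem M t p" if "FImp q p \<in> set \<Delta>" "x \<in> sem M t p" "y \<in> D t" "R t x y" for q p x y
      using okset_up[OF okp[OF that(1)] cs(2) that(2-4)] .
    have cf0: "compact_el (D ?T) (R ?T) f0" unfolding compact_el_def
    proof (intro conjI allI impI)
      show "f0 \<in> D ?T" by (rule f0(1))
      fix F h assume a: "directed_in (D ?T) (R ?T) F \<and> is_lub (D ?T) (R ?T) F h \<and> R ?T f0 h"
      have FD: "F \<subseteq> D ?T" using a unfolding directed_in_def by auto
      have hD: "h \<in> D ?T" using a unfolding is_lub_def by auto
      have "\<exists>f\<in>F. \<forall>\<delta>\<in>set \<Delta>. f \<in> sem M ?T \<delta>"
      proof (rule directed_finite_choice[OF po[OF c]])
        show "directed_in (D ?T) (R ?T) F" using a by auto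
        show "finite (set \<Delta>)" by simp
        show "\<forall>\<delta>\<in>set \<Delta>. \<exists>f\<in>F. f \<in> sem M ?T \<delta>"
        proof
          fix \<delta> assume d: "\<delta> \<in> set \<Delta>"
          then obtain q p where qp: "\<delta> = FImp q p" using forms by blast
          have dq: "FImp q p \<in> set \<Delta>" using d qp by simp
          show "\<exists>f\<in>F. f \<in> sem M ?T \<delta>"
          proof (cases "sem M s q = {}")
            case True
            obtain f where "f \<in> F" using a unfolding directed_in_def by auto
            then show ?thesis using True qp FD by auto
          next
            case False
            then obtain d0 where d0: "compact_el (D s) (R s) d0" "sem M s q = upset M s d0"
              using okq[OF dq] unfolding okset_def by auto
            have d0D: "d0 \<in> D s" using compact_dom[OF d0(1)] .
            have "R t (?ap f0 d0) (?ap h d0)" using a le_fun[OF c f0(1) hD] d0D by auto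
            then have le1: "R t (g d0) (?ap h d0)" using f0 d0D by simp
            have dirF: "directed_in (D t) (R t) ((\<lambda>f. ?ap f d0) ` F)"
            proof (rule directed_image)
              show "directed_in (D ?T) (R ?T) F" using a by auto
              show "\<forall>f\<in>D ?T. ?ap f d0 \<in> D t" using app_dom[OF c _ d0D] by blast
              show "\<forall>f\<in>D ?T. \<forall>f'\<in>D ?T. R ?T f f' \<longrightarrow> R t (?ap f d0) (?ap f' d0)"
                using le_fun[OF c] d0D by blast
            qed
            have lubF: "is_lub (D t) (R t) ((\<lambda>f. ?ap f d0) ` F) (?ap h d0)"
              using fun_lub[OF c _ _ d0D] a by blast
            obtain f where f: "f \<in> F" "R t (g d0) (?ap f d0)"
              using gp[OF d0D] dirF lubF le1 unfolding compact_el_def by blast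
            have fD: "f \<in> D ?T" using f FD by auto
            have "\<forall>x\<in>sem M s q. ?ap f x \<in> sem M t p"
            proof
              fix x assume x: "x \<in> sem M s q"
              then have xD: "x \<in> D s" and dx: "R s d0 x" using d0 unfolding upset_def by auto
              have "d0 \<in> sem M s q" using d0 upset_self[OF cs(1) d0D] by simp
              then have "p \<in> set (Q d0)" using setQ dq by blast
              moreover have "?ap f d0 \<in> semL t (Q d0)"
                using gp[OF d0D] f app_dom[OF c fD d0D] unfolding upset_def by auto
              ultimately have "?ap f d0 \<in> sem M t p" unfolding semL_def by auto
              moreover have "R t (?ap f d0) (?ap f x)" using app_mono[OF c fD d0D xD dx] .
              ultimately show "?ap f x \<in> sem M t p" using semp_up[OF dq] app_dom[OF c fD xD] by blast
            qed
            then show ?thesis using f fD qp by auto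
          qed
        qed
        show "\<forall>\<delta>\<in>set \<Delta>. \<forall>f\<in>F. \<forall>f'\<in>F. f \<in> sem M ?T \<delta> \<and> R ?T f f' \<longrightarrow> f' \<in> sem M ?T \<delta>"
        proof (intro ballI impI)
          fix \<delta> f f' assume d: "\<delta> \<in> set \<Delta>" and ff: "f \<in> F" "f' \<in> F" "f \<in> sem M ?T \<delta> \<and> R ?T f f'"
          then obtain q p where qp: "\<delta> = FImp q p" using forms by blast
          have dq: "FImp q p \<in> set \<Delta>" using d qp by simp
          have fD: "f \<in> D ?T" "f' \<in> D ?T" using ff FD by auto
          have "\<forall>x\<in>sem M s q. ?ap f' x \<in> sem M t p"
          proof
            fix x assume x: "x \<in> sem M s q"
            then have xD: "x \<in> D s" using semq_sub[OF dq] by auto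
            have "?ap f x \<in> sem M t p" using ff qp x by auto
            moreover have "R t (?ap f x) (?ap f' x)" using le_fun[OF c fD] ff xD by auto
            ultimately show "?ap f' x \<in> sem M t p" using semp_up[OF dq] app_dom[OF c fD(2) xD] by blast
          qed
          then show "f' \<in> sem M ?T \<delta>" using qp fD by auto
        qed
      qed
      then obtain f where f: "f \<in> F" "\<forall>\<delta>\<in>set \<Delta>. f \<in> sem M ?T \<delta>" by blast
      then have "f \<in> semL ?T \<Delta>" using FD unfolding semL_def by auto
      then have "R ?T f0 f" using eqU unfolding upset_def by auto
      then show "\<exists>e\<in>F. R ?T f0 e" using f by auto
    qed
    show ?thesis unfolding okset_def using eqU cf0 by blast
  qed
qed

end

context pmod
begin

lemma P1_unit:
  assumes ne: "\<Delta> \<noteq> []" and forms: "\<forall>\<delta>\<in>set \<Delta>. \<delta> = FUnit"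
  shows "okset TUnit (semL TUnit \<Delta>)"
proof -
  have "semL TUnit \<Delta> = {m_top M}" unfolding semL_def using ne forms unit(1)
    by (cases \<Delta>) auto
  then show ?thesis unfolding okset_def using upset_top compact_top by auto
qed

lemma P1_prod:
  assumes c: "closed_ty (TProd t1 t2)" and IH: "IHP (mu \<Delta>)" and ne: "\<Delta> \<noteq> []"
    and forms: "\<forall>\<delta>\<in>set \<Delta>. (\<exists>p. \<delta> = FPi1 p \<and> wf_form t1 p) \<or> (\<exists>p. \<delta> = FPi2 p \<and> wf_form t2 p)"
  shows "okset (TProd t1 t2) (semL (TProd t1 t2) \<Delta>)"
proof -
  let ?T = "TProd t1 t2" and ?p1 = "m_pi1 M (TProd t1 t2)" and ?p2 = "m_pi2 M (TProd t1 t2)"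
  have cs: "closed_ty t1" "closed_ty t2" using c by auto
  define \<Delta>1 where "\<Delta>1 = concat (map unPi1 \<Delta>)"
  define \<Delta>2 where "\<Delta>2 = concat (map unPi2 \<Delta>)"
  have s1: "p \<in> set \<Delta>1 \<longleftrightarrow> FPi1 p \<in> set \<Delta>" for p unfolding \<Delta>1_def by (rule set_un(1))
  have s2: "p \<in> set \<Delta>2 \<longleftrightarrow> FPi2 p \<in> set \<Delta>" for p unfolding \<Delta>2_def by (rule set_un(2))
  have ok1: "okset t1 (semL t1 \<Delta>1)"
  proof (rule IHPD[OF IH _ cs(1)])
    show "mu \<Delta>1 < mu \<Delta>" unfolding \<Delta>1_def by (rule mu_concat_less) (use mu_un(1) ne in auto)
    show "\<forall>p\<in>set \<Delta>1. wf_form t1 p" using s1 forms by fastforce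
  qed
  have ok2: "okset t2 (semL t2 \<Delta>2)"
  proof (rule IHPD[OF IH _ cs(2)])
    show "mu \<Delta>2 < mu \<Delta>" unfolding \<Delta>2_def by (rule mu_concat_less) (use mu_un(2) ne in auto)
    show "\<forall>p\<in>set \<Delta>2. wf_form t2 p" using s2 forms by fastforce
  qed
  have eq: "semL ?T \<Delta> = {x \<in> D ?T. ?p1 x \<in> semL t1 \<Delta>1 \<and> ?p2 x \<in> semL t2 \<Delta>2}"
  proof (intro set_eqI iffI)
    fix x assume x: "x \<in> semL ?T \<Delta>"
    then have xD: "x \<in> D ?T" unfolding semL_def by auto
    have "\<forall>p\<in>set \<Delta>1. ?p1 x \<in> sem M t1 p"
    proof
      fix p assume "p \<in> set \<Delta>1"
      then have "FPi1 p \<in> set \<Delta>" using s1 by blast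
      then have "x \<in> sem M ?T (FPi1 p)" using x unfolding semL_def by blast
      then show "?p1 x \<in> sem M t1 p" by simp
    qed
    moreover have "\<forall>p\<in>set \<Delta>2. ?p2 x \<in> sem M t2 p"
    proof
      fix p assume "p \<in> set \<Delta>2"
      then have "FPi2 p \<in> set \<Delta>" using s2 by blast
      then have "x \<in> sem M ?T (FPi2 p)" using x unfolding semL_def by blast
      then show "?p2 x \<in> sem M t2 p" by simp
    qed
    ultimately show "x \<in> {x \<in> D ?T. ?p1 x \<in> semL t1 \<Delta>1 \<and> ?p2 x \<in> semL t2 \<Delta>2}"
      using xD pi_dom[OF c xD] unfolding semL_def by auto
  next
    fix x assume x: "x \<in> {x \<in> D ?T. ?p1 x \<in> semL t1 \<Delta>1 \<and> ?p2 x \<in> semL t2 \<Delta>2}"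
    have "\<forall>\<delta>\<in>set \<Delta>. x \<in> sem M ?T \<delta>"
    proof
      fix \<delta> assume d: "\<delta> \<in> set \<Delta>"
      then consider p where "\<delta> = FPi1 p" | p where "\<delta> = FPi2 p" using forms by blast
      then show "x \<in> sem M ?T \<delta>"
      proof cases
        case (1 p) then show ?thesis using x s1 d unfolding semL_def by auto
      next
        case (2 p) then show ?thesis using x s2 d unfolding semL_def by auto
      qed
    qed
    then show "x \<in> semL ?T \<Delta>" using x unfolding semL_def by auto
  qed
  show ?thesis
  proof (cases "semL t1 \<Delta>1 = {} \<or> semL t2 \<Delta>2 = {}")
    case True then show ?thesis using eq unfolding okset_def by auto
  next
    case False
    then obtain c1 c2 where c12: "compact_el (D t1) (R t1) c1" "semL t1 \<Delta>1 = upset M t1 c1"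
      "compact_el (D t2) (R t2) c2" "semL t2 \<Delta>2 = upset M t2 c2" using ok1 ok2 unfolding okset_def by blast
    have "semL ?T \<Delta> = upset M ?T (pairM M ?T c1 c2)"
      using eq c12 upset_pair[OF c compact_dom[OF c12(1)] compact_dom[OF c12(3)]] by simp
    then show ?thesis unfolding okset_def using compact_pair[OF c c12(1) c12(3)] by blast
  qed
qed

lemma P1_sum:
  assumes c: "closed_ty (TSum t1 t2)" and IH: "IHP (mu \<Delta>)" and ne: "\<Delta> \<noteq> []"
    and forms: "\<forall>\<delta>\<in>set \<Delta>. (\<exists>p. \<delta> = FInj1 p \<and> wf_form t1 p) \<or> (\<exists>p. \<delta> = FInj2 p \<and> wf_form t2 p)"
  shows "okset (TSum t1 t2) (semL (TSum t1 t2) \<Delta>)"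
proof -
  let ?T = "TSum t1 t2" and ?i1 = "m_inj1 M (TSum t1 t2)" and ?i2 = "m_inj2 M (TSum t1 t2)"
  have cs: "closed_ty t1" "closed_ty t2" using c by auto
  define \<Delta>1 where "\<Delta>1 = concat (map unInj1 \<Delta>)"
  define \<Delta>2 where "\<Delta>2 = concat (map unInj2 \<Delta>)"
  have s1: "p \<in> set \<Delta>1 \<longleftrightarrow> FInj1 p \<in> set \<Delta>" for p unfolding \<Delta>1_def by (rule set_un(3))
  have s2: "p \<in> set \<Delta>2 \<longleftrightarrow> FInj2 p \<in> set \<Delta>" for p unfolding \<Delta>2_def by (rule set_un(4))
  have wf1: "\<forall>p\<in>set \<Delta>1. wf_form t1 p" using s1 forms by fastforce
  have wf2: "\<forall>p\<in>set \<Delta>2. wf_form t2 p" using s2 forms by fastforce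
  have ok1: "okset t1 (semL t1 \<Delta>1)"
  proof (rule IHPD[OF IH _ cs(1) wf1])
    show "mu \<Delta>1 < mu \<Delta>" unfolding \<Delta>1_def by (rule mu_concat_less) (use mu_un(3) ne in auto)
  qed
  have ok2: "okset t2 (semL t2 \<Delta>2)"
  proof (rule IHPD[OF IH _ cs(2) wf2])
    show "mu \<Delta>2 < mu \<Delta>" unfolding \<Delta>2_def by (rule mu_concat_less) (use mu_un(4) ne in auto)
  qed
  show ?thesis
  proof (cases "\<Delta>1 \<noteq> [] \<and> \<Delta>2 \<noteq> []")
    case True
    then obtain p1 p2 where p: "FInj1 p1 \<in> set \<Delta>" "FInj2 p2 \<in> set \<Delta>" using s1 s2
      by (metis list.set_intros(1) neq_Nil_conv)
    have "semL ?T \<Delta> = {}"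
    proof (rule ccontr)
      assume "semL ?T \<Delta> \<noteq> {}"
      then obtain x where "x \<in> sem M ?T (FInj1 p1)" "x \<in> sem M ?T (FInj2 p2)" using p unfolding semL_def by blast
      then obtain y1 y2 where "y1 \<in> sem M t1 p1" "y2 \<in> sem M t2 p2" "x = ?i1 y1" "x = ?i2 y2" by auto
      moreover have "y1 \<in> D t1" "y2 \<in> D t2" using calculation sem_sub[OF cs(1)] sem_sub[OF cs(2)] wf1 wf2 s1 s2 p by blast+
      ultimately show False using inj1_ne_inj2[OF c] by metis
    qed
    then show ?thesis unfolding okset_def by simp
  next
    case False
    then consider "\<Delta>2 = []" | "\<Delta>1 = []" by blast
    then show ?thesis
    proof cases
      case 1
      have all1: "\<forall>\<delta>\<in>set \<Delta>. \<exists>p. \<delta> = FInj1 p \<and> p \<in> set \<Delta>1" using forms 1 s1 s2 by fastforce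
      have ne1: "\<Delta>1 \<noteq> []" using all1 ne by (metis empty_iff list.set_intros(1) neq_Nil_conv set_empty)
      have eq: "semL ?T \<Delta> = ?i1 ` semL t1 \<Delta>1"
      proof (intro set_eqI iffI)
        fix x assume x: "x \<in> semL ?T \<Delta>"
        obtain p0 where p0: "p0 \<in> set \<Delta>1" using ne1 by (cases \<Delta>1) auto
        then have "x \<in> sem M ?T (FInj1 p0)" using x s1 unfolding semL_def by auto
        then obtain y where y: "y \<in> sem M t1 p0" "x = ?i1 y" by auto
        have yD: "y \<in> D t1" using y sem_sub[OF cs(1)] wf1 p0 by blast
        have "\<forall>p\<in>set \<Delta>1. y \<in> sem M t1 p"
        proof
          fix p assume p: "p \<in> set \<Delta>1"
          then have "x \<in> sem M ?T (FInj1 p)" using x s1 unfolding semL_def by auto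
          then obtain y' where y': "y' \<in> sem M t1 p" "x = ?i1 y'" by auto
          have "y' \<in> D t1" using y' sem_sub[OF cs(1)] wf1 p by blast
          then have "y' = y" using inj1_eq[OF c _ yD] y y' by auto
          then show "y \<in> sem M t1 p" using y' by simp
        qed
        then show "x \<in> ?i1 ` semL t1 \<Delta>1" using y yD unfolding semL_def by auto
      next
        fix x assume "x \<in> ?i1 ` semL t1 \<Delta>1"
        then obtain y where y: "y \<in> semL t1 \<Delta>1" "x = ?i1 y" by auto
        then have "y \<in> D t1" unfolding semL_def by auto
        then show "x \<in> semL ?T \<Delta>" using y all1 inj1_dom[OF c] unfolding semL_def by auto
      qed
      show ?thesis
      proof (cases "semL t1 \<Delta>1 = {}")
        case True then show ?thesis using eq unfolding okset_def by simp
      next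
        case False
        then obtain c1 where c1: "compact_el (D t1) (R t1) c1" "semL t1 \<Delta>1 = upset M t1 c1"
          using ok1 unfolding okset_def by blast
        then have "semL ?T \<Delta> = upset M ?T (?i1 c1)" using eq upset_inj1[OF c compact_dom[OF c1(1)]] by simp
        then show ?thesis unfolding okset_def using compact_inj1[OF c c1(1)] by blast
      qed
    next
      case 2
      have all2: "\<forall>\<delta>\<in>set \<Delta>. \<exists>p. \<delta> = FInj2 p \<and> p \<in> set \<Delta>2" using forms 2 s1 s2 by fastforce
      have ne2: "\<Delta>2 \<noteq> []" using all2 ne by (metis empty_iff list.set_intros(1) neq_Nil_conv set_empty)
      have eq: "semL ?T \<Delta> = ?i2 ` semL t2 \<Delta>2"
      proof (intro set_eqI iffI)
        fix x assume x: "x \<in> semL ?T \<Delta>"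
        obtain p0 where p0: "p0 \<in> set \<Delta>2" using ne2 by (cases \<Delta>2) auto
        then have "x \<in> sem M ?T (FInj2 p0)" using x s2 unfolding semL_def by auto
        then obtain y where y: "y \<in> sem M t2 p0" "x = ?i2 y" by auto
        have yD: "y \<in> D t2" using y sem_sub[OF cs(2)] wf2 p0 by blast
        have "\<forall>p\<in>set \<Delta>2. y \<in> sem M t2 p"
        proof
          fix p assume p: "p \<in> set \<Delta>2"
          then have "x \<in> sem M ?T (FInj2 p)" using x s2 unfolding semL_def by auto
          then obtain y' where y': "y' \<in> sem M t2 p" "x = ?i2 y'" by auto
          have "y' \<in> D t2" using y' sem_sub[OF cs(2)] wf2 p by blast
          then have "y' = y" using inj2_eq[OF c _ yD] y y' by auto
          then show "y \<in> sem M t2 p" using y' by simp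
        qed
        then show "x \<in> ?i2 ` semL t2 \<Delta>2" using y yD unfolding semL_def by auto
      next
        fix x assume "x \<in> ?i2 ` semL t2 \<Delta>2"
        then obtain y where y: "y \<in> semL t2 \<Delta>2" "x = ?i2 y" by auto
        then have "y \<in> D t2" unfolding semL_def by auto
        then show "x \<in> semL ?T \<Delta>" using y all2 inj2_dom[OF c] unfolding semL_def by auto
      qed
      show ?thesis
      proof (cases "semL t2 \<Delta>2 = {}")
        case True then show ?thesis using eq unfolding okset_def by simp
      next
        case False
        then obtain c1 where c1: "compact_el (D t2) (R t2) c1" "semL t2 \<Delta>2 = upset M t2 c1"
          using ok2 unfolding okset_def by blast
        then have "semL ?T \<Delta> = upset M ?T (?i2 c1)" using eq upset_inj2[OF c compact_dom[OF c1(1)]] by simp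
        then show ?thesis unfolding okset_def using compact_inj2[OF c c1(1)] by blast
      qed
    qed
  qed
qed

lemma P1_mu:
  assumes c: "closed_ty (TMu a t)" and IH: "IHP (mu \<Delta>)" and ne: "\<Delta> \<noteq> []"
    and forms: "\<forall>\<delta>\<in>set \<Delta>. \<exists>p. \<delta> = FFold p \<and> wf_form (subst t a (TMu a t)) p"
  shows "okset (TMu a t) (semL (TMu a t) \<Delta>)"
proof -
  let ?T = "TMu a t" and ?U = "subst t a (TMu a t)" and ?u = "m_unfold M (TMu a t)"
  have cU: "closed_ty ?U" using closed_unfold[OF c] .
  define \<Delta>1 where "\<Delta>1 = concat (map unFold \<Delta>)"
  have s1: "p \<in> set \<Delta>1 \<longleftrightarrow> FFold p \<in> set \<Delta>" for p unfolding \<Delta>1_def by (rule set_un(5))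
  have ok1: "okset ?U (semL ?U \<Delta>1)"
  proof (rule IHPD[OF IH _ cU])
    show "mu \<Delta>1 < mu \<Delta>" unfolding \<Delta>1_def by (rule mu_concat_less) (use mu_un(5) ne in auto)
    show "\<forall>p\<in>set \<Delta>1. wf_form ?U p" using s1 forms by fastforce
  qed
  have eq: "semL ?T \<Delta> = {x \<in> D ?T. ?u x \<in> semL ?U \<Delta>1}"
  proof (intro set_eqI iffI)
    fix x assume x: "x \<in> semL ?T \<Delta>"
    then have xD: "x \<in> D ?T" unfolding semL_def by auto
    have "\<forall>p\<in>set \<Delta>1. ?u x \<in> sem M ?U p"
    proof
      fix p assume "p \<in> set \<Delta>1"
      then have "FFold p \<in> set \<Delta>" using s1 by blast
      then have "x \<in> sem M ?T (FFold p)" using x unfolding semL_def by blast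
      then show "?u x \<in> sem M ?U p" by simp
    qed
    then show "x \<in> {x \<in> D ?T. ?u x \<in> semL ?U \<Delta>1}" using xD unfold_dom[OF c xD] unfolding semL_def by auto
  next
    fix x assume x: "x \<in> {x \<in> D ?T. ?u x \<in> semL ?U \<Delta>1}"
    have "\<forall>\<delta>\<in>set \<Delta>. x \<in> sem M ?T \<delta>"
    proof
      fix \<delta> assume d: "\<delta> \<in> set \<Delta>"
      then obtain p where "\<delta> = FFold p" using forms by blast
      then show "x \<in> sem M ?T \<delta>" using x s1 d unfolding semL_def by auto
    qed
    then show "x \<in> semL ?T \<Delta>" using x unfolding semL_def by auto
  qed
  show ?thesis
  proof (cases "semL ?U \<Delta>1 = {}")
    case True then show ?thesis using eq unfolding okset_def by auto
  next
    case False
    then obtain c1 where c1: "compact_el (D ?U) (R ?U) c1" "semL ?U \<Delta>1 = upset M ?U c1"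
      using ok1 unfolding okset_def by blast
    have "semL ?T \<Delta> = upset M ?T (m_fold M ?T c1)" using eq c1 upset_fold[OF c compact_dom[OF c1(1)]] by simp
    then show ?thesis unfolding okset_def using compact_fold[OF c c1(1)] by blast
  qed
qed

end

context pmod
begin

lemma set_remove1_insert: "x \<in> set xs \<Longrightarrow> set xs = insert x (set (remove1 x xs))"
proof -
  assume x: "x \<in> set xs"
  have "y \<in> set (remove1 x xs)" if "y \<in> set xs" "y \<noteq> x" for y using that in_set_remove1 by metis
  then show ?thesis using x set_remove1_subset by fastforce
qed

lemma P1: "closed_ty T \<Longrightarrow> (\<forall>\<delta>\<in>set \<Delta>. wf_form T \<delta>) \<Longrightarrow> okset T (semL T \<Delta>)"
proof (induction "mu \<Delta>" arbitrary: T \<Delta> rule: less_induct)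
  case less
  have IH: "IHP (mu \<Delta>)" unfolding IHP_def using less.hyps by blast
  show ?case
  proof (cases "\<Delta> = []")
    case True
    then have "semL T \<Delta> = upset M T (bottomM M T)" unfolding semL_def using upset_bot[OF less.prems(1)] by simp
    then show ?thesis unfolding okset_def using compact_bot[OF less.prems(1)] by blast
  next
    case ne: False
    show ?thesis
    proof (cases "FTrue \<in> set \<Delta>")
      case True
      let ?D = "remove1 FTrue \<Delta>"
      have m: "mu ?D < mu \<Delta>" using mu_remove1[OF True] by (simp add: wt_def)
      have e: "set \<Delta> = insert FTrue (set ?D)" by (rule set_remove1_insert[OF True])
      have "semL T \<Delta> = semL T ?D" unfolding semL_def e INT_insert sem.simps(1) by blast
      moreover have "\<forall>\<delta>\<in>set ?D. wf_form T \<delta>" using less.prems(2) set_remove1_subset[of FTrue \<Delta>] by blast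
      ultimately show ?thesis using IHPD[OF IH m less.prems(1)] by simp
    next
      case nT: False
      show ?thesis
      proof (cases "FFalse \<in> set \<Delta>")
        case True
        then have "semL T \<Delta> = {}" unfolding semL_def by auto
        then show ?thesis unfolding okset_def by simp
      next
        case nF: False
        show ?thesis
        proof (cases "\<exists>p q. FAnd p q \<in> set \<Delta>")
          case True
          then obtain p q where pq: "FAnd p q \<in> set \<Delta>" by blast
          let ?D = "p # q # remove1 (FAnd p q) \<Delta>"
          have m: "mu ?D < mu \<Delta>" using mu_remove1[OF pq] by (simp add: wt_def mu_def)
          have e: "set \<Delta> = insert (FAnd p q) (set (remove1 (FAnd p q) \<Delta>))" by (rule set_remove1_insert[OF pq])
          have "semL T \<Delta> = semL T ?D" unfolding semL_def e INT_insert sem.simps(3) list.set(2) by blast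
          moreover have "\<forall>\<delta>\<in>set ?D. wf_form T \<delta>"
          proof -
            have "wf_form T (FAnd p q)" using less.prems(2) pq by blast
            then have "wf_form T p" "wf_form T q" by simp_all
            then show ?thesis using less.prems(2) set_remove1_subset[of "FAnd p q" \<Delta>] by auto
          qed
          ultimately show ?thesis using IHPD[OF IH m less.prems(1)] by simp
        next
          case nA: False
          have proper: "\<delta> \<noteq> FTrue" "\<delta> \<noteq> FFalse" "\<forall>p q. \<delta> \<noteq> FAnd p q" "wf_form T \<delta>" if "\<delta> \<in> set \<Delta>" for \<delta>
            using that nT nF nA less.prems(2) by auto
          show ?thesis
          proof (cases T)
            case TUnit
            have "\<forall>\<delta>\<in>set \<Delta>. \<delta> = FUnit"
            proof
              fix \<delta> assume "\<delta> \<in> set \<Delta>"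
              from proper[OF this] show "\<delta> = FUnit" by (cases \<delta>) (auto simp: TUnit)
            qed
            then show ?thesis using P1_unit[OF ne] TUnit by simp
          next
            case (TProd t1 t2)
            have "\<forall>\<delta>\<in>set \<Delta>. (\<exists>p. \<delta> = FPi1 p \<and> wf_form t1 p) \<or> (\<exists>p. \<delta> = FPi2 p \<and> wf_form t2 p)"
            proof
              fix \<delta> assume "\<delta> \<in> set \<Delta>"
              from proper[OF this] show "(\<exists>p. \<delta> = FPi1 p \<and> wf_form t1 p) \<or> (\<exists>p. \<delta> = FPi2 p \<and> wf_form t2 p)"
                by (cases \<delta>) (auto simp: TProd)
            qed
            then show ?thesis using P1_prod[OF _ IH ne] less.prems(1) TProd by simp
          next
            case (TSum t1 t2)
            have "\<forall>\<delta>\<in>set \<Delta>. (\<exists>p. \<delta> = FInj1 p \<and> wf_form t1 p) \<or> (\<exists>p. \<delta> = FInj2 p \<and> wf_form t2 p)"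
            proof
              fix \<delta> assume "\<delta> \<in> set \<Delta>"
              from proper[OF this] show "(\<exists>p. \<delta> = FInj1 p \<and> wf_form t1 p) \<or> (\<exists>p. \<delta> = FInj2 p \<and> wf_form t2 p)"
                by (cases \<delta>) (auto simp: TSum)
            qed
            then show ?thesis using P1_sum[OF _ IH ne] less.prems(1) TSum by simp
          next
            case (TFun t1 t2)
            have "\<forall>\<delta>\<in>set \<Delta>. \<exists>q p. \<delta> = FImp q p \<and> wf_form t1 q \<and> wf_form t2 p"
            proof
              fix \<delta> assume "\<delta> \<in> set \<Delta>"
              from proper[OF this] show "\<exists>q p. \<delta> = FImp q p \<and> wf_form t1 q \<and> wf_form t2 p"
                by (cases \<delta>) (auto simp: TFun)
            qed
            then show ?thesis using P1_fun[OF _ IH ne] less.prems(1) TFun by simp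
          next
            case (TMu a t)
            have "\<forall>\<delta>\<in>set \<Delta>. \<exists>p. \<delta> = FFold p \<and> wf_form (subst t a (TMu a t)) p"
            proof
              fix \<delta> assume "\<delta> \<in> set \<Delta>"
              from proper[OF this] show "\<exists>p. \<delta> = FFold p \<and> wf_form (subst t a (TMu a t)) p"
                by (cases \<delta>) (auto simp: TMu)
            qed
            then show ?thesis using P1_mu[OF _ IH ne] less.prems(1) TMu by simp
          next
            case (TVar a)
            then show ?thesis using less.prems(1) by simp
          qed
        qed
      qed
    qed
  qed
qed

lemma part1:
  assumes c: "closed_ty T" and wf: "wf_form T \<delta>" and ne: "sem M T \<delta> \<noteq> {}"
  shows "\<exists>d. compact_el (D T) (R T) d \<and> sem M T \<delta> = upset M T d"
  using P1[OF c, of "[\<delta>]"] wf ne semL_single[OF c wf] unfolding okset_def by auto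

lemma sem_ok: "closed_ty T \<Longrightarrow> wf_form T \<delta> \<Longrightarrow> okset T (sem M T \<delta>)"
  using P1[of T "[\<delta>]"] semL_single by auto

end

context pmod
begin

definition sc where "sc T g \<longleftrightarrow> scott_cont (D T) (R T) (D T) (R T) g"
definition ptle where "ptle T g g' \<longleftrightarrow> (\<forall>x\<in>D T. R T (g x) (g' x))"
definition iter :: "ty \<Rightarrow> (('u \<Rightarrow> 'u) \<Rightarrow> 'u \<Rightarrow> 'u) \<Rightarrow> nat \<Rightarrow> 'u \<Rightarrow> 'u" where "iter T A n = ((\<lambda>g. m_fold M T \<circ> A g \<circ> m_unfold M T) ^^ n) (\<lambda>_. bottomM M T)"
definition lubfn :: "ty \<Rightarrow> (('u \<Rightarrow> 'u) \<Rightarrow> 'u \<Rightarrow> 'u) \<Rightarrow> 'u \<Rightarrow> 'u" where "lubfn T A = (\<lambda>x. lubM M T {iter T A n x | n. True})"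

lemma sc_dom: "sc T g \<Longrightarrow> x \<in> D T \<Longrightarrow> g x \<in> D T"
  unfolding sc_def scott_cont_def by blast

lemma sc_mono: "sc T g \<Longrightarrow> x \<in> D T \<Longrightarrow> y \<in> D T \<Longrightarrow> R T x y \<Longrightarrow> R T (g x) (g y)"
  unfolding sc_def scott_cont_def by blast

lemma sc_lub: "sc T g \<Longrightarrow> directed_in (D T) (R T) S \<Longrightarrow> is_lub (D T) (R T) S x \<Longrightarrow> is_lub (D T) (R T) (g ` S) (g x)"
  unfolding sc_def scott_cont_def by blast

lemma ptle_refl: "closed_ty T \<Longrightarrow> sc T g \<Longrightarrow> ptle T g g"
  unfolding ptle_def using refl sc_dom by blast

lemma iter_0: "iter T A 0 = (\<lambda>_. bottomM M T)"
  unfolding iter_def by simp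

lemma iter_Suc: "iter T A (Suc n) = m_fold M T \<circ> A (iter T A n) \<circ> m_unfold M T"
  unfolding iter_def by simp

lemma sc_const_bot: assumes c: "closed_ty T" shows "sc T (\<lambda>_. bottomM M T)"
  unfolding sc_def scott_cont_def
proof (intro conjI allI impI ballI)
  show "bottomM M T \<in> D T" using bot_dom[OF c] .
  show "R T (bottomM M T) (bottomM M T)" using refl[OF c bot_dom[OF c]] .
  fix S x assume a: "directed_in (D T) (R T) S \<and> is_lub (D T) (R T) S x"
  then have "(\<lambda>_. bottomM M T) ` S = {bottomM M T}" unfolding directed_in_def by auto
  then show "is_lub (D T) (R T) ((\<lambda>_. bottomM M T) ` S) (bottomM M T)"
    unfolding is_lub_def using bot[OF c] refl[OF c bot_dom[OF c]] by auto
qed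

context
  fixes a t0 A
  assumes c: "closed_ty (TMu a t0)"
    and Asc: "\<And>g. sc (TMu a t0) g \<Longrightarrow> sc (subst t0 a (TMu a t0)) (A g)"
begin

lemma iter_sc: "sc (TMu a t0) (iter (TMu a t0) A n)"
proof (induction n)
  case 0 then show ?case using sc_const_bot[OF c] by (simp add: iter_0)
next
  case (Suc n)
  have "scott_cont (D (TMu a t0)) (R (TMu a t0)) (D (subst t0 a (TMu a t0))) (R (subst t0 a (TMu a t0)))
          (A (iter (TMu a t0) A n) \<circ> m_unfold M (TMu a t0))"
    by (rule scott_cont_comp[OF unfold_cont[OF c]]) (use Asc[OF Suc] in \<open>simp add: sc_def\<close>)
  from scott_cont_comp[OF this fold_cont[OF c]] show ?case
    unfolding sc_def iter_Suc by (simp add: o_assoc)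
qed

lemma iter_dom: "x \<in> D (TMu a t0) \<Longrightarrow> iter (TMu a t0) A n x \<in> D (TMu a t0)"
  using sc_dom[OF iter_sc] .

lemma iter_Suc_app: "x \<in> D (TMu a t0) \<Longrightarrow>
   iter (TMu a t0) A (Suc n) x = m_fold M (TMu a t0) (A (iter (TMu a t0) A n) (m_unfold M (TMu a t0) x))"
  by (simp add: iter_Suc)

end

lemma iter_le2:
  assumes c: "closed_ty (TMu a t0)"
    and Asc: "\<And>g. sc (TMu a t0) g \<Longrightarrow> sc (subst t0 a (TMu a t0)) (A g)"
    and Asc': "\<And>g. sc (TMu a t0) g \<Longrightarrow> sc (subst t0 a (TMu a t0)) (A' g)"
    and Ale: "\<And>g g'. sc (TMu a t0) g \<Longrightarrow> sc (TMu a t0) g' \<Longrightarrow> ptle (TMu a t0) g g' \<Longrightarrow>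
                  ptle (subst t0 a (TMu a t0)) (A g) (A' g')"
  shows "ptle (TMu a t0) (iter (TMu a t0) A n) (iter (TMu a t0) A' n)"
proof (induction n)
  case 0 then show ?case using ptle_refl[OF c sc_const_bot[OF c]] by (simp add: iter_0)
next
  case (Suc n)
  let ?T = "TMu a t0" and ?U = "subst t0 a (TMu a t0)"
  have cU: "closed_ty ?U" using closed_unfold[OF c] .
  show ?case unfolding ptle_def
  proof
    fix x assume x: "x \<in> D ?T"
    have ux: "m_unfold M ?T x \<in> D ?U" using unfold_dom[OF c x] .
    have "R ?U (A (iter ?T A n) (m_unfold M ?T x)) (A' (iter ?T A' n) (m_unfold M ?T x))"
      using Ale[OF iter_sc[where A=A, OF c Asc] iter_sc[where A=A', OF c Asc'] Suc] ux unfolding ptle_def by blast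
    then show "R ?T (iter ?T A (Suc n) x) (iter ?T A' (Suc n) x)"
      using iter_Suc_app[where A=A, OF c Asc x] iter_Suc_app[where A=A', OF c Asc' x] le_fold[OF c]
        sc_dom[OF Asc[OF iter_sc[where A=A, OF c Asc]] ux] sc_dom[OF Asc'[OF iter_sc[where A=A', OF c Asc']] ux] by simp
  qed
qed

lemma iter_chain:
  assumes c: "closed_ty (TMu a t0)"
    and Asc: "\<And>g. sc (TMu a t0) g \<Longrightarrow> sc (subst t0 a (TMu a t0)) (A g)"
    and Ale: "\<And>g g'. sc (TMu a t0) g \<Longrightarrow> sc (TMu a t0) g' \<Longrightarrow> ptle (TMu a t0) g g' \<Longrightarrow>
                  ptle (subst t0 a (TMu a t0)) (A g) (A g')"
  shows "ptle (TMu a t0) (iter (TMu a t0) A n) (iter (TMu a t0) A (Suc n))"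
proof (induction n)
  case 0
  show ?case unfolding ptle_def using bot_le[OF c] iter_dom[where A=A, OF c Asc] by (simp add: iter_0)
next
  case (Suc n)
  let ?T = "TMu a t0" and ?U = "subst t0 a (TMu a t0)"
  show ?case unfolding ptle_def
  proof
    fix x assume x: "x \<in> D ?T"
    have ux: "m_unfold M ?T x \<in> D ?U" using unfold_dom[OF c x] .
    have "R ?U (A (iter ?T A n) (m_unfold M ?T x)) (A (iter ?T A (Suc n)) (m_unfold M ?T x))"
      using Ale[OF iter_sc[where A=A, OF c Asc] iter_sc[where A=A, OF c Asc] Suc] ux unfolding ptle_def by blast
    then show "R ?T (iter ?T A (Suc n) x) (iter ?T A (Suc (Suc n)) x)"
      using iter_Suc_app[where A=A, OF c Asc x, where n=n] iter_Suc_app[where A=A, OF c Asc x, where n="Suc n"] le_fold[OF c]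
        sc_dom[OF Asc[OF iter_sc[where A=A, OF c Asc]] ux] by simp
  qed
qed

lemma lubfn_lub:
  assumes c: "closed_ty (TMu a t0)"
    and Asc: "\<And>g. sc (TMu a t0) g \<Longrightarrow> sc (subst t0 a (TMu a t0)) (A g)"
    and Ale: "\<And>g g'. sc (TMu a t0) g \<Longrightarrow> sc (TMu a t0) g' \<Longrightarrow> ptle (TMu a t0) g g' \<Longrightarrow>
                  ptle (subst t0 a (TMu a t0)) (A g) (A g')"
    and x: "x \<in> D (TMu a t0)"
  shows "is_lub (D (TMu a t0)) (R (TMu a t0)) {iter (TMu a t0) A n x | n. True} (lubfn (TMu a t0) A x)"
proof -
  have "directed_in (D (TMu a t0)) (R (TMu a t0)) {iter (TMu a t0) A n x | n. True}"
    by (rule chain_directed[OF po[OF c]]) (use iter_dom[where A=A, OF c Asc x] iter_chain[where A=A, OF c Asc Ale] x in \<open>auto simp: ptle_def\<close>)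
  then show ?thesis unfolding lubfn_def by (rule lubM[OF c])
qed

lemma lubfn_sc:
  assumes c: "closed_ty (TMu a t0)"
    and Asc: "\<And>g. sc (TMu a t0) g \<Longrightarrow> sc (subst t0 a (TMu a t0)) (A g)"
    and Ale: "\<And>g g'. sc (TMu a t0) g \<Longrightarrow> sc (TMu a t0) g' \<Longrightarrow> ptle (TMu a t0) g g' \<Longrightarrow>
                  ptle (subst t0 a (TMu a t0)) (A g) (A g')"
  shows "sc (TMu a t0) (lubfn (TMu a t0) A)"
  unfolding sc_def
  by (rule scott_cont_lub[OF _ _ po[OF c]]) (use iter_sc[where A=A, OF c Asc] lubfn_lub[where A=A, OF c Asc Ale] in \<open>auto simp: sc_def\<close>)

lemma lubfn_le2:
  assumes c: "closed_ty (TMu a t0)"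
    and Asc: "\<And>g. sc (TMu a t0) g \<Longrightarrow> sc (subst t0 a (TMu a t0)) (A g)"
    and Asc': "\<And>g. sc (TMu a t0) g \<Longrightarrow> sc (subst t0 a (TMu a t0)) (A' g)"
    and Ale: "\<And>g g'. sc (TMu a t0) g \<Longrightarrow> sc (TMu a t0) g' \<Longrightarrow> ptle (TMu a t0) g g' \<Longrightarrow>
                  ptle (subst t0 a (TMu a t0)) (A g) (A g')"
    and Ale': "\<And>g g'. sc (TMu a t0) g \<Longrightarrow> sc (TMu a t0) g' \<Longrightarrow> ptle (TMu a t0) g g' \<Longrightarrow>
                  ptle (subst t0 a (TMu a t0)) (A' g) (A' g')"
    and Ale2: "\<And>g g'. sc (TMu a t0) g \<Longrightarrow> sc (TMu a t0) g' \<Longrightarrow> ptle (TMu a t0) g g' \<Longrightarrow>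
                  ptle (subst t0 a (TMu a t0)) (A g) (A' g')"
  shows "ptle (TMu a t0) (lubfn (TMu a t0) A) (lubfn (TMu a t0) A')"
  unfolding ptle_def
proof
  let ?T = "TMu a t0"
  fix x assume x: "x \<in> D ?T"
  have l: "is_lub (D ?T) (R ?T) {iter ?T A n x | n. True} (lubfn ?T A x)" using lubfn_lub[where A=A, OF c Asc Ale x] .
  have l': "is_lub (D ?T) (R ?T) {iter ?T A' n x | n. True} (lubfn ?T A' x)" using lubfn_lub[where A=A', OF c Asc' Ale' x] .
  have "\<forall>n. R ?T (iter ?T A n x) (lubfn ?T A' x)"
  proof
    fix n
    have "R ?T (iter ?T A n x) (iter ?T A' n x)" using iter_le2[where A=A and A'=A', OF c Asc Asc' Ale2] x unfolding ptle_def by blast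
    moreover have "R ?T (iter ?T A' n x) (lubfn ?T A' x)" using l' unfolding is_lub_def by blast
    ultimately show "R ?T (iter ?T A n x) (lubfn ?T A' x)"
      using trans[OF c iter_dom[where A=A, OF c Asc x] iter_dom[where A=A', OF c Asc' x] lub_dom[OF l']] by blast
  qed
  then show "R ?T (lubfn ?T A x) (lubfn ?T A' x)" using l lub_dom[OF l'] unfolding is_lub_def by blast
qed

end

context pmod
begin

definition prodF where "prodF T1 T2 h1 h2 = (\<lambda>x. pairM M (TProd T1 T2)
   (h1 (m_pi1 M (TProd T1 T2) x)) (h2 (m_pi2 M (TProd T1 T2) x)))"

definition funF where "funF T1 T2 h1 h2 = (\<lambda>f. lamM M T1 (TFun T1 T2)
   (\<lambda>x. h2 (m_app M (TFun T1 T2) f (h1 x))))"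

definition sumF where "sumF T1 T2 h1 h2 = (\<lambda>x.
   if \<exists>y\<in>D T1. x = m_inj1 M (TSum T1 T2) y
   then m_inj1 M (TSum T1 T2) (h1 (THE y. y \<in> D T1 \<and> x = m_inj1 M (TSum T1 T2) y))
   else if \<exists>y\<in>D T2. x = m_inj2 M (TSum T1 T2) y
   then m_inj2 M (TSum T1 T2) (h2 (THE y. y \<in> D T2 \<and> x = m_inj2 M (TSum T1 T2) y))
   else x)"

context
  fixes T1 T2 h1 h2
  assumes c: "closed_ty (TProd T1 T2)" and h1: "sc T1 h1" and h2: "sc T2 h2"
begin

lemma prodF_props:
  assumes x: "x \<in> D (TProd T1 T2)"
  shows "prodF T1 T2 h1 h2 x \<in> D (TProd T1 T2)"
    "m_pi1 M (TProd T1 T2) (prodF T1 T2 h1 h2 x) = h1 (m_pi1 M (TProd T1 T2) x)"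
    "m_pi2 M (TProd T1 T2) (prodF T1 T2 h1 h2 x) = h2 (m_pi2 M (TProd T1 T2) x)"
  using pair[OF c sc_dom[OF h1 pi_dom(1)[OF c x]] sc_dom[OF h2 pi_dom(2)[OF c x]]]
  unfolding prodF_def by auto

lemma prodF_sc: "sc (TProd T1 T2) (prodF T1 T2 h1 h2)"
  unfolding sc_def scott_cont_def
proof (intro conjI allI impI ballI)
  let ?T = "TProd T1 T2" and ?F = "prodF T1 T2 h1 h2" and ?p1 = "m_pi1 M (TProd T1 T2)" and ?p2 = "m_pi2 M (TProd T1 T2)"
  show "?F x \<in> D ?T" if "x \<in> D ?T" for x using prodF_props[OF that] by simp
  have mono: "R ?T (?F x) (?F y)" if "x \<in> D ?T" "y \<in> D ?T" "R ?T x y" for x y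
  proof -
    have "R T1 (?p1 x) (?p1 y)" "R T2 (?p2 x) (?p2 y)" using le_prod[OF c that(1,2)] that(3) by auto
    then have "R T1 (h1 (?p1 x)) (h1 (?p1 y))" "R T2 (h2 (?p2 x)) (h2 (?p2 y))"
      using sc_mono[OF h1] sc_mono[OF h2] pi_dom[OF c that(1)] pi_dom[OF c that(2)] by auto
    then show ?thesis using le_prod[OF c prodF_props(1)[OF that(1)] prodF_props(1)[OF that(2)]]
      prodF_props[OF that(1)] prodF_props[OF that(2)] by simp
  qed
  show "R ?T (?F x) (?F y)" if "x \<in> D ?T" "y \<in> D ?T" "R ?T x y" for x y using mono[OF that] .
  fix S x assume a: "directed_in (D ?T) (R ?T) S \<and> is_lub (D ?T) (R ?T) S x"
  have SD: "S \<subseteq> D ?T" and xD: "x \<in> D ?T" using a unfolding directed_in_def is_lub_def by auto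
  have d1: "directed_in (D T1) (R T1) (?p1 ` S)"
    by (rule directed_image) (use a pi_dom[OF c] le_prod[OF c] in auto)
  have d2: "directed_in (D T2) (R T2) (?p2 ` S)"
    by (rule directed_image) (use a pi_dom[OF c] le_prod[OF c] in auto)
  have l1: "is_lub (D T1) (R T1) (h1 ` ?p1 ` S) (h1 (?p1 x))" using sc_lub[OF h1 d1 prod_lub(1)[OF c]] a by blast
  have l2: "is_lub (D T2) (R T2) (h2 ` ?p2 ` S) (h2 (?p2 x))" using sc_lub[OF h2 d2 prod_lub(2)[OF c]] a by blast
  show "is_lub (D ?T) (R ?T) (?F ` S) (?F x)" unfolding is_lub_def
  proof (intro conjI ballI impI)
    show "?F x \<in> D ?T" using prodF_props[OF xD] by simp
    show "R ?T w (?F x)" if "w \<in> ?F ` S" for w using that mono SD xD a unfolding is_lub_def by auto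
    fix z assume z: "z \<in> D ?T" "\<forall>w\<in>?F ` S. R ?T w z"
    have "\<forall>w\<in>h1 ` ?p1 ` S. R T1 w (?p1 z)"
    proof
      fix w assume "w \<in> h1 ` ?p1 ` S"
      then obtain y where y: "y \<in> S" "w = h1 (?p1 y)" by auto
      then have "R ?T (?F y) z" using z by auto
      then show "R T1 w (?p1 z)" using le_prod[OF c prodF_props(1) z(1)] prodF_props y SD by auto
    qed
    then have r1: "R T1 (h1 (?p1 x)) (?p1 z)" using l1 pi_dom[OF c z(1)] unfolding is_lub_def by blast
    have "\<forall>w\<in>h2 ` ?p2 ` S. R T2 w (?p2 z)"
    proof
      fix w assume "w \<in> h2 ` ?p2 ` S"
      then obtain y where y: "y \<in> S" "w = h2 (?p2 y)" by auto
      then have "R ?T (?F y) z" using z by auto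
      then show "R T2 w (?p2 z)" using le_prod[OF c prodF_props(1) z(1)] prodF_props y SD by auto
    qed
    then have r2: "R T2 (h2 (?p2 x)) (?p2 z)" using l2 pi_dom[OF c z(1)] unfolding is_lub_def by blast
    show "R ?T (?F x) z" using le_prod[OF c prodF_props(1)[OF xD] z(1)] prodF_props[OF xD] r1 r2 by simp
  qed
qed

end

lemma prodF_le:
  assumes c: "closed_ty (TProd T1 T2)" and h: "sc T1 h1" "sc T2 h2" "sc T1 h1'" "sc T2 h2'"
    and le: "ptle T1 h1 h1'" "ptle T2 h2 h2'"
  shows "ptle (TProd T1 T2) (prodF T1 T2 h1 h2) (prodF T1 T2 h1' h2')"
  unfolding ptle_def
proof
  fix x assume x: "x \<in> D (TProd T1 T2)"
  show "R (TProd T1 T2) (prodF T1 T2 h1 h2 x) (prodF T1 T2 h1' h2' x)"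
    using le_prod[OF c prodF_props(1)[OF c h(1,2) x] prodF_props(1)[OF c h(3,4) x]]
      prodF_props[OF c h(1,2) x] prodF_props[OF c h(3,4) x] le pi_dom[OF c x] unfolding ptle_def by simp
qed

context
  fixes T1 T2 h1 h2
  assumes c: "closed_ty (TFun T1 T2)" and h1: "sc T1 h1" and h2: "sc T2 h2"
begin

lemma funF_props:
  assumes f: "f \<in> D (TFun T1 T2)"
  shows "funF T1 T2 h1 h2 f \<in> D (TFun T1 T2)"
    "\<forall>x\<in>D T1. m_app M (TFun T1 T2) (funF T1 T2 h1 h2 f) x = h2 (m_app M (TFun T1 T2) f (h1 x))"
proof -
  have "scott_cont (D T1) (R T1) (D T2) (R T2) (h2 \<circ> (m_app M (TFun T1 T2) f \<circ> h1))"
    by (rule scott_cont_comp[OF scott_cont_comp[OF h1[unfolded sc_def] app_cont[OF c f]] h2[unfolded sc_def]])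
  then have "scott_cont (D T1) (R T1) (D T2) (R T2) (\<lambda>x. h2 (m_app M (TFun T1 T2) f (h1 x)))"
    by (simp add: comp_def)
  from lam[OF c this] show "funF T1 T2 h1 h2 f \<in> D (TFun T1 T2)"
    "\<forall>x\<in>D T1. m_app M (TFun T1 T2) (funF T1 T2 h1 h2 f) x = h2 (m_app M (TFun T1 T2) f (h1 x))"
    unfolding funF_def by auto
qed

lemma funF_sc: "sc (TFun T1 T2) (funF T1 T2 h1 h2)"
  unfolding sc_def scott_cont_def
proof (intro conjI allI impI ballI)
  let ?T = "TFun T1 T2" and ?F = "funF T1 T2 h1 h2" and ?ap = "m_app M (TFun T1 T2)"
  have cs: "closed_ty T1" "closed_ty T2" using c by auto
  show "?F f \<in> D ?T" if "f \<in> D ?T" for f using funF_props[OF that] by simp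
  have mono: "R ?T (?F f) (?F g)" if "f \<in> D ?T" "g \<in> D ?T" "R ?T f g" for f g
  proof -
    have "\<forall>x\<in>D T1. R T2 (h2 (?ap f (h1 x))) (h2 (?ap g (h1 x)))"
      using le_fun[OF c that(1,2)] that(3) sc_mono[OF h2] app_dom[OF c] that sc_dom[OF h1] by auto
    then show ?thesis using le_fun[OF c funF_props(1)[OF that(1)] funF_props(1)[OF that(2)]]
      funF_props(2)[OF that(1)] funF_props(2)[OF that(2)] by simp
  qed
  show "R ?T (?F f) (?F g)" if "f \<in> D ?T" "g \<in> D ?T" "R ?T f g" for f g using mono[OF that] .
  fix S h assume a: "directed_in (D ?T) (R ?T) S \<and> is_lub (D ?T) (R ?T) S h"
  have SD: "S \<subseteq> D ?T" and hD: "h \<in> D ?T" using a unfolding directed_in_def is_lub_def by auto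
  show "is_lub (D ?T) (R ?T) (?F ` S) (?F h)" unfolding is_lub_def
  proof (intro conjI ballI impI)
    show "?F h \<in> D ?T" using funF_props[OF hD] by simp
    show "R ?T w (?F h)" if "w \<in> ?F ` S" for w using that mono SD hD a unfolding is_lub_def by auto
    fix z assume z: "z \<in> D ?T" "\<forall>w\<in>?F ` S. R ?T w z"
    have "\<forall>x\<in>D T1. R T2 (h2 (?ap h (h1 x))) (?ap z x)"
    proof
      fix x assume x: "x \<in> D T1"
      have hx: "h1 x \<in> D T1" using sc_dom[OF h1 x] .
      have d: "directed_in (D T2) (R T2) ((\<lambda>f. ?ap f (h1 x)) ` S)"
      proof (rule directed_image)
        show "directed_in (D ?T) (R ?T) S" using a by auto
        show "\<forall>f\<in>D ?T. ?ap f (h1 x) \<in> D T2" using app_dom[OF c _ hx] by blast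
        show "\<forall>f\<in>D ?T. \<forall>g\<in>D ?T. R ?T f g \<longrightarrow> R T2 (?ap f (h1 x)) (?ap g (h1 x))" using le_fun[OF c] hx by blast
      qed
      have l: "is_lub (D T2) (R T2) ((\<lambda>f. ?ap f (h1 x)) ` S) (?ap h (h1 x))" using fun_lub[OF c _ _ hx] a by blast
      have l2: "is_lub (D T2) (R T2) (h2 ` (\<lambda>f. ?ap f (h1 x)) ` S) (h2 (?ap h (h1 x)))" using sc_lub[OF h2 d l] .
      have "\<forall>w\<in>h2 ` (\<lambda>f. ?ap f (h1 x)) ` S. R T2 w (?ap z x)"
      proof
        fix w assume "w \<in> h2 ` (\<lambda>f. ?ap f (h1 x)) ` S"
        then obtain f where f: "f \<in> S" "w = h2 (?ap f (h1 x))" by auto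
        then have fD: "f \<in> D ?T" using SD by auto
        have "R ?T (?F f) z" using z f by auto
        then have "R T2 (?ap (?F f) x) (?ap z x)" using le_fun[OF c funF_props(1)[OF fD] z(1)] x by auto
        then show "R T2 w (?ap z x)" using funF_props(2)[OF fD] x f by simp
      qed
      then show "R T2 (h2 (?ap h (h1 x))) (?ap z x)" using l2 app_dom[OF c z(1) x] unfolding is_lub_def by blast
    qed
    then show "R ?T (?F h) z" using le_fun[OF c funF_props(1)[OF hD] z(1)] funF_props(2)[OF hD] by simp
  qed
qed

end

lemma funF_le:
  assumes c: "closed_ty (TFun T1 T2)" and h: "sc T1 h1" "sc T2 h2" "sc T1 h1'" "sc T2 h2'"
    and le: "ptle T1 h1 h1'" "ptle T2 h2 h2'"
  shows "ptle (TFun T1 T2) (funF T1 T2 h1 h2) (funF T1 T2 h1' h2')"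
  unfolding ptle_def
proof
  let ?T = "TFun T1 T2" and ?ap = "m_app M (TFun T1 T2)"
  have cs: "closed_ty T1" "closed_ty T2" using c by auto
  fix f assume f: "f \<in> D ?T"
  have "\<forall>x\<in>D T1. R T2 (h2 (?ap f (h1 x))) (h2' (?ap f (h1' x)))"
  proof
    fix x assume x: "x \<in> D T1"
    have a1: "h1 x \<in> D T1" "h1' x \<in> D T1" using sc_dom[OF h(1) x] sc_dom[OF h(3) x] by auto
    have "R T1 (h1 x) (h1' x)" using le(1) x unfolding ptle_def by auto
    then have "R T2 (?ap f (h1 x)) (?ap f (h1' x))" using app_mono[OF c f a1] by simp
    then have r1: "R T2 (h2 (?ap f (h1 x))) (h2 (?ap f (h1' x)))"
      using sc_mono[OF h(2)] app_dom[OF c f] a1 by auto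
    have r2: "R T2 (h2 (?ap f (h1' x))) (h2' (?ap f (h1' x)))" using le(2) app_dom[OF c f a1(2)] unfolding ptle_def by auto
    show "R T2 (h2 (?ap f (h1 x))) (h2' (?ap f (h1' x)))"
      using trans[OF cs(2) _ _ _ r1 r2] sc_dom[OF h(2)] sc_dom[OF h(4)] app_dom[OF c f] a1 by blast
  qed
  then show "R ?T (funF T1 T2 h1 h2 f) (funF T1 T2 h1' h2' f)"
    using le_fun[OF c funF_props(1)[OF c h(1,2) f] funF_props(1)[OF c h(3,4) f]]
      funF_props(2)[OF c h(1,2) f] funF_props(2)[OF c h(3,4) f] by simp
qed

end

context pmod
begin

context
  fixes T1 T2
  assumes c: "closed_ty (TSum T1 T2)"
begin

lemma sumF_inj1: "y \<in> D T1 \<Longrightarrow> sumF T1 T2 h1 h2 (m_inj1 M (TSum T1 T2) y) = m_inj1 M (TSum T1 T2) (h1 y)"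
proof -
  assume y: "y \<in> D T1"
  have "(THE y'. y' \<in> D T1 \<and> m_inj1 M (TSum T1 T2) y = m_inj1 M (TSum T1 T2) y') = y"
    by (rule the_equality) (use y inj1_eq[OF c] in auto)
  then show ?thesis unfolding sumF_def using y by auto
qed

lemma sumF_inj2: "y \<in> D T2 \<Longrightarrow> sumF T1 T2 h1 h2 (m_inj2 M (TSum T1 T2) y) = m_inj2 M (TSum T1 T2) (h2 y)"
proof -
  assume y: "y \<in> D T2"
  have "(THE y'. y' \<in> D T2 \<and> m_inj2 M (TSum T1 T2) y = m_inj2 M (TSum T1 T2) y') = y"
    by (rule the_equality) (use y inj2_eq[OF c] in auto)
  moreover have "\<not> (\<exists>y'\<in>D T1. m_inj2 M (TSum T1 T2) y = m_inj1 M (TSum T1 T2) y')"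
    using inj1_ne_inj2[OF c _ y] by metis
  ultimately show ?thesis unfolding sumF_def using y by auto
qed

lemma sumF_bot: "sumF T1 T2 h1 h2 (bottomM M (TSum T1 T2)) = bottomM M (TSum T1 T2)"
proof -
  have "\<not> (\<exists>y'\<in>D T1. bottomM M (TSum T1 T2) = m_inj1 M (TSum T1 T2) y')"
    using bot_ne_inj1[OF c] by metis
  moreover have "\<not> (\<exists>y'\<in>D T2. bottomM M (TSum T1 T2) = m_inj2 M (TSum T1 T2) y')"
    using bot_ne_inj2[OF c] by metis
  ultimately show ?thesis unfolding sumF_def by auto
qed

lemma sumF_dom:
  assumes h1: "sc T1 h1" and h2: "sc T2 h2" and x: "x \<in> D (TSum T1 T2)"
  shows "sumF T1 T2 h1 h2 x \<in> D (TSum T1 T2)"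
  using sum_cases[OF c x]
proof cases
  case 1 then show ?thesis using sumF_bot bot_dom[OF c] by simp
next
  case (2 y) then show ?thesis using sumF_inj1 inj1_dom[OF c sc_dom[OF h1]] by simp
next
  case (3 y) then show ?thesis using sumF_inj2 inj2_dom[OF c sc_dom[OF h2]] by simp
qed

lemma sumF_mono:
  assumes h1: "sc T1 h1" and h2: "sc T2 h2" and x: "x \<in> D (TSum T1 T2)" and y: "y \<in> D (TSum T1 T2)"
    and le: "R (TSum T1 T2) x y"
  shows "R (TSum T1 T2) (sumF T1 T2 h1 h2 x) (sumF T1 T2 h1 h2 y)"
  using sum_cases[OF c x]
proof cases
  case 1 then show ?thesis using sumF_bot bot_le[OF c sumF_dom[OF h1 h2 y]] by simp
next
  case (2 x')
  then obtain y' where y': "y' \<in> D T1" "y = m_inj1 M (TSum T1 T2) y'" "R T1 x' y'" using above_inj1[OF c _ y] le by blast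
  then have "R T1 (h1 x') (h1 y')" using sc_mono[OF h1] 2 by auto
  then show ?thesis using 2 y' sumF_inj1 inj1_le[OF c sc_dom[OF h1] sc_dom[OF h1]] by simp
next
  case (3 x')
  then obtain y' where y': "y' \<in> D T2" "y = m_inj2 M (TSum T1 T2) y'" "R T2 x' y'" using above_inj2[OF c _ y] le by blast
  then have "R T2 (h2 x') (h2 y')" using sc_mono[OF h2] 3 by auto
  then show ?thesis using 3 y' sumF_inj2 inj2_le[OF c sc_dom[OF h2] sc_dom[OF h2]] by simp
qed

lemma sumF_sc:
  assumes h1: "sc T1 h1" and h2: "sc T2 h2"
  shows "sc (TSum T1 T2) (sumF T1 T2 h1 h2)"
  unfolding sc_def scott_cont_def
proof (intro conjI allI impI ballI)
  let ?T = "TSum T1 T2" and ?F = "sumF T1 T2 h1 h2" and ?i1 = "m_inj1 M (TSum T1 T2)" and ?i2 = "m_inj2 M (TSum T1 T2)"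
  have cs: "closed_ty T1" "closed_ty T2" using c by auto
  show "?F x \<in> D ?T" if "x \<in> D ?T" for x using sumF_dom[OF h1 h2 that] .
  show "R ?T (?F x) (?F y)" if "x \<in> D ?T" "y \<in> D ?T" "R ?T x y" for x y using sumF_mono[OF h1 h2 that] .
  fix S x assume a: "directed_in (D ?T) (R ?T) S \<and> is_lub (D ?T) (R ?T) S x"
  have SD: "S \<subseteq> D ?T" and xD: "x \<in> D ?T" using a unfolding directed_in_def is_lub_def by auto
  have ub: "R ?T w (?F x)" if "w \<in> ?F ` S" for w using that sumF_mono[OF h1 h2] SD xD a unfolding is_lub_def by auto
  show "is_lub (D ?T) (R ?T) (?F ` S) (?F x)"
    using sum_cases[OF c xD]
  proof cases
    case 1
    then have "S = {bottomM M ?T}" using sum_lub_bot[OF c] a by blast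
    then have "?F ` S = {?F x}" using 1 by simp
    then show ?thesis unfolding is_lub_def using sumF_dom[OF h1 h2 xD] refl[OF c] by auto
  next
    case (2 x')
    let ?S = "{y \<in> D T1. ?i1 y \<in> S}"
    have d: "directed_in (D T1) (R T1) ?S" and l: "is_lub (D T1) (R T1) ?S x'" and sub: "S \<subseteq> insert (bottomM M ?T) (?i1 ` ?S)"
      using sum_lub_inj1[OF c _ 2(1)] a 2(2) by auto
    have lh: "is_lub (D T1) (R T1) (h1 ` ?S) (h1 x')" using sc_lub[OF h1 d l] .
    obtain y0 where y0: "y0 \<in> ?S" using d unfolding directed_in_def by auto
    show ?thesis unfolding is_lub_def
    proof (intro conjI ballI impI)
      show "?F x \<in> D ?T" using sumF_dom[OF h1 h2 xD] .
      show "R ?T w (?F x)" if "w \<in> ?F ` S" for w using ub[OF that] .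
      fix z assume z: "z \<in> D ?T" "\<forall>w\<in>?F ` S. R ?T w z"
      have "R ?T (?i1 (h1 y0)) z" using z y0 sumF_inj1[of y0] by force
      then obtain z' where z': "z' \<in> D T1" "z = ?i1 z'" using above_inj1[OF c sc_dom[OF h1] z(1)] y0 by blast
      have "\<forall>w\<in>h1 ` ?S. R T1 w z'"
      proof
        fix w assume "w \<in> h1 ` ?S"
        then obtain y where y: "y \<in> ?S" "w = h1 y" by auto
        then have "R ?T (?F (?i1 y)) z" using z by auto
        then show "R T1 w z'" using y sumF_inj1[of y] z' inj1_le[OF c sc_dom[OF h1] z'(1)] by auto
      qed
      then have "R T1 (h1 x') z'" using lh z'(1) unfolding is_lub_def by blast
      then show "R ?T (?F x) z" using 2 sumF_inj1 z' inj1_le[OF c sc_dom[OF h1] z'(1)] by simp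
    qed
  next
    case (3 x')
    let ?S = "{y \<in> D T2. ?i2 y \<in> S}"
    have d: "directed_in (D T2) (R T2) ?S" and l: "is_lub (D T2) (R T2) ?S x'" and sub: "S \<subseteq> insert (bottomM M ?T) (?i2 ` ?S)"
      using sum_lub_inj2[OF c _ 3(1)] a 3(2) by auto
    have lh: "is_lub (D T2) (R T2) (h2 ` ?S) (h2 x')" using sc_lub[OF h2 d l] .
    obtain y0 where y0: "y0 \<in> ?S" using d unfolding directed_in_def by auto
    show ?thesis unfolding is_lub_def
    proof (intro conjI ballI impI)
      show "?F x \<in> D ?T" using sumF_dom[OF h1 h2 xD] .
      show "R ?T w (?F x)" if "w \<in> ?F ` S" for w using ub[OF that] .
      fix z assume z: "z \<in> D ?T" "\<forall>w\<in>?F ` S. R ?T w z"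
      have "R ?T (?i2 (h2 y0)) z" using z y0 sumF_inj2[of y0] by force
      then obtain z' where z': "z' \<in> D T2" "z = ?i2 z'" using above_inj2[OF c sc_dom[OF h2] z(1)] y0 by blast
      have "\<forall>w\<in>h2 ` ?S. R T2 w z'"
      proof
        fix w assume "w \<in> h2 ` ?S"
        then obtain y where y: "y \<in> ?S" "w = h2 y" by auto
        then have "R ?T (?F (?i2 y)) z" using z by auto
        then show "R T2 w z'" using y sumF_inj2[of y] z' inj2_le[OF c sc_dom[OF h2] z'(1)] by auto
      qed
      then have "R T2 (h2 x') z'" using lh z'(1) unfolding is_lub_def by blast
      then show "R ?T (?F x) z" using 3 sumF_inj2 z' inj2_le[OF c sc_dom[OF h2] z'(1)] by simp
    qed
  qed
qed

lemma sumF_le: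
  assumes h: "sc T1 h1" "sc T2 h2" "sc T1 h1'" "sc T2 h2'"
    and le: "ptle T1 h1 h1'" "ptle T2 h2 h2'"
  shows "ptle (TSum T1 T2) (sumF T1 T2 h1 h2) (sumF T1 T2 h1' h2')"
  unfolding ptle_def
proof
  fix x assume x: "x \<in> D (TSum T1 T2)"
  show "R (TSum T1 T2) (sumF T1 T2 h1 h2 x) (sumF T1 T2 h1' h2' x)"
    using sum_cases[OF c x]
  proof cases
    case 1 then show ?thesis using sumF_bot refl[OF c bot_dom[OF c]] by simp
  next
    case (2 y) then show ?thesis using sumF_inj1 inj1_le[OF c sc_dom[OF h(1)] sc_dom[OF h(3)]] le unfolding ptle_def by simp
  next
    case (3 y) then show ?thesis using sumF_inj2 inj2_le[OF c sc_dom[OF h(2)] sc_dom[OF h(4)]] le unfolding ptle_def by simp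
  qed
qed

end

end

context pmod
begin

definition good where "good \<rho> t \<longleftrightarrow> (\<forall>b\<in>fv t. closed_ty (fst (\<rho> b)) \<and> sc (fst (\<rho> b)) (snd (\<rho> b)))"
definition envle where "envle \<rho> \<rho>' t \<longleftrightarrow> (\<forall>b\<in>fv t. fst (\<rho>' b) = fst (\<rho> b) \<and> ptle (fst (\<rho> b)) (snd (\<rho> b)) (snd (\<rho>' b)))"

lemma act_prod: "act M \<rho> (TProd t s) = prodF (csubst (fst \<circ> \<rho>) t) (csubst (fst \<circ> \<rho>) s) (act M \<rho> t) (act M \<rho> s)"
  by (simp add: prodF_def Let_def)

lemma act_fun: "act M \<rho> (TFun t s) = funF (csubst (fst \<circ> \<rho>) t) (csubst (fst \<circ> \<rho>) s) (act M \<rho> t) (act M \<rho> s)"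
  by (simp add: funF_def Let_def)

lemma act_sum: "act M \<rho> (TSum t s) = sumF (csubst (fst \<circ> \<rho>) t) (csubst (fst \<circ> \<rho>) s) (act M \<rho> t) (act M \<rho> s)"
  by (simp add: sumF_def Let_def)

lemma act_mu: "act M \<rho> (TMu b t) = lubfn (TMu b (csubst ((fst \<circ> \<rho>)(b := TVar b)) t))
   (\<lambda>g. act M (\<rho>(b := (TMu b (csubst ((fst \<circ> \<rho>)(b := TVar b)) t), g))) t)"
  by (simp add: lubfn_def iter_def Let_def)

lemma good_sub: "good \<rho> t \<Longrightarrow> fv s \<subseteq> fv t \<Longrightarrow> good \<rho> s"
  unfolding good_def by blast
lemma envle_sub: "envle \<rho> \<rho>' t \<Longrightarrow> fv s \<subseteq> fv t \<Longrightarrow> envle \<rho> \<rho>' s"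
  unfolding envle_def by blast

lemma good_closed: "good \<rho> t \<Longrightarrow> closed_ty (csubst (fst \<circ> \<rho>) t)"
  unfolding good_def by (rule csubst_closed_ty) auto

lemma envle_cs: "envle \<rho> \<rho>' t \<Longrightarrow> csubst (fst \<circ> \<rho>') t = csubst (fst \<circ> \<rho>) t"
  unfolding envle_def by (rule csubst_cong) auto

lemma mu_types:
  assumes g: "good \<rho> (TMu b t)"
  defines "T' \<equiv> TMu b (csubst ((fst \<circ> \<rho>)(b := TVar b)) t)"
  shows "closed_ty T'" "csubst (fst \<circ> \<rho>(b := (T', h))) t = subst (csubst ((fst \<circ> \<rho>)(b := TVar b)) t) b T'"
    "good (\<rho>(b := (T', h))) t \<longleftrightarrow> sc T' h \<or> b \<notin> fv t"
proof -
  show cT: "closed_ty T'" using good_closed[OF g] unfolding T'_def by simp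
  have "fst \<circ> \<rho>(b := (T', h)) = (fst \<circ> \<rho>)(b := T')" by (auto simp: fun_eq_iff)
  moreover have "subst (csubst ((fst \<circ> \<rho>)(b := TVar b)) t) b T' = csubst ((fst \<circ> \<rho>)(b := T')) t"
    by (rule subst_csubst) (use g in \<open>auto simp: good_def closed_ty_def\<close>)
  ultimately show "csubst (fst \<circ> \<rho>(b := (T', h))) t = subst (csubst ((fst \<circ> \<rho>)(b := TVar b)) t) b T'" by simp
  show "good (\<rho>(b := (T', h))) t \<longleftrightarrow> sc T' h \<or> b \<notin> fv t"
    using g cT unfolding good_def by auto
qed

lemma L12:
  "good \<rho> t \<Longrightarrow> sc (csubst (fst \<circ> \<rho>) t) (act M \<rho> t) \<and>
     (\<forall>\<rho>'. good \<rho>' t \<longrightarrow> envle \<rho> \<rho>' t \<longrightarrow> ptle (csubst (fst \<circ> \<rho>) t) (act M \<rho> t) (act M \<rho>' t))"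
proof (induction t arbitrary: \<rho>)
  case TUnit
  have "sc TUnit id" unfolding sc_def by (rule scott_cont_id)
  then show ?case using ptle_refl[OF closed_simps(1)] by (simp add: id_def)
next
  case (TVar b)
  then show ?case unfolding good_def envle_def by auto
next
  case (TProd t s)
  let ?T1 = "csubst (fst \<circ> \<rho>) t" and ?T2 = "csubst (fst \<circ> \<rho>) s"
  have c: "closed_ty (TProd ?T1 ?T2)" using good_closed[OF TProd.prems] by simp
  have g: "good \<rho> t" "good \<rho> s" using good_sub[OF TProd.prems] by auto
  have IH1: "sc ?T1 (act M \<rho> t)" using conjunct1[OF TProd.IH(1)[OF g(1)]] .
  have IH2: "sc ?T2 (act M \<rho> s)" using conjunct1[OF TProd.IH(2)[OF g(2)]] .
  show ?case
  proof (intro conjI allI impI)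
    show "sc (csubst (fst \<circ> \<rho>) (TProd t s)) (act M \<rho> (TProd t s))"
      using prodF_sc[OF c IH1 IH2] unfolding act_prod by simp
    fix \<rho>' assume g': "good \<rho>' (TProd t s)" and le: "envle \<rho> \<rho>' (TProd t s)"
    have g2: "good \<rho>' t" "good \<rho>' s" using good_sub[OF g'] by auto
    have le2: "envle \<rho> \<rho>' t" "envle \<rho> \<rho>' s" using envle_sub[OF le] by auto
    have e: "csubst (fst \<circ> \<rho>') t = ?T1" "csubst (fst \<circ> \<rho>') s = ?T2" using envle_cs[OF le2(1)] envle_cs[OF le2(2)] by auto
    have IH1': "sc ?T1 (act M \<rho>' t)" using conjunct1[OF TProd.IH(1)[OF g2(1)]] by (simp only: e)
    have IH2': "sc ?T2 (act M \<rho>' s)" using conjunct1[OF TProd.IH(2)[OF g2(2)]] by (simp only: e)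
    have "ptle ?T1 (act M \<rho> t) (act M \<rho>' t)" using conjunct2[OF TProd.IH(1)[OF g(1)]] g2(1) le2(1) by blast
    moreover have "ptle ?T2 (act M \<rho> s) (act M \<rho>' s)" using conjunct2[OF TProd.IH(2)[OF g(2)]] g2(2) le2(2) by blast
    ultimately show "ptle (csubst (fst \<circ> \<rho>) (TProd t s)) (act M \<rho> (TProd t s)) (act M \<rho>' (TProd t s))"
      using prodF_le[OF c IH1 IH2 IH1' IH2'] unfolding act_prod e by simp
  qed
next
  case (TFun t s)
  let ?T1 = "csubst (fst \<circ> \<rho>) t" and ?T2 = "csubst (fst \<circ> \<rho>) s"
  have c: "closed_ty (TFun ?T1 ?T2)" using good_closed[OF TFun.prems] by simp
  have g: "good \<rho> t" "good \<rho> s" using good_sub[OF TFun.prems] by auto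
  have IH1: "sc ?T1 (act M \<rho> t)" using conjunct1[OF TFun.IH(1)[OF g(1)]] .
  have IH2: "sc ?T2 (act M \<rho> s)" using conjunct1[OF TFun.IH(2)[OF g(2)]] .
  show ?case
  proof (intro conjI allI impI)
    show "sc (csubst (fst \<circ> \<rho>) (TFun t s)) (act M \<rho> (TFun t s))"
      using funF_sc[OF c IH1 IH2] unfolding act_fun by simp
    fix \<rho>' assume g': "good \<rho>' (TFun t s)" and le: "envle \<rho> \<rho>' (TFun t s)"
    have g2: "good \<rho>' t" "good \<rho>' s" using good_sub[OF g'] by auto
    have le2: "envle \<rho> \<rho>' t" "envle \<rho> \<rho>' s" using envle_sub[OF le] by auto
    have e: "csubst (fst \<circ> \<rho>') t = ?T1" "csubst (fst \<circ> \<rho>') s = ?T2" using envle_cs[OF le2(1)] envle_cs[OF le2(2)] by auto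
    have IH1': "sc ?T1 (act M \<rho>' t)" using conjunct1[OF TFun.IH(1)[OF g2(1)]] by (simp only: e)
    have IH2': "sc ?T2 (act M \<rho>' s)" using conjunct1[OF TFun.IH(2)[OF g2(2)]] by (simp only: e)
    have "ptle ?T1 (act M \<rho> t) (act M \<rho>' t)" using conjunct2[OF TFun.IH(1)[OF g(1)]] g2(1) le2(1) by blast
    moreover have "ptle ?T2 (act M \<rho> s) (act M \<rho>' s)" using conjunct2[OF TFun.IH(2)[OF g(2)]] g2(2) le2(2) by blast
    ultimately show "ptle (csubst (fst \<circ> \<rho>) (TFun t s)) (act M \<rho> (TFun t s)) (act M \<rho>' (TFun t s))"
      using funF_le[OF c IH1 IH2 IH1' IH2'] unfolding act_fun e by simp
  qed
next
  case (TSum t s)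
  let ?T1 = "csubst (fst \<circ> \<rho>) t" and ?T2 = "csubst (fst \<circ> \<rho>) s"
  have c: "closed_ty (TSum ?T1 ?T2)" using good_closed[OF TSum.prems] by simp
  have g: "good \<rho> t" "good \<rho> s" using good_sub[OF TSum.prems] by auto
  have IH1: "sc ?T1 (act M \<rho> t)" using conjunct1[OF TSum.IH(1)[OF g(1)]] .
  have IH2: "sc ?T2 (act M \<rho> s)" using conjunct1[OF TSum.IH(2)[OF g(2)]] .
  show ?case
  proof (intro conjI allI impI)
    show "sc (csubst (fst \<circ> \<rho>) (TSum t s)) (act M \<rho> (TSum t s))"
      using sumF_sc[OF c IH1 IH2] unfolding act_sum by simp
    fix \<rho>' assume g': "good \<rho>' (TSum t s)" and le: "envle \<rho> \<rho>' (TSum t s)"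
    have g2: "good \<rho>' t" "good \<rho>' s" using good_sub[OF g'] by auto
    have le2: "envle \<rho> \<rho>' t" "envle \<rho> \<rho>' s" using envle_sub[OF le] by auto
    have e: "csubst (fst \<circ> \<rho>') t = ?T1" "csubst (fst \<circ> \<rho>') s = ?T2" using envle_cs[OF le2(1)] envle_cs[OF le2(2)] by auto
    have IH1': "sc ?T1 (act M \<rho>' t)" using conjunct1[OF TSum.IH(1)[OF g2(1)]] by (simp only: e)
    have IH2': "sc ?T2 (act M \<rho>' s)" using conjunct1[OF TSum.IH(2)[OF g2(2)]] by (simp only: e)
    have "ptle ?T1 (act M \<rho> t) (act M \<rho>' t)" using conjunct2[OF TSum.IH(1)[OF g(1)]] g2(1) le2(1) by blast
    moreover have "ptle ?T2 (act M \<rho> s) (act M \<rho>' s)" using conjunct2[OF TSum.IH(2)[OF g(2)]] g2(2) le2(2) by blast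
    ultimately show "ptle (csubst (fst \<circ> \<rho>) (TSum t s)) (act M \<rho> (TSum t s)) (act M \<rho>' (TSum t s))"
      using sumF_le[OF c IH1 IH2 IH1' IH2'] unfolding act_sum e by simp
  qed
next
  case (TMu b t)
  define t' where "t' = csubst ((fst \<circ> \<rho>)(b := TVar b)) t"
  define T' where "T' = TMu b t'"
  define A where "A g = act M (\<rho>(b := (T', g))) t" for g
  have cT: "closed_ty T'" using mu_types(1)[OF TMu.prems] unfolding T'_def t'_def .
  have csT: "csubst (fst \<circ> \<rho>) (TMu b t) = T'" unfolding T'_def t'_def by simp
  have U: "csubst (fst \<circ> \<rho>(b := (T', h))) t = subst t' b T'" for h
    using mu_types(2)[OF TMu.prems] unfolding T'_def t'_def .
  have gd: "good (\<rho>(b := (T', h))) t" if "sc T' h" for h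
    using mu_types(3)[OF TMu.prems] that unfolding T'_def t'_def by auto
  have Asc: "sc (subst t' b T') (A g)" if "sc T' g" for g
    using TMu.IH[OF gd[OF that]] U unfolding A_def by metis
  have Ale: "ptle (subst t' b T') (A g) (A g')" if "sc T' g" "sc T' g'" "ptle T' g g'" for g g'
  proof -
    have "envle (\<rho>(b := (T', g))) (\<rho>(b := (T', g'))) t"
      unfolding envle_def using that TMu.prems ptle_refl unfolding good_def by auto
    then show ?thesis using TMu.IH[OF gd[OF that(1)]] gd[OF that(2)] U unfolding A_def by metis
  qed
  have actmu: "act M \<rho> (TMu b t) = lubfn T' A" unfolding A_def T'_def t'_def by (rule act_mu)
  show ?case
  proof (intro conjI allI impI)
    show "sc (csubst (fst \<circ> \<rho>) (TMu b t)) (act M \<rho> (TMu b t))"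
      using lubfn_sc[OF cT[unfolded T'_def] Asc[unfolded T'_def] Ale[unfolded T'_def]] csT actmu unfolding T'_def by simp
    fix \<rho>' assume g': "good \<rho>' (TMu b t)" and le: "envle \<rho> \<rho>' (TMu b t)"
    have t'eq: "csubst ((fst \<circ> \<rho>')(b := TVar b)) t = t'"
      unfolding t'_def by (rule csubst_cong) (use le in \<open>auto simp: envle_def\<close>)
    define A' where "A' g = act M (\<rho>'(b := (T', g))) t" for g
    have U': "csubst (fst \<circ> \<rho>'(b := (T', h))) t = subst t' b T'" for h
      using mu_types(2)[OF g'] t'eq unfolding T'_def by simp
    have gd': "good (\<rho>'(b := (T', h))) t" if "sc T' h" for h
      using mu_types(3)[OF g'] that t'eq unfolding T'_def by auto
    have Asc': "sc (subst t' b T') (A' g)" if "sc T' g" for g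
      using TMu.IH[OF gd'[OF that]] U' unfolding A'_def by metis
    have Ale': "ptle (subst t' b T') (A' g) (A' g')" if "sc T' g" "sc T' g'" "ptle T' g g'" for g g'
    proof -
      have "envle (\<rho>'(b := (T', g))) (\<rho>'(b := (T', g'))) t"
        unfolding envle_def using that g' ptle_refl unfolding good_def by auto
      then show ?thesis using TMu.IH[OF gd'[OF that(1)]] gd'[OF that(2)] U' unfolding A'_def by metis
    qed
    have Ale2: "ptle (subst t' b T') (A g) (A' g')" if "sc T' g" "sc T' g'" "ptle T' g g'" for g g'
    proof -
      have "envle (\<rho>(b := (T', g))) (\<rho>'(b := (T', g'))) t"
        unfolding envle_def using that le unfolding envle_def by auto
      then show ?thesis using TMu.IH[OF gd[OF that(1)]] gd'[OF that(2)] U unfolding A_def A'_def by metis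
    qed
    have actmu': "act M \<rho>' (TMu b t) = lubfn T' A'" unfolding A'_def T'_def using act_mu[of \<rho>' b t] t'eq by simp
    show "ptle (csubst (fst \<circ> \<rho>) (TMu b t)) (act M \<rho> (TMu b t)) (act M \<rho>' (TMu b t))"
      using lubfn_le2[OF cT[unfolded T'_def] Asc[unfolded T'_def] Asc'[unfolded T'_def] Ale[unfolded T'_def]
          Ale'[unfolded T'_def] Ale2[unfolded T'_def]] csT actmu actmu' unfolding T'_def by simp
  qed
qed

end

lemma csubst_TVar: "csubst TVar t = t"
proof (induction t)
  case (TMu b t)
  have "TVar(b := TVar b) = TVar" by auto
  then show ?case using TMu by simp
qed auto

lemma csubst_closed_id: "closed_ty t \<Longrightarrow> csubst \<sigma> t = t"
  using csubst_closed[of t \<sigma> TVar] csubst_TVar by simp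

context pmod
begin

definition sep where "sep T g \<longleftrightarrow> (\<forall>x\<in>D T. \<forall>z\<in>D T. \<not> R T (g x) z \<longrightarrow>
   (\<exists>\<delta>. wf_form T \<delta> \<and> x \<in> sem M T \<delta> \<and> z \<notin> sem M T \<delta>))"

definition defbelow where "defbelow T x = {d \<in> D T. R T d x \<and> (\<exists>\<psi>. wf_form T \<psi> \<and> sem M T \<psi> = upset M T d)}"

lemma defbelow_dir:
  assumes c: "closed_ty T" and x: "x \<in> D T"
  shows "directed_in (D T) (R T) (defbelow T x)"
  unfolding directed_in_def
proof (intro conjI ballI)
  show "defbelow T x \<subseteq> D T" unfolding defbelow_def by auto
  have "bottomM M T \<in> defbelow T x" unfolding defbelow_def
    using bot[OF c] x upset_bot[OF c] by (auto intro!: exI[of _ FTrue])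
  then show "defbelow T x \<noteq> {}" by auto
  fix d1 d2 assume d: "d1 \<in> defbelow T x" "d2 \<in> defbelow T x"
  then obtain \<psi>1 \<psi>2 where p: "wf_form T \<psi>1" "sem M T \<psi>1 = upset M T d1" "wf_form T \<psi>2" "sem M T \<psi>2 = upset M T d2"
    and dD: "d1 \<in> D T" "d2 \<in> D T" "R T d1 x" "R T d2 x" unfolding defbelow_def by blast
  have wfa: "wf_form T (FAnd \<psi>1 \<psi>2)" using p by simp
  have xin: "x \<in> sem M T (FAnd \<psi>1 \<psi>2)" using p dD x unfolding upset_def by simp
  obtain e where e: "compact_el (D T) (R T) e" "sem M T (FAnd \<psi>1 \<psi>2) = upset M T e"
    using part1[OF c wfa] xin by blast
  have eD: "e \<in> D T" using compact_dom[OF e(1)] .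
  have "e \<in> sem M T (FAnd \<psi>1 \<psi>2)" using e upset_self[OF c eD] by simp
  then have "R T d1 e" "R T d2 e" using p unfolding upset_def by auto
  moreover have "R T e x" using xin e unfolding upset_def by auto
  ultimately show "\<exists>z\<in>defbelow T x. R T d1 z \<and> R T d2 z"
    using eD wfa e(2) unfolding defbelow_def by blast
qed

lemma approx:
  assumes c: "closed_ty T" and s: "sep T h" and x: "x \<in> D T"
  shows "R T (h x) (lubM M T (defbelow T x))" "is_lub (D T) (R T) (defbelow T x) (lubM M T (defbelow T x))"
proof -
  let ?L = "lubM M T (defbelow T x)"
  show l: "is_lub (D T) (R T) (defbelow T x) ?L" using lubM[OF c defbelow_dir[OF c x]] .
  have LD: "?L \<in> D T" using lub_dom[OF l] .
  show "R T (h x) ?L"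
  proof (rule ccontr)
    assume "\<not> R T (h x) ?L"
    then obtain \<psi> where \<psi>: "wf_form T \<psi>" "x \<in> sem M T \<psi>" "?L \<notin> sem M T \<psi>" using s x LD unfolding sep_def by blast
    obtain d where d: "compact_el (D T) (R T) d" "sem M T \<psi> = upset M T d" using part1[OF c \<psi>(1)] \<psi>(2) by blast
    have "d \<in> defbelow T x" using d \<psi> compact_dom[OF d(1)] unfolding defbelow_def upset_def by auto
    then have "R T d ?L" using l unfolding is_lub_def by auto
    then have "?L \<in> sem M T \<psi>" using d LD unfolding upset_def by auto
    then show False using \<psi>(3) by simp
  qed
qed

lemma sep_unit: "sep TUnit id"
  unfolding sep_def
proof (intro ballI impI)
  fix x z assume xz: "x \<in> D TUnit" "z \<in> D TUnit" "\<not> R TUnit (id x) z"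
  have "x = m_top M" using xz bot_le[OF closed_simps(1)] unit(1) by auto
  moreover have "z = bottomM M TUnit" using xz refl[OF closed_simps(1)] unit(1) calculation by auto
  ultimately show "\<exists>\<delta>. wf_form TUnit \<delta> \<and> x \<in> sem M TUnit \<delta> \<and> z \<notin> sem M TUnit \<delta>"
    using unit(2) by (intro exI[of _ FUnit]) auto
qed


lemma sep_prodF:
  assumes c: "closed_ty (TProd T1 T2)" and h: "sc T1 h1" "sc T2 h2" and sp: "sep T1 h1" "sep T2 h2"
  shows "sep (TProd T1 T2) (prodF T1 T2 h1 h2)"
  unfolding sep_def
proof (intro ballI impI)
  let ?T = "TProd T1 T2" and ?p1 = "m_pi1 M (TProd T1 T2)" and ?p2 = "m_pi2 M (TProd T1 T2)"
  fix x z assume x: "x \<in> D ?T" and z: "z \<in> D ?T" and nle: "\<not> R ?T (prodF T1 T2 h1 h2 x) z"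
  have "\<not> R T1 (h1 (?p1 x)) (?p1 z) \<or> \<not> R T2 (h2 (?p2 x)) (?p2 z)"
    using nle le_prod[OF c prodF_props(1)[OF c h x] z] prodF_props[OF c h x] by auto
  then show "\<exists>\<delta>. wf_form ?T \<delta> \<and> x \<in> sem M ?T \<delta> \<and> z \<notin> sem M ?T \<delta>"
  proof
    assume "\<not> R T1 (h1 (?p1 x)) (?p1 z)"
    then obtain \<delta> where "wf_form T1 \<delta>" "?p1 x \<in> sem M T1 \<delta>" "?p1 z \<notin> sem M T1 \<delta>"
      using sp(1) pi_dom[OF c x] pi_dom[OF c z] unfolding sep_def by blast
    then show ?thesis using x by (intro exI[of _ "FPi1 \<delta>"]) auto
  next
    assume "\<not> R T2 (h2 (?p2 x)) (?p2 z)"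
    then obtain \<delta> where "wf_form T2 \<delta>" "?p2 x \<in> sem M T2 \<delta>" "?p2 z \<notin> sem M T2 \<delta>"
      using sp(2) pi_dom[OF c x] pi_dom[OF c z] unfolding sep_def by blast
    then show ?thesis using x by (intro exI[of _ "FPi2 \<delta>"]) auto
  qed
qed

lemma sep_sumF:
  assumes c: "closed_ty (TSum T1 T2)" and h: "sc T1 h1" "sc T2 h2" and sp: "sep T1 h1" "sep T2 h2"
  shows "sep (TSum T1 T2) (sumF T1 T2 h1 h2)"
  unfolding sep_def
proof (intro ballI impI)
  let ?T = "TSum T1 T2" and ?i1 = "m_inj1 M (TSum T1 T2)" and ?i2 = "m_inj2 M (TSum T1 T2)"
  have cs: "closed_ty T1" "closed_ty T2" using c by auto
  fix x z assume x: "x \<in> D ?T" and z: "z \<in> D ?T" and nle: "\<not> R ?T (sumF T1 T2 h1 h2 x) z"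
  show "\<exists>\<delta>. wf_form ?T \<delta> \<and> x \<in> sem M ?T \<delta> \<and> z \<notin> sem M ?T \<delta>"
    using sum_cases[OF c x]
  proof cases
    case 1 then show ?thesis using nle sumF_bot[OF c] bot_le[OF c z] by simp
  next
    case (2 y)
    have nle': "\<not> R ?T (?i1 (h1 y)) z" using nle 2 sumF_inj1[OF c] by simp
    show ?thesis using sum_cases[OF c z]
    proof cases
      case 1
      have "z \<notin> ?i1 ` D T1"
      proof
        assume "z \<in> ?i1 ` D T1"
        then obtain v where "v \<in> D T1" "z = ?i1 v" by auto
        then show False using 1 bot_ne_inj1[OF c] by metis
      qed
      then show ?thesis using 2 by (intro exI[of _ "FInj1 FTrue"]) auto
    next
      case (2 w)
      have "\<not> R T1 (h1 y) w" using nle' 2 inj1_le[OF c sc_dom[OF h(1)] ] \<open>y \<in> D T1\<close> by auto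
      then obtain \<delta> where d: "wf_form T1 \<delta>" "y \<in> sem M T1 \<delta>" "w \<notin> sem M T1 \<delta>"
        using sp(1) \<open>y \<in> D T1\<close> 2 unfolding sep_def by blast
      have "z \<notin> ?i1 ` sem M T1 \<delta>"
      proof
        assume "z \<in> ?i1 ` sem M T1 \<delta>"
        then obtain v where v: "v \<in> sem M T1 \<delta>" "z = ?i1 v" by auto
        then have "v \<in> D T1" using sem_sub[OF cs(1) d(1)] by auto
        then have "v = w" using v 2 inj1_eq[OF c] by auto
        then show False using v d by simp
      qed
      then show ?thesis using d \<open>x = ?i1 y\<close> by (intro exI[of _ "FInj1 \<delta>"]) auto
    next
      case (3 w)
      have "z \<notin> ?i1 ` D T1"
      proof
        assume "z \<in> ?i1 ` D T1"
        then obtain v where "v \<in> D T1" "z = ?i1 v" by auto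
        then show False using 3 inj1_ne_inj2[OF c] by metis
      qed
      then show ?thesis using \<open>x = ?i1 y\<close> \<open>y \<in> D T1\<close> by (intro exI[of _ "FInj1 FTrue"]) auto
    qed
  next
    case (3 y)
    have nle': "\<not> R ?T (?i2 (h2 y)) z" using nle 3 sumF_inj2[OF c] by simp
    show ?thesis using sum_cases[OF c z]
    proof cases
      case 1
      have "z \<notin> ?i2 ` D T2"
      proof
        assume "z \<in> ?i2 ` D T2"
        then obtain v where "v \<in> D T2" "z = ?i2 v" by auto
        then show False using 1 bot_ne_inj2[OF c] by metis
      qed
      then show ?thesis using 3 by (intro exI[of _ "FInj2 FTrue"]) auto
    next
      case (2 w)
      have "z \<notin> ?i2 ` D T2"
      proof
        assume "z \<in> ?i2 ` D T2"
        then obtain v where "v \<in> D T2" "z = ?i2 v" by auto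
        then show False using 2 inj1_ne_inj2[OF c] by metis
      qed
      then show ?thesis using \<open>x = ?i2 y\<close> \<open>y \<in> D T2\<close> by (intro exI[of _ "FInj2 FTrue"]) auto
    next
      case (3 w)
      have "\<not> R T2 (h2 y) w" using nle' 3 inj2_le[OF c sc_dom[OF h(2)] ] \<open>y \<in> D T2\<close> by auto
      then obtain \<delta> where d: "wf_form T2 \<delta>" "y \<in> sem M T2 \<delta>" "w \<notin> sem M T2 \<delta>"
        using sp(2) \<open>y \<in> D T2\<close> 3 unfolding sep_def by blast
      have "z \<notin> ?i2 ` sem M T2 \<delta>"
      proof
        assume "z \<in> ?i2 ` sem M T2 \<delta>"
        then obtain v where v: "v \<in> sem M T2 \<delta>" "z = ?i2 v" by auto
        then have "v \<in> D T2" using sem_sub[OF cs(2) d(1)] by auto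
        then have "v = w" using v 3 inj2_eq[OF c] by auto
        then show False using v d by simp
      qed
      then show ?thesis using d \<open>x = ?i2 y\<close> by (intro exI[of _ "FInj2 \<delta>"]) auto
    qed
  qed
qed

lemma sep_funF:
  assumes c: "closed_ty (TFun T1 T2)" and h: "sc T1 h1" "sc T2 h2" and sp: "sep T1 h1" "sep T2 h2"
  shows "sep (TFun T1 T2) (funF T1 T2 h1 h2)"
  unfolding sep_def
proof (intro ballI impI)
  let ?T = "TFun T1 T2" and ?ap = "m_app M (TFun T1 T2)"
  have cs: "closed_ty T1" "closed_ty T2" using c by auto
  fix f g assume f: "f \<in> D ?T" and g: "g \<in> D ?T" and nle: "\<not> R ?T (funF T1 T2 h1 h2 f) g"
  obtain x where x: "x \<in> D T1" "\<not> R T2 (h2 (?ap f (h1 x))) (?ap g x)"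
    using nle le_fun[OF c funF_props(1)[OF c h f] g] funF_props(2)[OF c h f] by auto
  have hx: "h1 x \<in> D T1" using sc_dom[OF h(1) x(1)] .
  obtain \<delta> where d: "wf_form T2 \<delta>" "?ap f (h1 x) \<in> sem M T2 \<delta>" "?ap g x \<notin> sem M T2 \<delta>"
    using sp(2) x app_dom[OF c f hx] app_dom[OF c g x(1)] unfolding sep_def by blast
  obtain e where e: "compact_el (D T2) (R T2) e" "sem M T2 \<delta> = upset M T2 e" using part1[OF cs(2) d(1)] d(2) by blast
  let ?Dx = "defbelow T1 x" and ?L = "lubM M T1 (defbelow T1 x)"
  have hL: "R T1 (h1 x) ?L" and l: "is_lub (D T1) (R T1) ?Dx ?L" using approx[OF cs(1) sp(1) x(1)] by auto
  have dir: "directed_in (D T1) (R T1) ?Dx" using defbelow_dir[OF cs(1) x(1)] .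
  have LD: "?L \<in> D T1" using lub_dom[OF l] .
  have e1: "R T2 e (?ap f (h1 x))" using d(2) e unfolding upset_def by auto
  have "R T2 (?ap f (h1 x)) (?ap f ?L)" using app_mono[OF c f hx LD hL] .
  then have e2: "R T2 e (?ap f ?L)" using trans[OF cs(2) compact_dom[OF e(1)] app_dom[OF c f hx] app_dom[OF c f LD] e1] by simp
  have "\<exists>w\<in>?ap f ` ?Dx. R T2 e w"
    using e(1) app_lub[OF c f dir l] e2 directed_image[OF dir, of "?ap f" "D T2" "R T2"] app_dom[OF c f] app_mono[OF c f]
    unfolding compact_el_def by blast
  then obtain d0 where d0: "d0 \<in> ?Dx" "R T2 e (?ap f d0)" by blast
  then obtain \<psi> where \<psi>: "wf_form T1 \<psi>" "sem M T1 \<psi> = upset M T1 d0" and d0D: "d0 \<in> D T1" "R T1 d0 x"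
    unfolding defbelow_def by blast
  have "f \<in> sem M ?T (FImp \<psi> \<delta>)"
  proof -
    have "\<forall>y\<in>sem M T1 \<psi>. ?ap f y \<in> sem M T2 \<delta>"
    proof
      fix y assume "y \<in> sem M T1 \<psi>"
      then have y: "y \<in> D T1" "R T1 d0 y" using \<psi> unfolding upset_def by auto
      have "R T2 (?ap f d0) (?ap f y)" using app_mono[OF c f d0D(1) y] .
      then have "R T2 e (?ap f y)"
        using trans[OF cs(2) compact_dom[OF e(1)] app_dom[OF c f d0D(1)] app_dom[OF c f y(1)] d0(2)] by simp
      then show "?ap f y \<in> sem M T2 \<delta>" using e app_dom[OF c f y(1)] unfolding upset_def by auto
    qed
    then show ?thesis using f by simp
  qed
  moreover have "g \<notin> sem M ?T (FImp \<psi> \<delta>)"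
  proof -
    have "x \<in> sem M T1 \<psi>" using \<psi> d0D x unfolding upset_def by auto
    then show ?thesis using d(3) by auto
  qed
  moreover have "wf_form ?T (FImp \<psi> \<delta>)" using \<psi> d by simp
  ultimately show "\<exists>\<delta>. wf_form ?T \<delta> \<and> f \<in> sem M ?T \<delta> \<and> g \<notin> sem M ?T \<delta>" by blast
qed

lemma lubfn_sep:
  assumes c: "closed_ty (TMu a t0)"
    and Asc: "\<And>g. sc (TMu a t0) g \<Longrightarrow> sc (subst t0 a (TMu a t0)) (A g)"
    and Ale: "\<And>g g'. sc (TMu a t0) g \<Longrightarrow> sc (TMu a t0) g' \<Longrightarrow> ptle (TMu a t0) g g' \<Longrightarrow>
                  ptle (subst t0 a (TMu a t0)) (A g) (A g')"
    and Asep: "\<And>g. sc (TMu a t0) g \<Longrightarrow> sep (TMu a t0) g \<Longrightarrow> sep (subst t0 a (TMu a t0)) (A g)"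
  shows "sep (TMu a t0) (lubfn (TMu a t0) A)"
proof -
  let ?T = "TMu a t0" and ?U = "subst t0 a (TMu a t0)"
  have itsep: "sep ?T (iter ?T A n)" for n
  proof (induction n)
    case 0 then show ?case unfolding sep_def iter_0 using bot_le[OF c] by auto
  next
    case (Suc n)
    show ?case unfolding sep_def
    proof (intro ballI impI)
      fix x z assume x: "x \<in> D ?T" and z: "z \<in> D ?T" and nle: "\<not> R ?T (iter ?T A (Suc n) x) z"
      have ux: "m_unfold M ?T x \<in> D ?U" "m_unfold M ?T z \<in> D ?U" using unfold_dom[OF c x] unfold_dom[OF c z] by auto
      have sA: "sc ?U (A (iter ?T A n))" using Asc[OF iter_sc[where A=A, OF c Asc]] .
      have "\<not> R ?U (A (iter ?T A n) (m_unfold M ?T x)) (m_unfold M ?T z)"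
      proof
        assume "R ?U (A (iter ?T A n) (m_unfold M ?T x)) (m_unfold M ?T z)"
        then have "R ?T (m_fold M ?T (A (iter ?T A n) (m_unfold M ?T x))) (m_fold M ?T (m_unfold M ?T z))"
          using le_fold[OF c sc_dom[OF sA ux(1)] ux(2)] by simp
        then show False using nle iter_Suc_app[where A=A, OF c Asc x] fold_unfold[OF c z] by simp
      qed
      then obtain \<delta> where d: "wf_form ?U \<delta>" "m_unfold M ?T x \<in> sem M ?U \<delta>" "m_unfold M ?T z \<notin> sem M ?U \<delta>"
        using Asep[OF iter_sc[where A=A, OF c Asc] Suc] ux unfolding sep_def by blast
      then show "\<exists>\<delta>. wf_form ?T \<delta> \<and> x \<in> sem M ?T \<delta> \<and> z \<notin> sem M ?T \<delta>"
        using x by (intro exI[of _ "FFold \<delta>"]) auto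
    qed
  qed
  show ?thesis unfolding sep_def
  proof (intro ballI impI)
    fix x z assume x: "x \<in> D ?T" and z: "z \<in> D ?T" and nle: "\<not> R ?T (lubfn ?T A x) z"
    have l: "is_lub (D ?T) (R ?T) {iter ?T A n x | n. True} (lubfn ?T A x)" using lubfn_lub[where A=A, OF c Asc Ale x] .
    obtain n where "\<not> R ?T (iter ?T A n x) z" using l z nle unfolding is_lub_def by blast
    then show "\<exists>\<delta>. wf_form ?T \<delta> \<and> x \<in> sem M ?T \<delta> \<and> z \<notin> sem M ?T \<delta>"
      using itsep[of n] x z unfolding sep_def by blast
  qed
qed

end

context pmod
begin

definition sgood where "sgood \<rho> t \<longleftrightarrow> good \<rho> t \<and> (\<forall>b\<in>fv t. sep (fst (\<rho> b)) (snd (\<rho> b)))"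

lemma sgood_sub: "sgood \<rho> t \<Longrightarrow> fv s \<subseteq> fv t \<Longrightarrow> sgood \<rho> s"
  unfolding sgood_def using good_sub by blast

lemma L1: "good \<rho> t \<Longrightarrow> sc (csubst (fst \<circ> \<rho>) t) (act M \<rho> t)"
  using L12 by blast

lemma L3: "sgood \<rho> t \<Longrightarrow> sep (csubst (fst \<circ> \<rho>) t) (act M \<rho> t)"
proof (induction t arbitrary: \<rho>)
  case TUnit
  then show ?case using sep_unit by (simp add: id_def)
next
  case (TVar b)
  then show ?case unfolding sgood_def by simp
next
  case (TProd t s)
  let ?T1 = "csubst (fst \<circ> \<rho>) t" and ?T2 = "csubst (fst \<circ> \<rho>) s"
  have g: "sgood \<rho> t" "sgood \<rho> s" using sgood_sub[OF TProd.prems] by auto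
  have c: "closed_ty (TProd ?T1 ?T2)" using good_closed TProd.prems unfolding sgood_def by fastforce
  have "sc ?T1 (act M \<rho> t)" "sc ?T2 (act M \<rho> s)" using L1 g unfolding sgood_def by auto
  from sep_prodF[OF c this TProd.IH(1)[OF g(1)] TProd.IH(2)[OF g(2)]] show ?case unfolding act_prod by (simp add: comp_def)
next
  case (TSum t s)
  let ?T1 = "csubst (fst \<circ> \<rho>) t" and ?T2 = "csubst (fst \<circ> \<rho>) s"
  have g: "sgood \<rho> t" "sgood \<rho> s" using sgood_sub[OF TSum.prems] by auto
  have c: "closed_ty (TSum ?T1 ?T2)" using good_closed TSum.prems unfolding sgood_def by fastforce
  have "sc ?T1 (act M \<rho> t)" "sc ?T2 (act M \<rho> s)" using L1 g unfolding sgood_def by auto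
  from sep_sumF[OF c this TSum.IH(1)[OF g(1)] TSum.IH(2)[OF g(2)]] show ?case unfolding act_sum by (simp add: comp_def)
next
  case (TFun t s)
  let ?T1 = "csubst (fst \<circ> \<rho>) t" and ?T2 = "csubst (fst \<circ> \<rho>) s"
  have g: "sgood \<rho> t" "sgood \<rho> s" using sgood_sub[OF TFun.prems] by auto
  have c: "closed_ty (TFun ?T1 ?T2)" using good_closed TFun.prems unfolding sgood_def by fastforce
  have "sc ?T1 (act M \<rho> t)" "sc ?T2 (act M \<rho> s)" using L1 g unfolding sgood_def by auto
  from sep_funF[OF c this TFun.IH(1)[OF g(1)] TFun.IH(2)[OF g(2)]] show ?case unfolding act_fun by (simp add: comp_def)
next
  case (TMu b t)
  have gM: "good \<rho> (TMu b t)" using TMu.prems unfolding sgood_def by simp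
  define t' where "t' = csubst ((fst \<circ> \<rho>)(b := TVar b)) t"
  define T' where "T' = TMu b t'"
  define A where "A g = act M (\<rho>(b := (T', g))) t" for g
  have cT: "closed_ty T'" using mu_types(1)[OF gM] unfolding T'_def t'_def .
  have csT: "csubst (fst \<circ> \<rho>) (TMu b t) = T'" unfolding T'_def t'_def by simp
  have U: "csubst (fst \<circ> \<rho>(b := (T', h))) t = subst t' b T'" for h
    using mu_types(2)[OF gM] unfolding T'_def t'_def .
  have gd: "good (\<rho>(b := (T', h))) t" if "sc T' h" for h
    using mu_types(3)[OF gM] that unfolding T'_def t'_def by auto
  have Asc: "sc (subst t' b T') (A g)" if "sc T' g" for g
    using L1[OF gd[OF that]] U unfolding A_def by metis
  have Ale: "ptle (subst t' b T') (A g) (A g')" if "sc T' g" "sc T' g'" "ptle T' g g'" for g g'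
  proof -
    have "envle (\<rho>(b := (T', g))) (\<rho>(b := (T', g'))) t"
      unfolding envle_def using that gM ptle_refl unfolding good_def by auto
    then show ?thesis using L12[OF gd[OF that(1)]] gd[OF that(2)] U unfolding A_def by metis
  qed
  have Asep: "sep (subst t' b T') (A g)" if "sc T' g" "sep T' g" for g
  proof -
    have "sgood (\<rho>(b := (T', g))) t" unfolding sgood_def using gd[OF that(1)] that(2) TMu.prems
      unfolding sgood_def by auto
    then show ?thesis using TMu.IH U unfolding A_def by metis
  qed
  have actmu: "act M \<rho> (TMu b t) = lubfn T' A" unfolding A_def T'_def t'_def by (rule act_mu)
  have "sep T' (act M \<rho> (TMu b t))"
    unfolding actmu T'_def
    by (rule lubfn_sep[where A=A, OF cT[unfolded T'_def] Asc[unfolded T'_def] Ale[unfolded T'_def] Asep[unfolded T'_def]])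
  then show ?case by (simp only: csT)
qed

definition env0 :: "nat \<Rightarrow> ty \<times> ('u \<Rightarrow> 'u)" where "env0 = (\<lambda>_. (TUnit, id))"

lemma act_id: "closed_ty T \<Longrightarrow> x \<in> D T \<Longrightarrow> act M env0 T x = x"
proof (induction T arbitrary: x)
  case TUnit then show ?case by simp
next
  case (TVar a) then show ?case by simp
next
  case (TProd t s)
  have cs: "closed_ty t" "closed_ty s" using TProd.prems by auto
  have e: "csubst (fst \<circ> env0) t = t" "csubst (fst \<circ> env0) s = s"
    using csubst_closed_id cs by auto
  have "act M env0 (TProd t s) x = pairM M (TProd t s) (m_pi1 M (TProd t s) x) (m_pi2 M (TProd t s) x)"
    unfolding act_prod e prodF_def using TProd.IH cs pi_dom[OF TProd.prems] by simp
  then show ?case using pair_eta[OF TProd.prems] by simp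
next
  case (TSum t s)
  have c: "closed_ty (TSum t s)" using TSum.prems by simp
  have cs: "closed_ty t" "closed_ty s" using TSum.prems by auto
  have e: "csubst (fst \<circ> env0) t = t" "csubst (fst \<circ> env0) s = s"
    using csubst_closed_id cs by auto
  have eq: "act M env0 (TSum t s) = sumF t s (act M env0 t) (act M env0 s)" unfolding act_sum e ..
  have "sumF t s (act M env0 t) (act M env0 s) x = x" using sum_cases[OF c TSum.prems(2)]
  proof cases
    case 1 then show ?thesis using sumF_bot[OF c] by simp
  next
    case (2 y) then show ?thesis using sumF_inj1[OF c] TSum.IH(1)[OF cs(1)] by simp
  next
    case (3 y) then show ?thesis using sumF_inj2[OF c] TSum.IH(2)[OF cs(2)] by simp
  qed
  then show ?case by (simp only: eq)
next
  case (TFun t s)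
  have c: "closed_ty (TFun t s)" using TFun.prems by simp
  have cs: "closed_ty t" "closed_ty s" using TFun.prems by auto
  have e: "csubst (fst \<circ> env0) t = t" "csubst (fst \<circ> env0) s = s"
    using csubst_closed_id cs by auto
  have gd: "good env0 t" "good env0 s" using cs unfolding good_def closed_ty_def by auto
  have h: "sc t (act M env0 t)" "sc s (act M env0 s)"
    using L1[OF gd(1)] L1[OF gd(2)] e by auto
  let ?F = "funF t s (act M env0 t) (act M env0 s)"
  have "?F x = x"
  proof (rule fun_ext[OF c funF_props(1)[OF c h TFun.prems(2)] TFun.prems(2)])
    show "\<forall>y\<in>D t. m_app M (TFun t s) (?F x) y = m_app M (TFun t s) x y"
      using funF_props(2)[OF c h TFun.prems(2)] TFun.IH cs app_dom[OF c TFun.prems(2)] by simp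
  qed
  then show ?case unfolding act_fun e .
next
  case (TMu a t)
  then show ?case using minvar unfolding env0_def by blast
qed

lemma sep_id: assumes c: "closed_ty T" shows "sep T id"
proof -
  have sg: "sgood env0 T" using c unfolding sgood_def good_def closed_ty_def by auto
  have "sep T (act M env0 T)"
    using L3[of env0 T] sg csubst_closed_id[OF c, of "fst \<circ> env0"] csubst_closed_id[OF c, of "\<lambda>a. fst (env0 a)"]
    by simp
  then show ?thesis unfolding sep_def using act_id[OF c] by simp
qed

theorem main:
  assumes c: "closed_ty \<tau>"
  shows "(\<forall>\<delta>. wf_form \<tau> \<delta> \<and> sem M \<tau> \<delta> \<noteq> {} \<longrightarrow>
            (\<exists>d. compact_el (m_dom M \<tau>) (m_le M \<tau>) d \<and> sem M \<tau> \<delta> = upset M \<tau> d))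
       \<and> (\<forall>d. compact_el (m_dom M \<tau>) (m_le M \<tau>) d \<longrightarrow>
            (\<exists>\<delta>. wf_form \<tau> \<delta> \<and> upset M \<tau> d = sem M \<tau> \<delta>))"
proof (intro conjI allI impI)
  fix \<delta> assume "wf_form \<tau> \<delta> \<and> sem M \<tau> \<delta> \<noteq> {}"
  then show "\<exists>d. compact_el (m_dom M \<tau>) (m_le M \<tau>) d \<and> sem M \<tau> \<delta> = upset M \<tau> d"
    using part1[OF c] by blast
next
  fix d assume d: "compact_el (m_dom M \<tau>) (m_le M \<tau>) d"
  have dD: "d \<in> D \<tau>" using compact_dom[OF d] .
  let ?L = "lubM M \<tau> (defbelow \<tau> d)"
  have dL: "R \<tau> d ?L" and l: "is_lub (D \<tau>) (R \<tau>) (defbelow \<tau> d) ?L"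
    using approx[OF c sep_id[OF c] dD] by auto
  obtain e where e: "e \<in> defbelow \<tau> d" "R \<tau> d e"
    using d defbelow_dir[OF c dD] l dL unfolding compact_el_def by blast
  then have "e = d" using antisym[OF c] dD unfolding defbelow_def by auto
  then show "\<exists>\<delta>. wf_form \<tau> \<delta> \<and> upset M \<tau> d = sem M \<tau> \<delta>" using e unfolding defbelow_def by auto
qed

end

theorem proposition5p8:
  fixes M :: "'u pmodel" and \<tau> :: ty
  assumes "pure_model M" and "closed_ty \<tau>"
  shows "(\<forall>\<delta>. wf_form \<tau> \<delta> \<and> sem M \<tau> \<delta> \<noteq> {} \<longrightarrow>
            (\<exists>d. compact_el (m_dom M \<tau>) (m_le M \<tau>) d \<and> sem M \<tau> \<delta> = upset M \<tau> d))
       \<and> (\<forall>d. compact_el (m_dom M \<tau>) (m_le M \<tau>) d \<longrightarrow>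
            (\<exists>\<delta>. wf_form \<tau> \<delta> \<and> upset M \<tau> d = sem M \<tau> \<delta>))"
proof -
  interpret pmod M by (rule pmod.intro) (rule assms(1))
  show ?thesis by (rule main[OF assms(2)])
qed


end
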